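(* Let $M$ be a gasket automaton satisfying the $\gamma$-isolated condition with $\mathcal P_{\alpha\gamma}\cup\mathcal P_{\beta\gamma}\ne\emptyset$, and let $M'$ be a one-step simplification of $M$ determined by the pair $(\tau,\kappa)$. Let $\Omega=\{\omega\kappa^\infty:\omega\in\Sigma^*\}$. Then there exists a bijection $g:\Omega\to\Omega$ such that for all $\mathbf x,\mathbf y\in\Omega$, $|T_M(\mathbf x,\mathbf y)-T_{M'}(g(\mathbf x),g(\mathbf y))|\le5$.
   Context: $\Sigma=\{1,\dots,N\}$, $\Sigma^*$ the finite words, $\Sigma^\infty$ the infinite words; $\kappa^\infty=\kappa\kappa\kappa\cdots$. A $\Sigma$-automaton $M$ has finite state set $Q=Q_0\cup\{Id,Exit\}$, input alphabet $\Sigma^2$, initial state $Id$, final state $Exit$, transition $\delta:Q\times\Sigma^2\to Q$ with $\delta(Id,(i,j))=Id$ iff $i=j$. Itinerary of $(\mathbf x,\mathbf y)$: $S_0=Id$, $S_k=\delta(S_{k-1},(x_k,y_k))$, stopped at $Exit$; $T_M(\mathbf x,\mathbf y)$ = largest $k$ with $S_k\neq Exit$ (possibly $\infty$). Triangle automaton: $\alpha,\beta,\gamma$ distinct elements of $\Sigma\cup\{-1,-2,-3\}$; $Q=\{S_{uv}:u\neq v\in\{\alpha,\beta,\gamma\}\}\cup\{Id,Exit\}$; $\delta(Id,(i,j))=S_{uv}\Rightarrow\delta(Id,(j,i))=S_{vu}$; $\delta(S_{uv},(i,j))=S_{uv}$ if $(i,j)=(v,u)$, else $Exit$. $\mathcal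 P_{uv}=\{(i,j):\delta(Id,(i,j))=S_{uv}\}$, $i\triangleleft_{uv}j$ iff $(i,j)\in\mathcal P_{uv}$ (iff $j\triangleleft_{vu}i$); $j$ is $uv$-minimal if no $i\triangleleft_{uv}j$, $uv$-maximal if no $j\triangleleft_{uv}k$, $uv$-isolated if both. A triangle automaton is determined by $\mathcal P_{\alpha\beta},\mathcal P_{\alpha\gamma},\mathcal P_{\beta\gamma}$. Gasket automaton: triangle automaton with (Uniqueness) $i\triangleleft_{uv}j,i\triangleleft_{uv}j'\Rightarrow j=j'$; (Gathering) any two of $a\triangleleft_{\alpha\gamma}c$, $a\triangleleft_{\beta\gamma}b$, $b\triangleleft_{\alpha\beta}c$ imply the third; (Boundary) if $\alpha\in\Sigma$ it is $\alpha\gamma$- and $\alpha\beta$-minimal; if $\beta\in\Sigma$ it is $\beta\gamma$- and $\beta\alpha$-minimal; if $\gamma\in\Sigma$ it is $\gamma\alpha$- and $\gamma\beta$-minimal. $\gamma$-isolated condition: $\alpha,\beta,\gamma\in\Sigma$; the directed graph $(\Sigma,\mathcal P_{\alpha\gamma}\cup\mathcal P_{\beta\gamma})$ has no directed cycle; $\gamma$ is $\alpha\gamma$-, $\beta\gamma$- and $\alpha\beta$-isolated. One-step simplification: $b$ is double-maximal if $\alpha\gamma$-maximal and $\beta\gamma$-maximal. Choose $(\tau,\kappa)\in\mathcal P_{\alpha\gamma}\cup\mathcal P_{\beta\gamma}$ with $\kappa$ double-maximal. If $(\tau,\kappa)\in\mathcal P_{\alpha\gamma}$: if $\kappa$ has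 no $\alpha\beta$-predecessor, $\mathcal P'_{\alpha\beta}=\mathcal P_{\alpha\beta}$, $\mathcal P'_{\alpha\gamma}=\mathcal P_{\alpha\gamma}\setminus\{(\tau,\kappa)\}$, $\mathcal P'_{\beta\gamma}=\mathcal P_{\beta\gamma}$; if $\lambda\triangleleft_{\alpha\beta}\kappa$, then $\mathcal P'_{\alpha\beta}=\mathcal P_{\alpha\beta}$, $\mathcal P'_{\alpha\gamma}=\mathcal P_{\alpha\gamma}\setminus\{(\tau,\kappa)\}$, $\mathcal P'_{\beta\gamma}=\mathcal P_{\beta\gamma}\setminus\{(\tau,\lambda)\}$. If $(\tau,\kappa)\in\mathcal P_{\beta\gamma}$, the same with $\alpha$ and $\beta$ interchanged. $M'$ is the triangle automaton determined by $\mathcal P'_{\alpha\beta},\mathcal P'_{\alpha\gamma},\mathcal P'_{\beta\gamma}$. *)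

theory Defs
  imports Main "HOL-Library.Extended_Nat"
begin

(* Alphabet Sigma = {1..N}; letters (and the labels alpha, beta, gamma, which may
   also be -1,-2,-3) are integers. *)
definition Sig :: "nat \<Rightarrow> int set" where
  "Sig N = {1..int N}"

datatype tstate = Id | Exit | St int int

datatype tri = Tri (ta: int) (tb: int) (tc: int)
  (Pab: "(int \<times> int) set") (Pag: "(int \<times> int) set") (Pbg: "(int \<times> int) set")

definition Prel :: "tri \<Rightarrow> int \<Rightarrow> int \<Rightarrow> (int \<times> int) set" where
  "Prel M u v =
    (if (u, v) = (ta M, tb M) then Pab M
     else if (u, v) = (tb M, ta M) then (Pab M)\<inverse>
     else if (u, v) = (ta M, tc M) then Pag M
     else if (u, v) = (tc M, ta M) then (Pag M)\<inverse>
     else if (u, v) = (tb M, tc M) then Pbg M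
     else if (u, v) = (tc M, tb M) then (Pbg M)\<inverse>
     else {})"

definition labpairs :: "tri \<Rightarrow> (int \<times> int) set" where
  "labpairs M = {(u, v). u \<in> {ta M, tb M, tc M} \<and> v \<in> {ta M, tb M, tc M} \<and> u \<noteq> v}"

fun tri_delta :: "tri \<Rightarrow> tstate \<Rightarrow> int \<times> int \<Rightarrow> tstate" where
  "tri_delta M Id (i, j) =
    (if i = j then Id
     else if (i, j) \<in> Prel M (ta M) (tb M) then St (ta M) (tb M)
     else if (i, j) \<in> Prel M (tb M) (ta M) then St (tb M) (ta M)
     else if (i, j) \<in> Prel M (ta M) (tc M) then St (ta M) (tc M)
     else if (i, j) \<in> Prel M (tc M) (ta M) then St (tc M) (ta M)
     else if (i, j) \<in> Prel M (tb M) (tc M) then St (tb M) (tc M)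
     else if (i, j) \<in> Prel M (tc M) (tb M) then St (tc M) (tb M)
     else Exit)"
| "tri_delta M (St u v) (i, j) = (if (i, j) = (v, u) then St u v else Exit)"
| "tri_delta M Exit p = Exit"

(* Well-formedness of a triangle automaton over Sigma = {1..N}: distinct labels in
   Sigma \<union> {-1,-2,-3}, relations on Sigma, and delta well defined, i.e. the six
   sets P_uv are pairwise disjoint and contain no diagonal pair. *)
definition triangle_automaton :: "nat \<Rightarrow> tri \<Rightarrow> bool" where
  "triangle_automaton N M \<longleftrightarrow>
     ta M \<noteq> tb M \<and> ta M \<noteq> tc M \<and> tb M \<noteq> tc M \<and>
     {ta M, tb M, tc M} \<subseteq> Sig N \<union> {-1, -2, -3} \<and>
     Pab M \<subseteq> Sig N \<times> Sig N \<and> Pag M \<subseteq> Sig N \<times> Sig N \<and> Pbg M \<subseteq> Sig N \<times> Sig N \<and>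
     (\<forall>p\<in>labpairs M. \<forall>q\<in>labpairs M. p \<noteq> q \<longrightarrow>
        Prel M (fst p) (snd p) \<inter> Prel M (fst q) (snd q) = {}) \<and>
     (\<forall>p\<in>labpairs M. \<forall>i. (i, i) \<notin> Prel M (fst p) (snd p))"

definition uv_minimal :: "tri \<Rightarrow> int \<Rightarrow> int \<Rightarrow> int \<Rightarrow> bool" where
  "uv_minimal M u v j \<longleftrightarrow> \<not> (\<exists>i. (i, j) \<in> Prel M u v)"

definition uv_maximal :: "tri \<Rightarrow> int \<Rightarrow> int \<Rightarrow> int \<Rightarrow> bool" where
  "uv_maximal M u v j \<longleftrightarrow> \<not> (\<exists>k. (j, k) \<in> Prel M u v)"

definition uv_isolated :: "tri \<Rightarrow> int \<Rightarrow> int \<Rightarrow> int \<Rightarrow> bool" where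
  "uv_isolated M u v j \<longleftrightarrow> uv_minimal M u v j \<and> uv_maximal M u v j"

definition gasket_automaton :: "nat \<Rightarrow> tri \<Rightarrow> bool" where
  "gasket_automaton N M \<longleftrightarrow>
     triangle_automaton N M \<and>
     \<comment> \<open>Uniqueness\<close>
     (\<forall>(u, v)\<in>labpairs M. \<forall>i j j'. (i, j) \<in> Prel M u v \<longrightarrow> (i, j') \<in> Prel M u v \<longrightarrow> j = j') \<and>
     \<comment> \<open>Gathering\<close>
     (\<forall>a b c.
        let A = ((a, c) \<in> Pag M); B = ((a, b) \<in> Pbg M); C = ((b, c) \<in> Pab M) in
        (A \<and> B \<longrightarrow> C) \<and> (A \<and> C \<longrightarrow> B) \<and> (B \<and> C \<longrightarrow> A)) \<and>
     \<comment> \<open>Boundary\<close>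
     (ta M \<in> Sig N \<longrightarrow> uv_minimal M (ta M) (tc M) (ta M) \<and> uv_minimal M (ta M) (tb M) (ta M)) \<and>
     (tb M \<in> Sig N \<longrightarrow> uv_minimal M (tb M) (tc M) (tb M) \<and> uv_minimal M (tb M) (ta M) (tb M)) \<and>
     (tc M \<in> Sig N \<longrightarrow> uv_minimal M (tc M) (ta M) (tc M) \<and> uv_minimal M (tc M) (tb M) (tc M))"

definition gamma_isolated :: "nat \<Rightarrow> tri \<Rightarrow> bool" where
  "gamma_isolated N M \<longleftrightarrow>
     ta M \<in> Sig N \<and> tb M \<in> Sig N \<and> tc M \<in> Sig N \<and>
     acyclic (Pag M \<union> Pbg M) \<and>
     uv_isolated M (ta M) (tc M) (tc M) \<and> uv_isolated M (tb M) (tc M) (tc M) \<and>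
     uv_isolated M (ta M) (tb M) (tc M)"

definition double_maximal :: "tri \<Rightarrow> int \<Rightarrow> bool" where
  "double_maximal M b \<longleftrightarrow> uv_maximal M (ta M) (tc M) b \<and> uv_maximal M (tb M) (tc M) b"

definition one_step_simplification :: "tri \<Rightarrow> int \<Rightarrow> int \<Rightarrow> tri \<Rightarrow> bool" where
  "one_step_simplification M \<tau> \<kappa> M' \<longleftrightarrow>
     (\<tau>, \<kappa>) \<in> Pag M \<union> Pbg M \<and> double_maximal M \<kappa> \<and>
     ((\<tau>, \<kappa>) \<in> Pag M \<longrightarrow>
        ((\<not> (\<exists>l. (l, \<kappa>) \<in> Prel M (ta M) (tb M)) \<and>
           M' = Tri (ta M) (tb M) (tc M) (Pab M) (Pag M - {(\<tau>, \<kappa>)}) (Pbg M)) \<or>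
         (\<exists>l. (l, \<kappa>) \<in> Prel M (ta M) (tb M) \<and>
           M' = Tri (ta M) (tb M) (tc M) (Pab M) (Pag M - {(\<tau>, \<kappa>)}) (Pbg M - {(\<tau>, l)})))) \<and>
     ((\<tau>, \<kappa>) \<in> Pbg M \<longrightarrow>
        ((\<not> (\<exists>l. (l, \<kappa>) \<in> Prel M (tb M) (ta M)) \<and>
           M' = Tri (ta M) (tb M) (tc M) (Pab M) (Pag M) (Pbg M - {(\<tau>, \<kappa>)})) \<or>
         (\<exists>l. (l, \<kappa>) \<in> Prel M (tb M) (ta M) \<and>
           M' = Tri (ta M) (tb M) (tc M) (Pab M) (Pag M - {(\<tau>, l)}) (Pbg M - {(\<tau>, \<kappa>)}))))"

(* Itinerary: S_0 = Id, S_k = delta(S_{k-1}, (x_k, y_k)), stopped at Exit.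
   Infinite words are functions nat \<Rightarrow> int; x k is the letter x_{k+1}. *)
fun itin :: "(tstate \<Rightarrow> int \<times> int \<Rightarrow> tstate) \<Rightarrow> (nat \<Rightarrow> int) \<Rightarrow> (nat \<Rightarrow> int) \<Rightarrow> nat \<Rightarrow> tstate" where
  "itin \<delta> x y 0 = Id"
| "itin \<delta> x y (Suc k) = (if itin \<delta> x y k = Exit then Exit else \<delta> (itin \<delta> x y k) (x k, y k))"

definition Ttime :: "(tstate \<Rightarrow> int \<times> int \<Rightarrow> tstate) \<Rightarrow> (nat \<Rightarrow> int) \<Rightarrow> (nat \<Rightarrow> int) \<Rightarrow> enat" where
  "Ttime \<delta> x y = Sup {enat k | k. itin \<delta> x y k \<noteq> Exit}"

definition T_M :: "tri \<Rightarrow> (nat \<Rightarrow> int) \<Rightarrow> (nat \<Rightarrow> int) \<Rightarrow> enat" where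
  "T_M M = Ttime (tri_delta M)"

definition Omega :: "nat \<Rightarrow> int \<Rightarrow> (nat \<Rightarrow> int) set" where
  "Omega N \<kappa> = {x. (\<forall>k. x k \<in> Sig N) \<and> (\<exists>n. \<forall>k\<ge>n. x k = \<kappa>)}"

end

theory Submission
  imports Defs
begin

definition sh :: "nat \<Rightarrow> (nat \<Rightarrow> int) \<Rightarrow> nat \<Rightarrow> int" where
  "sh n x = (\<lambda>i. x (n + i))"

lemma sh_apply[simp]: "sh n x i = x (n + i)" by (simp add: sh_def)
lemma sh_sh[simp]: "sh m (sh n x) = sh (n + m) x" by (auto simp: sh_def add.assoc)
lemma sh_0[simp]: "sh 0 x = x" by (simp add: sh_def)

definition agr :: "(nat \<Rightarrow> int) \<Rightarrow> (nat \<Rightarrow> int) \<Rightarrow> nat \<Rightarrow> bool" where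
  "agr x y n \<longleftrightarrow> (\<forall>i<n. x i = y i)"

definition sd :: "(int \<Rightarrow> int \<Rightarrow> tstate) \<Rightarrow> tstate \<Rightarrow> int \<times> int \<Rightarrow> tstate" where
  "sd R s p = (case s of Id \<Rightarrow> (if fst p = snd p then Id else R (fst p) (snd p))
     | St u v \<Rightarrow> (if p = (v, u) then St u v else Exit) | Exit \<Rightarrow> Exit)"

lemma sd_simps[simp]:
  "sd R Id (a, b) = (if a = b then Id else R a b)"
  "sd R (St u v) (a, b) = (if (a, b) = (v, u) then St u v else Exit)"
  "sd R Exit p = Exit"
  by (auto simp: sd_def)

lemma tri_delta_sd: "tri_delta M = sd (\<lambda>a b. tri_delta M Id (a, b))"
  apply (rule ext)+
  subgoal for s p by (cases s; cases p; simp)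
  done

definition wfR :: "(int \<Rightarrow> int \<Rightarrow> tstate) \<Rightarrow> bool" where
  "wfR R \<longleftrightarrow> (\<forall>a b. a \<noteq> b \<longrightarrow> R a b \<noteq> Id)"

abbreviation TT :: "(int \<Rightarrow> int \<Rightarrow> tstate) \<Rightarrow> (nat \<Rightarrow> int) \<Rightarrow> (nat \<Rightarrow> int) \<Rightarrow> enat" where
  "TT R \<equiv> Ttime (sd R)"

lemma itin_Exit_mono: "itin d x y k = Exit \<Longrightarrow> k \<le> k' \<Longrightarrow> itin d x y k' = Exit"
proof (induction k' )
  case 0 then show ?case by simp
next
  case (Suc k') then show ?case by (cases "k = Suc k'") auto
qed

lemma itin_agr: "agr x y k \<Longrightarrow> itin (sd R) x y k = Id"
  by (induction k) (auto simp: agr_def)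

lemma itin_first: "agr x y j \<Longrightarrow> x j \<noteq> y j \<Longrightarrow> itin (sd R) x y (Suc j) = R (x j) (y j)"
  using itin_agr[of x y j R] by simp

lemma itin_run: "itin (sd R) x y (Suc j) = St u v \<Longrightarrow>
   (\<forall>i<m. x (Suc j + i) = v \<and> y (Suc j + i) = u) \<Longrightarrow> itin (sd R) x y (Suc j + m) = St u v"
  by (induction m) auto

lemma itin_St_or_Exit: "itin (sd R) x y k = St u v \<Longrightarrow> k \<le> k' \<Longrightarrow>
    itin (sd R) x y k' = St u v \<or> itin (sd R) x y k' = Exit"
proof (induction k')
  case 0 then show ?case by simp
next
  case (Suc k')
  show ?case
  proof (cases "k = Suc k'")
    case False
    then have "itin (sd R) x y k' = St u v \<or> itin (sd R) x y k' = Exit" using Suc by simp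
    then show ?thesis by (cases "x k' = v \<and> y k' = u") auto
  qed (use Suc in simp)
qed

lemma T_ge: "itin d x y k \<noteq> Exit \<Longrightarrow> enat k \<le> Ttime d x y"
  unfolding Ttime_def by (rule Sup_upper) auto

lemma T_le: "itin d x y (Suc k) = Exit \<Longrightarrow> Ttime d x y \<le> enat k"
  unfolding Ttime_def
proof (rule Sup_least)
  fix z assume "z \<in> {enat k' |k'. itin d x y k' \<noteq> Exit}" "itin d x y (Suc k) = Exit"
  then obtain k' where "z = enat k'" "itin d x y k' \<noteq> Exit" by auto
  moreover have "k' \<le> k"
  proof (rule ccontr)
    assume "\<not> k' \<le> k" then have "Suc k \<le> k'" by simp
    with itin_Exit_mono[OF \<open>itin d x y (Suc k) = Exit\<close>] \<open>itin d x y k' \<noteq> Exit\<close> show False by blast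
  qed
  ultimately show "z \<le> enat k" by simp
qed

lemma T_iff: "enat k \<le> Ttime d x y \<longleftrightarrow> itin d x y k \<noteq> Exit"
proof
  assume a: "enat k \<le> Ttime d x y"
  show "itin d x y k \<noteq> Exit"
  proof
    assume e: "itin d x y k = Exit"
    show False
    proof (cases k)
      case 0 then show ?thesis using e by simp
    next
      case (Suc k0)
      then have "Ttime d x y \<le> enat k0" using T_le e by simp
      with a Suc have "enat (Suc k0) \<le> enat k0" by (metis order_trans)
      then show False by simp
    qed
  qed
qed (rule T_ge)

lemma LB1: "agr x y n \<Longrightarrow> enat n \<le> TT R x y"
  by (rule T_ge) (simp add: itin_agr)

lemma LB2: "agr x y j \<Longrightarrow> x j \<noteq> y j \<Longrightarrow> R (x j) (y j) = St u v \<Longrightarrow>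
   (\<forall>i<m. x (Suc j + i) = v \<and> y (Suc j + i) = u) \<Longrightarrow> enat (Suc j + m) \<le> TT R x y"
proof -
  assume a: "agr x y j" "x j \<noteq> y j" "R (x j) (y j) = St u v" "\<forall>i<m. x (Suc j + i) = v \<and> y (Suc j + i) = u"
  have "itin (sd R) x y (Suc j) = St u v" using itin_first[OF a(1,2)] a(3) by simp
  then have "itin (sd R) x y (Suc j + m) = St u v" using itin_run a(4) by blast
  then show ?thesis by (intro T_ge) simp
qed

lemma itin_step_exit: "itin (sd R) x y K = St u v \<or> itin (sd R) x y K = Exit \<Longrightarrow>
   (x K, y K) \<noteq> (v, u) \<Longrightarrow> itin (sd R) x y (Suc K) = Exit"
  by auto

lemma UB: "agr x y j \<Longrightarrow> x j \<noteq> y j \<Longrightarrow>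
   (\<forall>u v. R (x j) (y j) = St u v \<longrightarrow> (x (Suc j + m), y (Suc j + m)) \<noteq> (v, u)) \<Longrightarrow>
   wfR R \<Longrightarrow> TT R x y \<le> enat (Suc j + m)"
proof -
  assume a: "agr x y j" "x j \<noteq> y j" and c: "\<forall>u v. R (x j) (y j) = St u v \<longrightarrow> (x (Suc j + m), y (Suc j + m)) \<noteq> (v, u)"
    and w: "wfR R"
  have f: "itin (sd R) x y (Suc j) = R (x j) (y j)" using itin_first[OF a] .
  have "itin (sd R) x y (Suc (Suc j + m)) = Exit"
  proof (cases "R (x j) (y j)")
    case Id then show ?thesis using w a(2) unfolding wfR_def by blast
  next
    case Exit
    then have "itin (sd R) x y (Suc j) = Exit" using f by simp
    then show ?thesis by (rule itin_Exit_mono) simp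
  next
    case (St u v)
    then have "itin (sd R) x y (Suc j + m) = St u v \<or> itin (sd R) x y (Suc j + m) = Exit"
      using itin_St_or_Exit[of R x y "Suc j" u v "Suc j + m"] f by simp
    moreover have "(x (Suc j + m), y (Suc j + m)) \<noteq> (v, u)" using c St by blast
    ultimately show ?thesis by (rule itin_step_exit)
  qed
  then show ?thesis by (rule T_le)
qed

lemma UB0: "agr x y j \<Longrightarrow> x j \<noteq> y j \<Longrightarrow> R (x j) (y j) = Exit \<Longrightarrow> TT R x y \<le> enat j"
proof -
  assume a: "agr x y j" "x j \<noteq> y j" "R (x j) (y j) = Exit"
  have "itin (sd R) x y (Suc j) = Exit" using itin_first[OF a(1,2)] a(3) by simp
  then show ?thesis by (rule T_le)
qed

lemma itin_shift: "agr x y n \<Longrightarrow> itin (sd R) x y (n + k) = itin (sd R) (sh n x) (sh n y) k"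
  by (induction k) (auto simp: itin_agr)

lemma enat_ext: assumes h: "\<And>k. enat k \<le> a \<longleftrightarrow> enat k \<le> b" shows "a = (b::enat)"
proof (rule antisym)
  show "a \<le> b"
  proof (cases b)
    case (enat n)
    have "\<not> enat (Suc n) \<le> b" using enat by simp
    then have "\<not> enat (Suc n) \<le> a" using h by blast
    then show ?thesis using enat by (cases a) auto
  qed simp
  show "b \<le> a"
  proof (cases a)
    case (enat n)
    have "\<not> enat (Suc n) \<le> a" using enat by simp
    then have "\<not> enat (Suc n) \<le> b" using h by blast
    then show ?thesis using enat by (cases b) auto
  qed simp
qed

lemma T_shift: assumes "agr x y n" shows "TT R x y = enat n + TT R (sh n x) (sh n y)"
proof -
  have "\<forall>k. enat k \<le> TT R x y \<longleftrightarrow> enat k \<le> enat n + TT R (sh n x) (sh n y)"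
  proof
    fix k
    show "enat k \<le> TT R x y \<longleftrightarrow> enat k \<le> enat n + TT R (sh n x) (sh n y)"
    proof (cases "k \<le> n")
      case True
      then have "agr x y k" using assms by (auto simp: agr_def)
      then have "enat k \<le> TT R x y" by (simp add: itin_agr T_iff)
      moreover have "enat k \<le> enat n + TT R (sh n x) (sh n y)"
        using True by (cases "TT R (sh n x) (sh n y)") auto
      ultimately show ?thesis by simp
    next
      case False
      then obtain k' where k: "k = n + k'" by (metis le_add_diff_inverse nat_le_linear)
      have "enat k \<le> enat n + TT R (sh n x) (sh n y) \<longleftrightarrow> enat k' \<le> TT R (sh n x) (sh n y)"
        using k by (cases "TT R (sh n x) (sh n y)") auto
      then show ?thesis using k itin_shift[OF assms, of R k'] T_iff by metis
    qed
  qed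
  then show ?thesis by (intro enat_ext) blast
qed

fun swp :: "tstate \<Rightarrow> tstate" where
  "swp (St u v) = St v u" | "swp Id = Id" | "swp Exit = Exit"

definition symR :: "(int \<Rightarrow> int \<Rightarrow> tstate) \<Rightarrow> bool" where
  "symR R \<longleftrightarrow> (\<forall>a b. a \<noteq> b \<longrightarrow> R b a = swp (R a b))"

lemma itin_swap: "symR R \<Longrightarrow> itin (sd R) y x k = swp (itin (sd R) x y k)"
proof (induction k)
  case 0 then show ?case by simp
next
  case (Suc k)
  show ?case
  proof (cases "itin (sd R) x y k")
    case Id
    have "x k \<noteq> y k \<Longrightarrow> R (y k) (x k) = swp (R (x k) (y k))"
      using Suc.prems unfolding symR_def by blast
    then show ?thesis using Suc.IH[OF Suc.prems] Id by (cases "x k = y k") simp_all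
  next
    case (St u v)
    then show ?thesis using Suc by auto
  next
    case Exit
    then show ?thesis using Suc by auto
  qed
qed

lemma swp_Exit: "swp s = Exit \<longleftrightarrow> s = Exit"
  by (cases s) auto

lemma T_sym: "symR R \<Longrightarrow> TT R y x = TT R x y"
proof -
  assume "symR R"
  then have "\<And>k. itin (sd R) y x k = Exit \<longleftrightarrow> itin (sd R) x y k = Exit"
    using itin_swap[of R y x] swp_Exit by metis
  then show ?thesis unfolding Ttime_def by simp
qed


datatype tk = TK1 nat | TK2 nat | TK3 | TKI

fun tlen :: "tk \<Rightarrow> nat" where
  "tlen (TK1 r) = Suc r" | "tlen (TK2 s) = s + 3" | "tlen TK3 = 3" | "tlen TKI = 1"

lemma tlen_pos: "0 < tlen t" by (cases t) auto

lemma tlen_dec: "\<not> i < tlen t \<Longrightarrow> i - tlen t < i"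
  by (metis diff_less less_le_trans not_le tlen_pos)

locale gdef =
  fixes tau kap A G :: int
  assumes d_tk: "tau \<noteq> kap" and d_kA: "kap \<noteq> A" and d_tG: "tau \<noteq> G" and d_kG: "kap \<noteq> G"
    and d_AG: "A \<noteq> G"
begin

definition isK1 where "isK1 x \<longleftrightarrow> x 0 = tau \<and> x (Suc 0) = G \<and> x (Suc (Suc 0)) = G \<and> (\<exists>i. x (Suc i) \<noteq> G)"
definition k1len where "k1len x = (LEAST i. x (Suc i) \<noteq> G)"
definition pat2 where "pat2 x s \<longleftrightarrow> x 0 = kap \<and> (\<forall>i. 1 \<le> i \<and> i \<le> s \<longrightarrow> x i = A) \<and> x (Suc s) = kap \<and> x (Suc (Suc s)) = G"
definition isK23 where "isK23 x \<longleftrightarrow> (\<exists>s. pat2 x s)"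
definition k2len where "k2len x = (LEAST s. pat2 x s)"

definition tok where "tok x = (if isK1 x then TK1 (k1len x) else if isK23 x then
   (if k2len x = 0 then TK3 else TK2 (k2len x)) else TKI)"

definition tout :: "tk \<Rightarrow> int \<Rightarrow> nat \<Rightarrow> int" where
  "tout t c i = (case t of TK1 r \<Rightarrow> (if i = 0 then kap else if i < r - 1 then A else if i = r - 1 then kap else G)
    | TK2 s \<Rightarrow> (if i = 0 then kap else if i < s then A else if i = s then kap else G)
    | TK3 \<Rightarrow> (if i = 0 then tau else G) | TKI \<Rightarrow> c)"

function gg :: "(nat \<Rightarrow> int) \<Rightarrow> nat \<Rightarrow> int" where
  "gg x i = (if i < tlen (tok x) then tout (tok x) (x 0) i else gg (sh (tlen (tok x)) x) (i - tlen (tok x)))"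
  by auto
termination by (relation "measure snd") (auto simp: tlen_dec)

declare gg.simps[simp del]

lemma gg_lt: "i < tlen (tok x) \<Longrightarrow> gg x i = tout (tok x) (x 0) i"
  by (simp add: gg.simps)

lemma gg_ge: "gg x (tlen (tok x) + i) = gg (sh (tlen (tok x)) x) i"
  by (subst gg.simps) simp

lemma sh_gg: "sh (tlen (tok x)) (gg x) = gg (sh (tlen (tok x)) x)"
  by (rule ext) (simp add: gg_ge)

lemma pat2_unique: "pat2 x s \<Longrightarrow> pat2 x s' \<Longrightarrow> s = s'"
proof (rule ccontr)
  assume a: "pat2 x s" "pat2 x s'" "s \<noteq> s'"
  show False
  proof (cases "s < s'")
    case True
    then have "x (Suc s) = A" using a(2) unfolding pat2_def by auto
    then show False using a(1) d_kA unfolding pat2_def by simp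
  next
    case False
    then have "s' < s" using a(3) by simp
    then have "x (Suc s') = A" using a(1) unfolding pat2_def by auto
    then show False using a(2) d_kA unfolding pat2_def by simp
  qed
qed

lemma k2len_eq: "pat2 x s \<Longrightarrow> k2len x = s"
  unfolding k2len_def using pat2_unique by (blast intro: Least_equality)

lemma tok_K1_facts:
  assumes "tok x = TK1 r"
  shows "x 0 = tau" "\<And>i. 1 \<le> i \<Longrightarrow> i \<le> r \<Longrightarrow> x i = G" "x (Suc r) \<noteq> G" "2 \<le> r"
proof -
  have k: "isK1 x" "k1len x = r" using assms unfolding tok_def by (auto split: if_splits)
  then have e: "\<exists>i. x (Suc i) \<noteq> G" and h: "x 0 = tau" "x (Suc 0) = G" "x (Suc (Suc 0)) = G" unfolding isK1_def by auto
  show "x 0 = tau" by (fact h)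
  show "x (Suc r) \<noteq> G" using LeastI_ex[OF e] k(2) unfolding k1len_def by simp
  have lt: "\<And>i. i < r \<Longrightarrow> x (Suc i) = G" using not_less_Least k(2) unfolding k1len_def by blast
  show "\<And>i. 1 \<le> i \<Longrightarrow> i \<le> r \<Longrightarrow> x i = G"
  proof -
    fix i assume "1 \<le> i" "i \<le> r"
    then obtain j where "i = Suc j" "j < r" by (cases i) auto
    then show "x i = G" using lt by simp
  qed
  show "2 \<le> r"
  proof (rule ccontr)
    assume "\<not> 2 \<le> r"
    then have "r = 0 \<or> r = 1" by auto
    then show False using \<open>x (Suc r) \<noteq> G\<close> h by auto
  qed
qed

lemma tok_K2_facts: assumes "tok x = TK2 s" shows "pat2 x s" "1 \<le> s"
proof -
  have "\<not> isK1 x" "isK23 x" "k2len x = s" "s \<noteq> 0" using assms unfolding tok_def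
    by (auto split: if_splits)
  then show "pat2 x s" "1 \<le> s" unfolding isK23_def using k2len_eq by auto
qed

lemma tok_K3_facts: assumes "tok x = TK3" shows "pat2 x 0"
proof -
  have "\<not> isK1 x" "isK23 x" "k2len x = 0" using assms unfolding tok_def
    by (auto split: if_splits)
  then show "pat2 x 0" unfolding isK23_def using k2len_eq by auto
qed

lemma tok_KI_facts: assumes "tok x = TKI" shows "\<not> isK1 x" "\<And>s. \<not> pat2 x s"
  using assms unfolding tok_def isK23_def by (auto split: if_splits)

lemma tok_pat2: assumes "pat2 x s" shows "tok x = (if s = 0 then TK3 else TK2 s)"
proof -
  have "x 0 = kap" using assms unfolding pat2_def by blast
  then have "\<not> isK1 x" using d_tk unfolding isK1_def by blast
  moreover have "isK23 x" using assms unfolding isK23_def by blast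
  moreover have "k2len x = s" using assms by (rule k2len_eq)
  ultimately show ?thesis unfolding tok_def by simp
qed

lemma tok_isK1: "isK1 x \<Longrightarrow> \<exists>r. tok x = TK1 r"
  unfolding tok_def by simp

lemma gg0: "gg x 0 = (case tok x of TK1 _ \<Rightarrow> kap | TK2 _ \<Rightarrow> kap | TK3 \<Rightarrow> tau | TKI \<Rightarrow> x 0)"
proof -
  have "gg x 0 = tout (tok x) (x 0) 0" using gg_lt[of 0 x] tlen_pos[of "tok x"] by simp
  then show ?thesis by (cases "tok x") (simp_all add: tout_def)
qed

lemma gg0_G: "gg x 0 = G \<longleftrightarrow> x 0 = G"
proof (cases "tok x")
  case (TK1 r)
  have "gg x 0 = kap" using gg0 TK1 by simp
  moreover have "x 0 = tau" using tok_K1_facts(1)[OF TK1] .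
  ultimately show ?thesis using d_kG d_tG by simp
next
  case (TK2 s)
  have "gg x 0 = kap" using gg0 TK2 by simp
  moreover have "x 0 = kap" using tok_K2_facts(1)[OF TK2] unfolding pat2_def by blast
  ultimately show ?thesis using d_kG by simp
next
  case TK3
  have "gg x 0 = tau" using gg0 TK3 by simp
  moreover have "x 0 = kap" using tok_K3_facts[OF TK3] unfolding pat2_def by blast
  ultimately show ?thesis using d_kG d_tG by simp
next
  case TKI
  then show ?thesis using gg0 by simp
qed

lemma tok_KI_gg: assumes "tok x = TKI" shows "gg x 0 = x 0" "sh 1 (gg x) = gg (sh 1 x)"
proof -
  show "gg x 0 = x 0" using gg0 assms by simp
  show "sh 1 (gg x) = gg (sh 1 x)" using sh_gg[of x] assms by simp
qed

lemma gg_KI_Suc: assumes "tok x = TKI" shows "gg x (Suc i) = gg (sh 1 x) i"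
proof -
  have "gg x (tlen (tok x) + i) = gg (sh (tlen (tok x)) x) i" by (rule gg_ge)
  then show ?thesis using assms by simp
qed

lemma tok_TKI_intro: "\<not> isK1 x \<Longrightarrow> (\<And>s. \<not> pat2 x s) \<Longrightarrow> tok x = TKI"
  unfolding tok_def isK23_def by auto

lemma K1_out:
  assumes t: "tok x = TK1 r"
  shows "gg x 0 = kap" "\<And>i. 1 \<le> i \<Longrightarrow> i + 2 \<le> r \<Longrightarrow> gg x i = A" "gg x (r - 1) = kap"
    "gg x r = G" "gg x (Suc r) \<noteq> G" "sh (Suc r) (gg x) = gg (sh (Suc r) x)"
proof -
  have r2: "2 \<le> r" using tok_K1_facts(4)[OF t] .
  have o: "\<And>i. i \<le> r \<Longrightarrow> gg x i = tout (TK1 r) (x 0) i" using gg_lt[of _ x] t by simp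
  show "gg x 0 = kap" using o[of 0] by (simp add: tout_def)
  show "\<And>i. 1 \<le> i \<Longrightarrow> i + 2 \<le> r \<Longrightarrow> gg x i = A"
  proof -
    fix i assume "1 \<le> i" "i + 2 \<le> r"
    then have "i \<noteq> 0" "i < r - 1" "i \<le> r" by arith+
    then show "gg x i = A" using o[of i] by (simp add: tout_def)
  qed
  show "gg x (r - 1) = kap" using o[of "r - 1"] r2 by (simp add: tout_def)
  have "\<not> r < r - 1" "r \<noteq> r - 1" "r \<noteq> 0" using r2 by arith+
  then show "gg x r = G" using o[of r] by (simp add: tout_def)
  show sh: "sh (Suc r) (gg x) = gg (sh (Suc r) x)" using sh_gg[of x] t by simp
  have "gg (sh (Suc r) x) 0 \<noteq> G" using gg0_G tok_K1_facts(3)[OF t] by simp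
  then show "gg x (Suc r) \<noteq> G" using fun_cong[OF sh, of 0] by simp
qed

lemma K2_out:
  assumes t: "tok x = TK2 s"
  shows "gg x 0 = kap" "\<And>i. 1 \<le> i \<Longrightarrow> i < s \<Longrightarrow> gg x i = A" "gg x s = kap"
    "gg x (Suc s) = G" "gg x (Suc (Suc s)) = G" "sh (s + 3) (gg x) = gg (sh (s + 3) x)"
proof -
  have s1: "1 \<le> s" using tok_K2_facts(2)[OF t] .
  have o: "\<And>i. i < s + 3 \<Longrightarrow> gg x i = tout (TK2 s) (x 0) i" using gg_lt[of _ x] t by simp
  show "gg x 0 = kap" using o[of 0] by (simp add: tout_def)
  show "\<And>i. 1 \<le> i \<Longrightarrow> i < s \<Longrightarrow> gg x i = A" using o by (simp add: tout_def)
  show "gg x s = kap" using o[of s] s1 by (simp add: tout_def)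
  show "gg x (Suc s) = G" using o[of "Suc s"] s1 by (simp add: tout_def)
  show "gg x (Suc (Suc s)) = G" using o[of "Suc (Suc s)"] s1 by (simp add: tout_def)
  show "sh (s + 3) (gg x) = gg (sh (s + 3) x)" using sh_gg[of x] t by simp
qed

lemma K3_out:
  assumes t: "tok x = TK3"
  shows "gg x 0 = tau" "gg x (Suc 0) = G" "gg x (Suc (Suc 0)) = G" "sh 3 (gg x) = gg (sh 3 x)"
proof -
  have o: "\<And>i. i < 3 \<Longrightarrow> gg x i = tout TK3 (x 0) i" using gg_lt[of _ x] t by simp
  show "gg x 0 = tau" using o[of 0] by (simp add: tout_def)
  show "gg x (Suc 0) = G" using o[of 1] by (simp add: tout_def)
  show "gg x (Suc (Suc 0)) = G" using o[of 2] by (simp add: tout_def numeral_2_eq_2)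
  show "sh 3 (gg x) = gg (sh 3 x)" using sh_gg[of x] t by simp
qed

lemma G2: "(\<forall>i<m. x i = c) \<Longrightarrow> i + 2 < m \<Longrightarrow> gg x i = c"
proof (induction i arbitrary: x m)
  case 0
  have h: "x 0 = c" "x (Suc 0) = c" "x (Suc (Suc 0)) = c" using 0 by auto
  have "\<not> isK1 x" using h d_tG unfolding isK1_def by auto
  moreover have "\<And>s. \<not> pat2 x s"
  proof
    fix s assume p: "pat2 x s"
    show False
    proof (cases s)
      case 0 then show False using p h d_kG unfolding pat2_def by auto
    next
      case (Suc s') then have "x (Suc 0) = A" using p unfolding pat2_def by auto
      then show False using p h d_kA unfolding pat2_def by auto
    qed
  qed
  ultimately have "tok x = TKI" by (rule tok_TKI_intro)
  then show ?case using tok_KI_gg(1) h by simp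
next
  case (Suc i)
  have h: "x 0 = c" "x (Suc 0) = c" "x (Suc (Suc 0)) = c" using Suc.prems by auto
  have "\<not> isK1 x" using h d_tG unfolding isK1_def by auto
  moreover have "\<And>s. \<not> pat2 x s"
  proof
    fix s assume p: "pat2 x s"
    show False
    proof (cases s)
      case 0 then show False using p h d_kG unfolding pat2_def by auto
    next
      case (Suc s') then have "x (Suc 0) = A" using p unfolding pat2_def by auto
      then show False using p h d_kA unfolding pat2_def by auto
    qed
  qed
  ultimately have t: "tok x = TKI" by (rule tok_TKI_intro)
  have "\<forall>j<m - 1. sh 1 x j = c" using Suc.prems(1) by auto
  then have "gg (sh 1 x) i = c" using Suc.IH Suc.prems(2) by simp
  then show ?case using gg_KI_Suc[OF t] by simp
qed

lemma G3_tok: assumes "gg x 0 = c" "gg x (Suc 0) = c" "gg x (Suc (Suc 0)) = c" shows "tok x = TKI"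
proof (cases "tok x")
  case (TK1 r)
  have r2: "2 \<le> r" using tok_K1_facts(4)[OF TK1] .
  have c: "c = kap" using K1_out(1)[OF TK1] assms by simp
  show ?thesis
  proof (cases "r = 2")
    case True
    then have "gg x (Suc (Suc 0)) = G" using K1_out(4)[OF TK1] by (simp add: numeral_2_eq_2)
    then show ?thesis using assms c d_kG by simp
  next
    case False
    then have "gg x (Suc 0) = A" using K1_out(2)[OF TK1, of 1] r2 by simp
    then show ?thesis using assms c d_kA by simp
  qed
next
  case (TK2 s)
  have s1: "1 \<le> s" using tok_K2_facts(2)[OF TK2] .
  have c: "c = kap" using K2_out(1)[OF TK2] assms by simp
  show ?thesis
  proof (cases "s = 1")
    case True
    then have "gg x (Suc (Suc 0)) = G" using K2_out(4)[OF TK2] by simp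
    then show ?thesis using assms c d_kG by simp
  next
    case False
    then have "gg x (Suc 0) = A" using K2_out(2)[OF TK2, of 1] s1 by simp
    then show ?thesis using assms c d_kA by simp
  qed
next
  case TK3
  then show ?thesis using K3_out[OF TK3] assms d_tG by simp
qed simp

lemma G3: "(\<forall>i<m. gg x i = c) \<Longrightarrow> i + 2 < m \<Longrightarrow> x i = c"
proof (induction i arbitrary: x m)
  case 0
  then have "tok x = TKI" by (intro G3_tok) auto
  then show ?case using tok_KI_gg(1)[of x] 0 by auto
next
  case (Suc i)
  then have t: "tok x = TKI" by (intro G3_tok) auto
  have "\<forall>j<m - 1. gg (sh 1 x) j = c"
  proof (intro allI impI)
    fix j assume "j < m - 1"
    then have "Suc j < m" by arith
    then show "gg (sh 1 x) j = c" using Suc.prems(1) gg_KI_Suc[OF t, of j] by simp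
  qed
  moreover have "i + 2 < m - 1" using Suc.prems(2) by arith
  ultimately have "sh 1 x i = c" by (rule Suc.IH)
  then show ?case by simp
qed

lemma GQ: "(\<forall>i<j. gg w i = A) \<Longrightarrow> gg w j = kap \<Longrightarrow> gg w (Suc j) = G \<Longrightarrow>
    (\<forall>i<j. w i = A) \<and> w j = kap \<and> w (Suc j) = G"
proof (induction j arbitrary: w)
  case 0
  show ?case
  proof (cases "tok w")
    case (TK1 r)
    have "gg w (Suc 0) = A \<or> gg w (Suc 0) = kap"
      using K1_out(2)[OF TK1, of 1] K1_out(3)[OF TK1] tok_K1_facts(4)[OF TK1]
      by (cases "r = 2") auto
    then show ?thesis using 0 d_AG d_kG by auto
  next
    case (TK2 s)
    have "gg w (Suc 0) = A \<or> gg w (Suc 0) = kap"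
      using K2_out(2)[OF TK2, of 1] K2_out(3)[OF TK2] tok_K2_facts(2)[OF TK2]
      by (cases "s = 1") auto
    then show ?thesis using 0 d_AG d_kG by auto
  next
    case TK3 then show ?thesis using K3_out(1)[OF TK3] 0 d_tk by simp
  next
    case TKI
    have "gg (sh 1 w) 0 = G" using 0 gg_KI_Suc[OF TKI, of 0] by simp
    then have "w (Suc 0) = G" using gg0_G by simp
    then show ?thesis using 0 tok_KI_gg(1)[OF TKI] by simp
  qed
next
  case (Suc j)
  have a0: "gg w 0 = A" using Suc.prems(1) by simp
  show ?case
  proof (cases "tok w")
    case (TK1 r) then show ?thesis using K1_out(1)[OF TK1] a0 d_kA by simp
  next
    case (TK2 s) then show ?thesis using K2_out(1)[OF TK2] a0 d_kA by simp
  next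
    case TK3
    have "gg w (Suc 0) = G" using K3_out(2)[OF TK3] .
    moreover have "gg w (Suc 0) = A \<or> gg w (Suc 0) = kap"
      using Suc.prems by (cases j) auto
    ultimately show ?thesis using d_AG d_kG by auto
  next
    case TKI
    have "\<forall>i<j. gg (sh 1 w) i = A" using Suc.prems(1) gg_KI_Suc[OF TKI] by auto
    moreover have "gg (sh 1 w) j = kap" "gg (sh 1 w) (Suc j) = G"
      using Suc.prems(2,3) gg_KI_Suc[OF TKI] by auto
    ultimately have "(\<forall>i<j. sh 1 w i = A) \<and> sh 1 w j = kap \<and> sh 1 w (Suc j) = G"
      using Suc.IH by blast
    moreover have "w 0 = A" using a0 tok_KI_gg(1)[OF TKI] by simp
    ultimately show ?thesis by (auto simp: less_Suc_eq_0_disj)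
  qed
qed

end

definition goodQ :: "int \<Rightarrow> int \<Rightarrow> int \<Rightarrow> (int \<Rightarrow> int \<Rightarrow> tstate) \<Rightarrow> bool" where
  "goodQ kap A G Q \<longleftrightarrow> wfR Q \<and> symR Q \<and> (\<forall>a. Q a a = Id) \<and> (\<forall>b. b \<noteq> G \<longrightarrow> Q G b = Exit \<and> Q b G = Exit)
    \<and> (\<forall>b u v. Q kap b = St u v \<longrightarrow> v \<noteq> G) \<and> (\<forall>a u v. Q a kap = St u v \<longrightarrow> u \<noteq> G)
    \<and> (\<forall>b u v. Q A b = St u v \<longrightarrow> v \<noteq> A) \<and> (\<forall>a u v. Q a A = St u v \<longrightarrow> u \<noteq> A)
    \<and> (\<forall>a b u v. Q a b = St u v \<longrightarrow> u \<noteq> v)"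

locale core = gdef tau kap A G for tau kap A G +
  fixes R R' :: "int \<Rightarrow> int \<Rightarrow> tstate" and B :: int and L :: "int set" and N :: nat
  assumes wf: "wfR R" and sym: "symR R" and diag: "R a a = Id"
    and uv: "R a b = St u v \<Longrightarrow> u \<noteq> v"
    and iso: "b \<noteq> G \<Longrightarrow> R G b = Exit"
    and F3: "R kap b = St u v \<Longrightarrow> v \<noteq> G"
    and F4: "R a kap = St A w \<Longrightarrow> a = tau \<or> a \<in> L"
    and F5: "R tau b = St u G \<Longrightarrow> b = kap \<or> b \<in> L"
    and F6: "R A b = St u v \<Longrightarrow> v \<noteq> A"
    and Rtk: "R tau kap = St A G"
    and RL: "l \<in> L \<Longrightarrow> R l kap = St A B"
    and RL2: "l \<in> L \<Longrightarrow> R tau l = St B G"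
    and Ldist: "l \<in> L \<Longrightarrow> l \<noteq> tau \<and> l \<noteq> kap"
    and R'eq: "R' a b = (if (a = tau \<and> b = kap) \<or> (a = kap \<and> b = tau) \<or> (a = tau \<and> b \<in> L) \<or> (a \<in> L \<and> b = tau)
       then Exit else R a b)"
    and inS: "tau \<in> Sig N" "kap \<in> Sig N" "A \<in> Sig N" "G \<in> Sig N"
    and dAB: "A \<noteq> B" "B \<noteq> G"
begin

abbreviation "Om \<equiv> Omega N kap"

lemma symD: "R a b = St u v \<Longrightarrow> R b a = St v u"
proof -
  assume h: "R a b = St u v"
  then have "a \<noteq> b" using diag by (metis tstate.distinct(3))
  then show ?thesis using sym h unfolding symR_def by (metis swp.simps(1))
qed

lemma R'R: "R' a b = St u v \<Longrightarrow> R a b = St u v"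
  using R'eq[of a b] by (simp split: if_splits)

lemma R'cases: "R' a b = R a b \<or> R' a b = Exit"
  using R'eq[of a b] by simp

lemma good_R: "goodQ kap A G R"
proof -
  have s: "\<And>a b u v. R a b = St u v \<Longrightarrow> R b a = St v u" by (rule symD)
  have i2: "\<And>a. a \<noteq> G \<Longrightarrow> R a G = Exit"
    using iso sym unfolding symR_def by (metis swp.simps(3))
  show ?thesis unfolding goodQ_def
  proof (intro conjI allI impI)
    show "wfR R" "symR R" by (fact wf, fact sym)
  next
    fix a show "R a a = Id" by (rule diag)
  next
    fix b :: int assume "b \<noteq> G" then show "R G b = Exit" "R b G = Exit" using iso i2 by auto
  next
    fix b u v assume "R kap b = St u v" then show "v \<noteq> G" by (rule F3)
  next
    fix a u v assume "R a kap = St u v" then show "u \<noteq> G" using s F3 by blast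
  next
    fix b u v assume "R A b = St u v" then show "v \<noteq> A" by (rule F6)
  next
    fix a u v assume "R a A = St u v" then show "u \<noteq> A" using s F6 by blast
  next
    fix a b u v assume "R a b = St u v" then show "u \<noteq> v" by (rule uv)
  qed
qed

lemma good_R': "goodQ kap A G R'"
proof -
  have wf': "wfR R'" unfolding wfR_def
  proof (intro allI impI)
    fix a b :: int assume "a \<noteq> b"
    then have "R a b \<noteq> Id" using wf unfolding wfR_def by blast
    then show "R' a b \<noteq> Id" using R'cases[of a b] by auto
  qed
  have diag': "\<And>a. R' a a = Id"
  proof -
    fix a
    have "\<not> ((a = tau \<and> a = kap) \<or> (a = kap \<and> a = tau) \<or> (a = tau \<and> a \<in> L) \<or> (a \<in> L \<and> a = tau))"
      using d_tk Ldist by blast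
    then show "R' a a = Id" using R'eq[of a a] diag[of a] by simp
  qed
  have sym': "symR R'"
    unfolding symR_def
  proof (intro allI impI)
    fix a b :: int assume "a \<noteq> b"
    have e: "R b a = swp (R a b)" using sym \<open>a \<noteq> b\<close> unfolding symR_def by blast
    show "R' b a = swp (R' a b)"
      using e R'eq[of a b] R'eq[of b a] by (simp split: if_splits)
  qed
  have s: "\<And>a b u v. R' a b = St u v \<Longrightarrow> R' b a = St v u"
  proof -
    fix a b u v assume h: "R' a b = St u v"
    then have "a \<noteq> b" using diag' by (metis tstate.distinct(3))
    then show "R' b a = St v u" using sym' h unfolding symR_def by (metis swp.simps(1))
  qed
  have i1: "\<And>b. b \<noteq> G \<Longrightarrow> R' G b = Exit"
  proof -
    fix b :: int assume "b \<noteq> G" then have "R G b = Exit" by (rule iso)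
    then show "R' G b = Exit" using R'cases[of G b] by auto
  qed
  have i2: "\<And>a. a \<noteq> G \<Longrightarrow> R' a G = Exit" using i1 sym' unfolding symR_def by (metis swp.simps(3))
  have f3: "\<And>b u v. R' kap b = St u v \<Longrightarrow> v \<noteq> G" using F3 R'R by blast
  have f6: "\<And>b u v. R' A b = St u v \<Longrightarrow> v \<noteq> A" using F6 R'R by blast
  have uv': "\<And>a b u v. R' a b = St u v \<Longrightarrow> u \<noteq> v" using uv R'R by blast
  show ?thesis unfolding goodQ_def
  proof (intro conjI allI impI)
    show "wfR R'" "symR R'" by (fact wf', fact sym')
  next
    fix a show "R' a a = Id" by (rule diag')
  next
    fix b :: int assume "b \<noteq> G" then show "R' G b = Exit" "R' b G = Exit" using i1 i2 by auto
  next
    fix b u v assume "R' kap b = St u v" then show "v \<noteq> G" by (rule f3)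
  next
    fix a u v assume "R' a kap = St u v" then show "u \<noteq> G" using s f3 by blast
  next
    fix b u v assume "R' A b = St u v" then show "v \<noteq> A" by (rule f6)
  next
    fix a u v assume "R' a A = St u v" then show "u \<noteq> A" using s f6 by blast
  next
    fix a b u v assume "R' a b = St u v" then show "u \<noteq> v" by (rule uv')
  qed
qed

lemma enle: "(T::enat) \<le> enat a \<Longrightarrow> a \<le> b \<Longrightarrow> T \<le> enat b"
  by (meson enat_ord_simps(1) order_trans)
lemma enge: "enat a \<le> (T::enat) \<Longrightarrow> b \<le> a \<Longrightarrow> enat b \<le> T"
  by (meson enat_ord_simps(1) order_trans)

lemma goodD:
  assumes "goodQ kap A G Q"
  shows "wfR Q" "symR Q" "\<And>a. Q a a = Id" "\<And>b. b \<noteq> G \<Longrightarrow> Q G b = Exit" "\<And>b. b \<noteq> G \<Longrightarrow> Q b G = Exit"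
    "\<And>b u v. Q kap b = St u v \<Longrightarrow> v \<noteq> G" "\<And>a u v. Q a kap = St u v \<Longrightarrow> u \<noteq> G"
    "\<And>b u v. Q A b = St u v \<Longrightarrow> v \<noteq> A" "\<And>a u v. Q a A = St u v \<Longrightarrow> u \<noteq> A"
    "\<And>a b u v. Q a b = St u v \<Longrightarrow> u \<noteq> v"
  using assms unfolding goodQ_def by blast+

lemma LB2z: "x 0 \<noteq> y 0 \<Longrightarrow> Q (x 0) (y 0) = St u v \<Longrightarrow>
    (\<forall>i. 1 \<le> i \<and> i \<le> m \<longrightarrow> x i = v \<and> y i = u) \<Longrightarrow> enat (Suc m) \<le> TT Q x y"
  using LB2[of x y 0 Q u v m] by (simp add: agr_def)

lemma UBz: "x 0 \<noteq> y 0 \<Longrightarrow> wfR Q \<Longrightarrow>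
    (\<forall>u v. Q (x 0) (y 0) = St u v \<longrightarrow> (x (Suc m), y (Suc m)) \<noteq> (v, u)) \<Longrightarrow> TT Q x y \<le> enat (Suc m)"
  using UB[of x y 0 Q m] by (simp add: agr_def)

lemma UB0z: "x 0 \<noteq> y 0 \<Longrightarrow> Q (x 0) (y 0) = Exit \<Longrightarrow> TT Q x y \<le> enat 0"
  using UB0[of x y 0 Q] by (simp add: agr_def)

lemma KOUB:
  assumes g: "goodQ kap A G Q"
    and w: "\<And>i. 1 \<le> i \<Longrightarrow> i \<le> j \<Longrightarrow> w i = A" "w (Suc j) = kap" "w (Suc (Suc j)) = G"
    and a: "agr w z q" "w q \<noteq> z q" "1 \<le> q" "q \<le> Suc (Suc j)"
  shows "TT Q w z \<le> enat (min (Suc (Suc j)) (q + 2))"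
proof -
  note gd = goodD[OF g]
  have main: "TT Q w z \<le> enat (Suc (Suc j)) \<and> TT Q w z \<le> enat (q + 2)"
  proof (cases "q \<le> j")
    case True
    then have wq: "w q = A" using w(1) a(3) by simp
    show ?thesis
    proof (cases "Q (w q) (z q)")
      case Exit
      then have "TT Q w z \<le> enat q" using UB0[OF a(1,2)] by simp
      then show ?thesis using True by (auto elim: enle)
    next
      case Id then show ?thesis using gd(1) a(2) unfolding wfR_def by blast
    next
      case (St u v)
      have vA: "v \<noteq> A" using gd(8) St wq by simp
      show ?thesis
      proof (cases "q < j")
        case True
        then have "w (Suc q) = A" using w(1)[of "Suc q"] by simp
        then have "\<forall>u' v'. Q (w q) (z q) = St u' v' \<longrightarrow> (w (Suc q + 0), z (Suc q + 0)) \<noteq> (v', u')"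
          using St vA by simp
        then have "TT Q w z \<le> enat (Suc q + 0)" using UB[OF a(1,2)] gd(1) by blast
        then show ?thesis using True by (auto elim: enle)
      next
        case False
        then have qj: "q = j" using \<open>q \<le> j\<close> by simp
        show ?thesis
        proof (cases "v = kap")
          case True
          have "\<forall>u' v'. Q (w q) (z q) = St u' v' \<longrightarrow> (w (Suc q + 1), z (Suc q + 1)) \<noteq> (v', u')"
            using St True w(3) qj d_kG by simp
          then have "TT Q w z \<le> enat (Suc q + 1)" using UB[OF a(1,2)] gd(1) by blast
          then show ?thesis using qj by simp
        next
          case False
          have "\<forall>u' v'. Q (w q) (z q) = St u' v' \<longrightarrow> (w (Suc q + 0), z (Suc q + 0)) \<noteq> (v', u')"
            using St False w(2) qj by simp
          then have "TT Q w z \<le> enat (Suc q + 0)" using UB[OF a(1,2)] gd(1) by blast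
          then show ?thesis using qj by (auto elim: enle)
        qed
      qed
    qed
  next
    case False
    show ?thesis
    proof (cases "q = Suc j")
      case True
      then have wq: "w q = kap" using w(2) by simp
      show ?thesis
      proof (cases "Q (w q) (z q)")
        case Exit
        then have "TT Q w z \<le> enat q" using UB0[OF a(1,2)] by simp
        then show ?thesis using True by (auto elim: enle)
      next
        case Id then show ?thesis using gd(1) a(2) unfolding wfR_def by blast
      next
        case (St u v)
        have "v \<noteq> G" using gd(6) St wq by simp
        then have "\<forall>u' v'. Q (w q) (z q) = St u' v' \<longrightarrow> (w (Suc q + 0), z (Suc q + 0)) \<noteq> (v', u')"
          using St w(3) True by simp
        then have "TT Q w z \<le> enat (Suc q + 0)" using UB[OF a(1,2)] gd(1) by blast
        then show ?thesis using True by (auto elim: enle)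
      qed
    next
      case False
      then have qj: "q = Suc (Suc j)" using a(4) \<open>\<not> q \<le> j\<close> by simp
      then have "w q = G" using w(3) by simp
      then have "Q (w q) (z q) = Exit" using gd(4) a(2) by simp
      then have "TT Q w z \<le> enat q" using UB0[OF a(1,2)] by simp
      then show ?thesis using qj by (auto elim: enle)
    qed
  qed
  then show ?thesis by (simp add: min_def)
qed

lemma om_sh: "x \<in> Om \<Longrightarrow> sh n x \<in> Om"
proof -
  assume "x \<in> Om"
  then obtain m where m: "\<forall>k\<ge>m. x k = kap" "\<forall>k. x k \<in> Sig N" unfolding Omega_def by blast
  have "\<forall>k\<ge>m. sh n x k = kap" using m(1) by simp
  then show "sh n x \<in> Om" using m(2) unfolding Omega_def by auto
qed

lemma om_ev: "x \<in> Om \<Longrightarrow> \<exists>n. \<forall>k\<ge>n. x k = kap"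
  unfolding Omega_def by blast

lemma om_block: "x \<in> Om \<Longrightarrow> c \<noteq> kap \<Longrightarrow> \<exists>i. x (Suc i) \<noteq> c"
proof -
  assume "x \<in> Om" "c \<noteq> kap"
  then obtain n where "\<forall>k\<ge>n. x k = kap" using om_ev by blast
  then have "x (Suc n) \<noteq> c" using \<open>c \<noteq> kap\<close> by simp
  then show ?thesis by blast
qed

lemma om_run: "x \<in> Om \<Longrightarrow> y \<in> Om \<Longrightarrow> u \<noteq> v \<Longrightarrow> \<exists>i. (x (Suc i), y (Suc i)) \<noteq> (v, u)"
proof -
  assume "x \<in> Om" "y \<in> Om" "u \<noteq> v"
  then obtain n m where "\<forall>k\<ge>n. x k = kap" "\<forall>k\<ge>m. y k = kap" using om_ev by metis
  then have "x (Suc (n + m)) = kap" "y (Suc (n + m)) = kap" by auto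
  then show ?thesis using \<open>u \<noteq> v\<close> by (metis prod.inject)
qed

lemma om_isK1: "x \<in> Om \<Longrightarrow> x 0 = tau \<Longrightarrow> x (Suc 0) = G \<Longrightarrow> x (Suc (Suc 0)) = G \<Longrightarrow> isK1 x"
  unfolding isK1_def using om_block d_kG by metis

lemma KI_tau: "x \<in> Om \<Longrightarrow> tok x = TKI \<Longrightarrow> x 0 = tau \<Longrightarrow> x (Suc 0) \<noteq> G \<or> x (Suc (Suc 0)) \<noteq> G"
  using om_isK1 tok_KI_facts(1) by blast

lemma KI_other: "x 0 \<noteq> tau \<Longrightarrow> x 0 \<noteq> kap \<Longrightarrow> tok x = TKI"
  by (rule tok_TKI_intro) (auto simp: isK1_def pat2_def)

definition PP where "PP x y \<longleftrightarrow> TT R x y \<le> TT R' (gg x) (gg y) + 5 \<and> TT R' (gg x) (gg y) \<le> TT R x y + 5"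

lemma PP_intro:
  assumes "TT R x y \<le> enat a" "enat b \<le> TT R x y" "TT R' (gg x) (gg y) \<le> enat c" "enat d \<le> TT R' (gg x) (gg y)"
    "a \<le> d + 5" "c \<le> b + 5"
  shows "PP x y"
proof -
  have "TT R x y \<le> enat (d + 5)" using assms(1,5) by (meson enat_ord_simps(1) order_trans)
  also have "\<dots> = enat d + 5" by (simp add: numeral_eq_enat)
  also have "\<dots> \<le> TT R' (gg x) (gg y) + 5" using assms(4) by (rule add_right_mono)
  finally have 1: "TT R x y \<le> TT R' (gg x) (gg y) + 5" .
  have "TT R' (gg x) (gg y) \<le> enat (b + 5)" using assms(3,6) by (meson enat_ord_simps(1) order_trans)
  also have "\<dots> = enat b + 5" by (simp add: numeral_eq_enat)
  also have "\<dots> \<le> TT R x y + 5" using assms(2) by (rule add_right_mono)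
  finally have 2: "TT R' (gg x) (gg y) \<le> TT R x y + 5" .
  show ?thesis unfolding PP_def using 1 2 by simp
qed

lemma PP_sym: "PP x y \<Longrightarrow> PP y x"
  unfolding PP_def using T_sym[OF goodD(2)[OF good_R]] T_sym[OF goodD(2)[OF good_R']] by simp

lemma same_tok:
  assumes "tok x = tok y" "x 0 = y 0"
  shows "agr x y (tlen (tok x))" "agr (gg x) (gg y) (tlen (tok x))"
proof -
  show "agr (gg x) (gg y) (tlen (tok x))"
    unfolding agr_def using gg_lt[of _ x] gg_lt[of _ y] assms by simp
  show "agr x y (tlen (tok x))"
  proof (cases "tok x")
    case (TK1 r)
    then have t: "tok y = TK1 r" using assms by simp
    show ?thesis unfolding agr_def
    proof (intro allI impI)
      fix i assume "i < tlen (tok x)"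
      then have "i \<le> r" using TK1 by simp
      then show "x i = y i" using tok_K1_facts(1,2)[OF TK1] tok_K1_facts(1,2)[OF t] by (cases i) auto
    qed
  next
    case (TK2 s)
    then have t: "tok y = TK2 s" using assms by simp
    have p: "pat2 x s" "pat2 y s" using tok_K2_facts(1) TK2 t by auto
    show ?thesis unfolding agr_def
    proof (intro allI impI)
      fix i assume "i < tlen (tok x)"
      then have "i < s + 3" using TK2 by simp
      then have "i = 0 \<or> (1 \<le> i \<and> i \<le> s) \<or> i = Suc s \<or> i = Suc (Suc s)" by arith
      then show "x i = y i" using p unfolding pat2_def by auto
    qed
  next
    case TK3
    then have t: "tok y = TK3" using assms by simp
    have p: "pat2 x 0" "pat2 y 0" using tok_K3_facts TK3 t by auto
    show ?thesis unfolding agr_def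
    proof (intro allI impI)
      fix i assume "i < tlen (tok x)"
      then have "i < 3" using TK3 by simp
      then have "i = 0 \<or> i = Suc 0 \<or> i = Suc (Suc 0)" by arith
      then show "x i = y i" using p unfolding pat2_def by auto
    qed
  next
    case TKI
    then show ?thesis using assms unfolding agr_def by simp
  qed
qed

lemma TT_refl: "TT Q x x = \<infinity>"
proof (rule ccontr)
  assume "TT Q x x \<noteq> \<infinity>"
  then obtain m where m: "TT Q x x = enat m" by auto
  have "enat (Suc m) \<le> TT Q x x" by (rule LB1) (simp add: agr_def)
  then show False using m by simp
qed

end

context core
begin

lemma R'_keep:
  assumes "\<not> ((a = tau \<and> b = kap) \<or> (a = kap \<and> b = tau) \<or> (a = tau \<and> b \<in> L) \<or> (a \<in> L \<and> b = tau))"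
  shows "R' a b = R a b"
proof -
  have "R' a b = (if (a = tau \<and> b = kap) \<or> (a = kap \<and> b = tau) \<or> (a = tau \<and> b \<in> L) \<or> (a \<in> L \<and> b = tau)
       then Exit else R a b)" by (rule R'eq)
  also have "\<dots> = R a b" using assms by (rule if_not_P)
  finally show ?thesis .
qed

lemma R'_rem:
  assumes "(a = tau \<and> b = kap) \<or> (a = kap \<and> b = tau) \<or> (a = tau \<and> b \<in> L) \<or> (a \<in> L \<and> b = tau)"
  shows "R' a b = Exit"
proof -
  have "R' a b = (if (a = tau \<and> b = kap) \<or> (a = kap \<and> b = tau) \<or> (a = tau \<and> b \<in> L) \<or> (a \<in> L \<and> b = tau)
       then Exit else R a b)" by (rule R'eq)
  also have "\<dots> = Exit" using assms by (rule if_P)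
  finally show ?thesis .
qed

lemma blk_Suc: "(\<forall>i<m. P (Suc i)) \<Longrightarrow> (\<forall>i. 1 \<le> i \<and> i \<le> m \<longrightarrow> P i)"
proof (intro allI impI)
  fix i assume a: "\<forall>i<m. P (Suc i)" "1 \<le> i \<and> i \<le> m"
  then obtain i' where "i = Suc i'" "i' < m" by (cases i) auto
  then show "P i" using a(1) by simp
qed

lemma en0: "enat 0 \<le> (T::enat)" by (metis zero_enat_def zero_le)

lemma PP_small: "TT R x y \<le> enat a \<Longrightarrow> TT R' (gg x) (gg y) \<le> enat c \<Longrightarrow> a \<le> 5 \<Longrightarrow> c \<le> 5 \<Longrightarrow> PP x y"
  by (rule PP_intro[of x y a 0 c 0]) (auto simp: en0)

lemma gR: "goodQ kap A G R" by (rule good_R)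
lemma gR': "goodQ kap A G R'" by (rule good_R')

lemma runG_x:
  assumes g: "goodQ kap A G Q" and x: "x \<in> Om" "tok x = TKI" "x 0 = tau" and ne: "x 0 \<noteq> y 0"
    and q: "Q (x 0) (y 0) = St u G"
  shows "TT Q x y \<le> enat 2"
proof -
  have w: "wfR Q" using goodD(1)[OF g] .
  have "x (Suc 0) \<noteq> G \<or> x (Suc (Suc 0)) \<noteq> G" using KI_tau x by blast
  then show ?thesis
  proof
    assume "x (Suc 0) \<noteq> G"
    then have "TT Q x y \<le> enat (Suc 0)" using UBz[of x y Q 0, OF ne w] q by simp
    then show ?thesis by (rule enle) simp
  next
    assume "x (Suc (Suc 0)) \<noteq> G"
    then have "TT Q x y \<le> enat (Suc 1)" using UBz[of x y Q 1, OF ne w] q by simp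
    then show ?thesis by (simp add: numeral_2_eq_2)
  qed
qed

lemma runG_y:
  assumes g: "goodQ kap A G Q" and y: "y \<in> Om" "tok y = TKI" "y 0 = tau" and ne: "x 0 \<noteq> y 0"
    and q: "Q (x 0) (y 0) = St G v"
  shows "TT Q x y \<le> enat 2"
proof -
  have w: "wfR Q" using goodD(1)[OF g] .
  have "y (Suc 0) \<noteq> G \<or> y (Suc (Suc 0)) \<noteq> G" using KI_tau y by blast
  then show ?thesis
  proof
    assume "y (Suc 0) \<noteq> G"
    then have "TT Q x y \<le> enat (Suc 0)" using UBz[of x y Q 0, OF ne w] q by simp
    then show ?thesis by (rule enle) simp
  next
    assume "y (Suc (Suc 0)) \<noteq> G"
    then have "TT Q x y \<le> enat (Suc 1)" using UBz[of x y Q 1, OF ne w] q by simp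
    then show ?thesis by (simp add: numeral_2_eq_2)
  qed
qed

lemma gg_block_fwd: "(\<forall>i<m. p i = c) \<Longrightarrow> \<forall>i. i + 2 < m \<longrightarrow> gg p i = c"
  using G2 by blast

lemma gg_block_bwd: "(\<forall>i<m. p i = v \<and> q i = u) \<Longrightarrow> (p m, q m) \<noteq> (v, u) \<Longrightarrow>
    \<exists>j\<le>m + 2. (gg p j, gg q j) \<noteq> (v, u)"
proof (rule ccontr)
  assume a: "\<forall>i<m. p i = v \<and> q i = u" "(p m, q m) \<noteq> (v, u)" "\<not> (\<exists>j\<le>m + 2. (gg p j, gg q j) \<noteq> (v, u))"
  then have "\<forall>j<m + 3. gg p j = v" "\<forall>j<m + 3. gg q j = u" by auto
  then have "p m = v" "q m = u" using G3[of "m + 3" p v m] G3[of "m + 3" q u m] by auto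
  then show False using a(2) by simp
qed

lemma cII:
  assumes xo: "x \<in> Om" and yo: "y \<in> Om" and tx: "tok x = TKI" and ty: "tok y = TKI" and ne: "x 0 \<noteq> y 0"
  shows "PP x y"
proof -
  have gx0: "gg x 0 = x 0" and gy0: "gg y 0 = y 0" using tok_KI_gg(1) tx ty by auto
  have gne: "gg x 0 \<noteq> gg y 0" using gx0 gy0 ne by simp
  have sx: "\<And>i. gg x (Suc i) = gg (sh 1 x) i" using gg_KI_Suc[OF tx] .
  have sy: "\<And>i. gg y (Suc i) = gg (sh 1 y) i" using gg_KI_Suc[OF ty] .
  let ?rem = "(x 0 = tau \<and> y 0 = kap) \<or> (x 0 = kap \<and> y 0 = tau) \<or> (x 0 = tau \<and> y 0 \<in> L) \<or> (x 0 \<in> L \<and> y 0 = tau)"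
  show ?thesis
  proof (cases ?rem)
    case True
    then have "R' (x 0) (y 0) = Exit" by (rule R'_rem)
    then have t': "TT R' (gg x) (gg y) \<le> enat 0" using UB0z[of "gg x" "gg y" R', OF gne] gx0 gy0 by simp
    have "TT R x y \<le> enat 2"
    proof -
      consider "x 0 = tau \<and> y 0 = kap" | "x 0 = kap \<and> y 0 = tau" | "x 0 = tau \<and> y 0 \<in> L" | "x 0 \<in> L \<and> y 0 = tau"
        using True by blast
      then show ?thesis
      proof cases
        case 1 then show ?thesis using runG_x[of R x y, OF gR xo tx _ ne] Rtk by simp
      next
        case 2 then have "R (x 0) (y 0) = St G A" using symD[OF Rtk] by simp
          then show ?thesis using runG_y[of R y x, OF gR yo ty _ ne] 2 by simp
      next
        case 3 then show ?thesis using runG_x[of R x y, OF gR xo tx _ ne] RL2 by simp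
      next
        case 4 then have "R (x 0) (y 0) = St G B" using symD[OF RL2] by simp
          then show ?thesis using runG_y[of R y x, OF gR yo ty _ ne] 4 by simp
      qed
    qed
    then show ?thesis using t' by (rule PP_small) auto
  next
    case False
    then have rr: "R' (x 0) (y 0) = R (x 0) (y 0)" by (rule R'_keep)
    show ?thesis
    proof (cases "R (x 0) (y 0)")
      case Id then show ?thesis using goodD(1)[OF gR] ne unfolding wfR_def by blast
    next
      case Exit
      then have "TT R x y \<le> enat 0" using UB0z[of x y R, OF ne] by simp
      moreover have "TT R' (gg x) (gg y) \<le> enat 0" using UB0z[of "gg x" "gg y" R', OF gne] Exit rr gx0 gy0 by simp
      ultimately show ?thesis by (rule PP_small) auto
    next
      case (St u v)
      have uv: "u \<noteq> v" using uv St by blast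
      obtain i0 where "(x (Suc i0), y (Suc i0)) \<noteq> (v, u)" using om_run[OF xo yo uv] by blast
      define m where "m = (LEAST i. (x (Suc i), y (Suc i)) \<noteq> (v, u))"
      have m1: "(x (Suc m), y (Suc m)) \<noteq> (v, u)" unfolding m_def
        by (rule LeastI[of "\<lambda>i. (x (Suc i), y (Suc i)) \<noteq> (v, u)"]) fact
      have m2: "\<forall>i<m. x (Suc i) = v \<and> y (Suc i) = u" unfolding m_def using not_less_Least by blast
      have b1: "\<forall>i<m. sh 1 x i = v \<and> sh 1 y i = u" using m2 by simp
      have b2: "(sh 1 x m, sh 1 y m) \<noteq> (v, u)" using m1 by simp
      have T1: "TT R x y \<le> enat (Suc m)" using UBz[of x y R m, OF ne goodD(1)[OF gR]] St m1 by simp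
      have T2: "enat (Suc m) \<le> TT R x y"
        by (rule LB2z[of x y R u v, OF ne St]) (rule blk_Suc[of m "\<lambda>i. x i = v \<and> y i = u", OF m2])
      have fx: "\<forall>i. i + 2 < m \<longrightarrow> gg (sh 1 x) i = v" using gg_block_fwd[of m "sh 1 x" v] b1 by blast
      have fy: "\<forall>i. i + 2 < m \<longrightarrow> gg (sh 1 y) i = u" using gg_block_fwd[of m "sh 1 y" u] b1 by blast
      have T3: "enat (Suc (m - 2)) \<le> TT R' (gg x) (gg y)"
      proof (rule LB2z[of "gg x" "gg y" R', OF gne])
        show "R' (gg x 0) (gg y 0) = St u v" using rr St gx0 gy0 by simp
        show "\<forall>i. 1 \<le> i \<and> i \<le> m - 2 \<longrightarrow> gg x i = v \<and> gg y i = u"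
        proof (intro allI impI)
          fix i assume h: "1 \<le> i \<and> i \<le> m - 2"
          then obtain i' where i': "i = Suc i'" "i' + 2 < m" by (cases i) auto
          then show "gg x i = v \<and> gg y i = u" using fx fy sx sy by simp
        qed
      qed
      obtain j where j: "j \<le> m + 2" "(gg (sh 1 x) j, gg (sh 1 y) j) \<noteq> (v, u)"
        using gg_block_bwd[OF b1 b2] by blast
      have T4: "TT R' (gg x) (gg y) \<le> enat (Suc j)"
        using UBz[of "gg x" "gg y" R' j, OF gne goodD(1)[OF gR']] rr St gx0 gy0 j(2) sx sy by simp
      show ?thesis
        by (rule PP_intro[OF T1 T2 T4 T3]) (use j(1) in auto)
    qed
  qed
qed

lemma UBj: "agr x y j \<Longrightarrow> x j \<noteq> y j \<Longrightarrow> wfR Q \<Longrightarrow>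
   (\<forall>u v. Q (x j) (y j) = St u v \<longrightarrow> (x (Suc j + m), y (Suc j + m)) \<noteq> (v, u)) \<Longrightarrow> TT Q x y \<le> enat (Suc j + m)"
  using UB by blast

lemma wR: "wfR R" using goodD(1)[OF gR] .
lemma wR': "wfR R'" using goodD(1)[OF gR'] .

lemma c11:
  assumes tx: "tok x = TK1 r" and ty: "tok y = TK1 r'" and rr: "r < r'"
  shows "PP x y"
proof -
  note fx = tok_K1_facts[OF tx] and fy = tok_K1_facts[OF ty]
  note ox = K1_out[OF tx] and oy = K1_out[OF ty]
  have a1: "agr x y (Suc r)" unfolding agr_def
  proof (intro allI impI)
    fix i assume "i < Suc r"
    then show "x i = y i" using fx(1) fx(2)[of i] fy(1) fy(2)[of i] rr by (cases i) auto
  qed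
  have ne1: "x (Suc r) \<noteq> y (Suc r)" using fx(3) fy(2)[of "Suc r"] rr by simp
  have "R (x (Suc r)) (y (Suc r)) = Exit" using goodD(5)[OF gR] fx(3) fy(2)[of "Suc r"] rr by simp
  then have T1: "TT R x y \<le> enat (Suc r)" using UB0[OF a1 ne1] by simp
  have T2: "enat (Suc r) \<le> TT R x y" using LB1[OF a1] .
  have a2: "agr (gg x) (gg y) (r - 1)" unfolding agr_def
  proof (intro allI impI)
    fix i assume "i < r - 1"
    then show "gg x i = gg y i" using ox(1) ox(2)[of i] oy(1) oy(2)[of i] rr by (cases i) auto
  qed
  have gx: "gg x (r - 1) = kap" by (fact ox(3))
  have gy: "gg y (r - 1) = A" using oy(2)[of "r - 1"] fx(4) rr by simp
  have ne2: "gg x (r - 1) \<noteq> gg y (r - 1)" using gx gy d_kA by simp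
  have r1: "Suc (r - 1) + 0 = r" using fx(4) by simp
  have T3: "TT R' (gg x) (gg y) \<le> enat (Suc (r - 1) + 0)"
  proof (rule UBj[OF a2 ne2 wR'])
    show "\<forall>u v. R' (gg x (r - 1)) (gg y (r - 1)) = St u v \<longrightarrow>
      (gg x (Suc (r - 1) + 0), gg y (Suc (r - 1) + 0)) \<noteq> (v, u)"
      using goodD(6)[OF gR'] gx ox(4) r1 by auto
  qed
  have T4: "enat (r - 1) \<le> TT R' (gg x) (gg y)" using LB1[OF a2] .
  show ?thesis by (rule PP_intro[OF T1 T2 T3 T4]) (use fx(4) in auto)
qed

lemma c12:
  assumes tx: "tok x = TK1 r" and ty: "tok y = TK2 s"
  shows "PP x y"
proof -
  note fx = tok_K1_facts[OF tx] and ox = K1_out[OF tx] and oy = K2_out[OF ty]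
  have py: "pat2 y s" and s1: "1 \<le> s" using tok_K2_facts[OF ty] by auto
  have y0: "y 0 = kap" and yA: "\<And>i. 1 \<le> i \<Longrightarrow> i \<le> s \<Longrightarrow> y i = A" and ys: "y (Suc s) = kap"
    using py unfolding pat2_def by auto
  have ne: "x 0 \<noteq> y 0" using fx(1) y0 d_tk by simp
  have Rxy: "R (x 0) (y 0) = St A G" using fx(1) y0 Rtk by simp
  have T2: "enat (Suc (min r s)) \<le> TT R x y"
  proof (rule LB2z[of x y R A G, OF ne Rxy])
    show "\<forall>i. 1 \<le> i \<and> i \<le> min r s \<longrightarrow> x i = G \<and> y i = A" using fx(2) yA by auto
  qed
  have T1: "TT R x y \<le> enat (Suc (min r s))"
  proof (rule UBz[of x y R "min r s", OF ne wR])
    show "\<forall>u v. R (x 0) (y 0) = St u v \<longrightarrow> (x (Suc (min r s)), y (Suc (min r s))) \<noteq> (v, u)"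
    proof (cases "r \<le> s")
      case True then show ?thesis using Rxy fx(3) by (simp add: min_def)
    next
      case False then show ?thesis using Rxy ys d_kA by (simp add: min_def)
    qed
  qed
  have gx0: "gg x 0 = kap" "gg y 0 = kap" using ox(1) oy(1) by auto
  consider "r \<le> s" | "r = Suc s" | "Suc s < r" by arith
  then show ?thesis
  proof cases
    case 1
    have a2: "agr (gg x) (gg y) (r - 1)" unfolding agr_def
    proof (intro allI impI)
      fix i assume "i < r - 1"
      then show "gg x i = gg y i" using ox(1) ox(2)[of i] oy(1) oy(2)[of i] 1 by (cases i) auto
    qed
    have gx: "gg x (r - 1) = kap" by (fact ox(3))
    have gy: "gg y (r - 1) = A" using oy(2)[of "r - 1"] fx(4) 1 by simp
    have ne2: "gg x (r - 1) \<noteq> gg y (r - 1)" using gx gy d_kA by simp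
    have r1: "Suc (r - 1) + 0 = r" using fx(4) by simp
    have T3: "TT R' (gg x) (gg y) \<le> enat (Suc (r - 1) + 0)"
      by (rule UBj[OF a2 ne2 wR']) (use goodD(6)[OF gR'] gx ox(4) r1 in auto)
    have T4: "enat (r - 1) \<le> TT R' (gg x) (gg y)" using LB1[OF a2] .
    show ?thesis by (rule PP_intro[OF T1 T2 T3 T4]) (use fx(4) 1 in auto)
  next
    case 2
    have a2: "agr (gg x) (gg y) (Suc r)" unfolding agr_def
    proof (intro allI impI)
      fix i assume i: "i < Suc r"
      consider "i = 0" | "1 \<le> i \<and> i < s" | "i = s" | "i = Suc s" using i 2 by arith
      then show "gg x i = gg y i"
      proof cases
        case 1 then show ?thesis using gx0 by simp
      next
        case 2 then show ?thesis using ox(2)[of i] oy(2)[of i] \<open>r = Suc s\<close> by simp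
      next
        case 3 then show ?thesis using ox(3) oy(3) \<open>r = Suc s\<close> by simp
      next
        case 4 then show ?thesis using ox(4) oy(4) \<open>r = Suc s\<close> by simp
      qed
    qed
    have gxy: "gg x (Suc r) \<noteq> G" "gg y (Suc r) = G" using ox(5) oy(5) 2 by auto
    then have ne2: "gg x (Suc r) \<noteq> gg y (Suc r)" by simp
    have "R' (gg x (Suc r)) (gg y (Suc r)) = Exit" using goodD(5)[OF gR'] gxy by simp
    then have T3: "TT R' (gg x) (gg y) \<le> enat (Suc r)" using UB0[OF a2 ne2] by simp
    have T4: "enat (Suc r) \<le> TT R' (gg x) (gg y)" using LB1[OF a2] .
    show ?thesis by (rule PP_intro[OF T1 T2 T3 T4]) (use 2 in auto)
  next
    case 3
    have a2: "agr (gg x) (gg y) s" unfolding agr_def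
    proof (intro allI impI)
      fix i assume "i < s"
      then show "gg x i = gg y i" using ox(1) ox(2)[of i] oy(1) oy(2)[of i] 3 by (cases i) auto
    qed
    have gx: "gg x s = A" using ox(2)[of s] s1 3 by simp
    have gy: "gg y s = kap" by (fact oy(3))
    have ne2: "gg x s \<noteq> gg y s" using gx gy d_kA by simp
    have T3: "TT R' (gg x) (gg y) \<le> enat (Suc s + 0)"
      by (rule UBj[OF a2 ne2 wR']) (use goodD(7)[OF gR'] gx gy oy(4) in auto)
    have T4: "enat s \<le> TT R' (gg x) (gg y)" using LB1[OF a2] .
    show ?thesis by (rule PP_intro[OF T1 T2 T3 T4]) (use 3 in auto)
  qed
qed

lemma kapA_UB:
  assumes g: "goodQ kap A G Q" and sub: "\<And>a b u v. Q a b = St u v \<Longrightarrow> R a b = St u v"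
    and w0: "w 0 = kap" and z0: "z 0 = a" and a: "a \<noteq> kap" "a \<noteq> tau" "a \<notin> L"
    and w1: "w (Suc 0) = A \<or> (w (Suc 0) = kap \<and> w (Suc (Suc 0)) = G)"
  shows "TT Q w z \<le> enat 2"
proof -
  have ne: "w 0 \<noteq> z 0" using w0 z0 a by simp
  have vA: "\<And>u v. Q (w 0) (z 0) = St u v \<Longrightarrow> v \<noteq> A"
  proof
    fix u v assume "Q (w 0) (z 0) = St u v" "v = A"
    then have "R kap a = St u A" using sub w0 z0 by simp
    then have "R a kap = St A u" by (rule symD)
    then show False using F4 a by blast
  qed
  from w1 show ?thesis
  proof
    assume "w (Suc 0) = A"
    then have "TT Q w z \<le> enat (Suc 0)"
      using UBz[of w z Q 0, OF ne goodD(1)[OF g]] vA by auto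
    then show ?thesis by (rule enle) simp
  next
    assume h: "w (Suc 0) = kap \<and> w (Suc (Suc 0)) = G"
    show ?thesis
    proof (cases "\<exists>u. Q (w 0) (z 0) = St u kap")
      case True
      then have "TT Q w z \<le> enat (Suc 1)"
        using UBz[of w z Q 1, OF ne goodD(1)[OF g]] h d_kG by auto
      then show ?thesis by (simp add: numeral_2_eq_2)
    next
      case False
      then have "TT Q w z \<le> enat (Suc 0)"
        using UBz[of w z Q 0, OF ne goodD(1)[OF g]] h by auto
      then show ?thesis by (rule enle) simp
    qed
  qed
qed

lemma c13:
  assumes tx: "tok x = TK1 r" and ty: "tok y = TK3"
  shows "PP x y"
proof -
  note fx = tok_K1_facts[OF tx] and ox = K1_out[OF tx] and oy = K3_out[OF ty]
  have py: "pat2 y 0" using tok_K3_facts[OF ty] .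
  have y: "y 0 = kap" "y (Suc 0) = kap" using py unfolding pat2_def by auto
  have ne: "x 0 \<noteq> y 0" using fx(1) y d_tk by simp
  have "TT R x y \<le> enat (Suc 0)"
    using UBz[of x y R 0, OF ne wR] Rtk fx(1) y d_kA by simp
  moreover have "TT R' (gg x) (gg y) \<le> enat 0"
  proof (rule UB0z)
    show "gg x 0 \<noteq> gg y 0" using ox(1) oy(1) d_tk by simp
    show "R' (gg x 0) (gg y 0) = Exit" using ox(1) oy(1) by (intro R'_rem) simp
  qed
  ultimately show ?thesis by (rule PP_small) auto
qed

lemma c1Itau:
  assumes yo: "y \<in> Om" and tx: "tok x = TK1 r" and ty: "tok y = TKI" and y0: "y 0 = tau"
  shows "PP x y"
proof -
  note fx = tok_K1_facts[OF tx] and ox = K1_out[OF tx]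
  have "TT R x y \<le> enat 2"
  proof -
    have "y (Suc 0) \<noteq> G \<or> y (Suc (Suc 0)) \<noteq> G" using KI_tau[OF yo ty y0] .
    then show ?thesis
    proof
      assume h: "y (Suc 0) \<noteq> G"
      have a: "agr x y 1" using fx(1) y0 unfolding agr_def by simp
      have "x 1 = G" using fx(2)[of 1] fx(4) by simp
      then have "TT R x y \<le> enat 1" using UB0[OF a] h goodD(4)[OF gR] by simp
      then show ?thesis by (rule enle) simp
    next
      assume h: "y (Suc (Suc 0)) \<noteq> G"
      show ?thesis
      proof (cases "y (Suc 0) = G")
        case True
        have x12: "x (Suc 0) = G" "x (Suc (Suc 0)) = G" using fx(2) fx(4) by auto
        have a: "agr x y 2" using fx(1) y0 x12 True unfolding agr_def by (auto simp: less_2_cases_iff)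
        have "TT R x y \<le> enat 2" using UB0[OF a] h x12 goodD(4)[OF gR] by (simp add: numeral_2_eq_2)
        then show ?thesis .
      next
        case False
        have a: "agr x y 1" using fx(1) y0 unfolding agr_def by simp
        have "x 1 = G" using fx(2)[of 1] fx(4) by simp
        then have "TT R x y \<le> enat 1" using UB0[OF a] False goodD(4)[OF gR] by simp
        then show ?thesis by (rule enle) simp
      qed
    qed
  qed
  moreover have "TT R' (gg x) (gg y) \<le> enat 0"
  proof (rule UB0z)
    show "gg x 0 \<noteq> gg y 0" using ox(1) tok_KI_gg(1)[OF ty] y0 d_tk by simp
    show "R' (gg x 0) (gg y 0) = Exit" using ox(1) tok_KI_gg(1)[OF ty] y0 by (intro R'_rem) simp
  qed
  ultimately show ?thesis by (rule PP_small) auto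
qed

lemma c1Io:
  assumes tx: "tok x = TK1 r" and ty: "tok y = TKI" and a: "y 0 \<noteq> kap" "y 0 \<noteq> tau" "y 0 \<notin> L"
  shows "PP x y"
proof -
  note fx = tok_K1_facts[OF tx] and ox = K1_out[OF tx]
  have ne: "x 0 \<noteq> y 0" using fx(1) a by simp
  have vG: "\<And>u v. R (x 0) (y 0) = St u v \<Longrightarrow> v \<noteq> G"
  proof
    fix u v assume "R (x 0) (y 0) = St u v" "v = G"
    then have "R tau (y 0) = St u G" using fx(1) by simp
    then show False using F5 a by blast
  qed
  have "x (Suc 0) = G" using fx(2) fx(4) by simp
  then have "TT R x y \<le> enat (Suc 0)" using UBz[of x y R 0, OF ne wR] vG by auto
  moreover have "TT R' (gg x) (gg y) \<le> enat 2"
  proof (rule kapA_UB[of R' "gg x" "gg y" "y 0", OF gR' R'R ox(1) tok_KI_gg(1)[OF ty] a])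
    show "gg x (Suc 0) = A \<or> gg x (Suc 0) = kap \<and> gg x (Suc (Suc 0)) = G"
    proof (cases "r = 2")
      case True then show ?thesis using ox(3) ox(4) by (simp add: numeral_2_eq_2)
    next
      case False then show ?thesis using ox(2)[of 1] fx(4) by simp
    qed
  qed
  ultimately show ?thesis by (rule PP_small) auto
qed

lemma block_exit: "(\<forall>j<t + 3. gg p j = c) \<Longrightarrow> p t = c"
  using G3[of "t + 3" p c t] by simp

lemma c1IL:
  assumes tx: "tok x = TK1 r" and ty: "tok y = TKI" and yl: "y 0 \<in> L"
  shows "PP x y"
proof -
  note fx = tok_K1_facts[OF tx] and ox = K1_out[OF tx]
  have y0: "y 0 \<noteq> tau" "y 0 \<noteq> kap" using Ldist[OF yl] by auto
  have ne: "x 0 \<noteq> y 0" using fx(1) y0 by simp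
  have Rxy: "R (x 0) (y 0) = St B G" using RL2[OF yl] fx(1) by simp
  define t where "t = (LEAST i. y (Suc i) \<noteq> B \<or> r \<le> i)"
  have t1: "y (Suc t) \<noteq> B \<or> r \<le> t" unfolding t_def by (rule LeastI[of _ r]) simp
  have t2: "\<And>i. i < t \<Longrightarrow> y (Suc i) = B" unfolding t_def using not_less_Least by blast
  have tr: "t \<le> r" unfolding t_def by (rule Least_le) simp
  have T2: "enat (Suc t) \<le> TT R x y"
  proof (rule LB2z[of x y R B G, OF ne Rxy])
    show "\<forall>i. 1 \<le> i \<and> i \<le> t \<longrightarrow> x i = G \<and> y i = B"
    proof (intro allI impI)
      fix i assume i: "1 \<le> i \<and> i \<le> t"
      then obtain i' where "i = Suc i'" "i' < t" by (cases i) auto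
      then show "x i = G \<and> y i = B" using fx(2)[of i] t2 i tr by simp
    qed
  qed
  have T1: "TT R x y \<le> enat (Suc t)"
  proof (rule UBz[of x y R t, OF ne wR])
    show "\<forall>u v. R (x 0) (y 0) = St u v \<longrightarrow> (x (Suc t), y (Suc t)) \<noteq> (v, u)"
    proof (cases "y (Suc t) \<noteq> B")
      case True then show ?thesis using Rxy by simp
    next
      case False then have "t = r" using t1 tr by simp
      then show ?thesis using Rxy fx(3) by simp
    qed
  qed
  have gx0: "gg x 0 = kap" and gy0: "gg y 0 = y 0" using ox(1) tok_KI_gg(1)[OF ty] by auto
  have gne: "gg x 0 \<noteq> gg y 0" using gx0 gy0 y0 by simp
  have R'xy: "R' (gg x 0) (gg y 0) = St B A"
  proof -
    have "R' kap (y 0) = R kap (y 0)" using y0 d_tk Ldist by (intro R'_keep) auto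
    moreover have "R kap (y 0) = St B A" using symD[OF RL[OF yl]] .
    ultimately show ?thesis using gx0 gy0 by simp
  qed
  have sy: "\<And>i. gg y (Suc i) = gg (sh 1 y) i" using gg_KI_Suc[OF ty] .
  have by1: "\<forall>i<t. sh 1 y i = B" using t2 by simp
  have T4: "enat (Suc (t - 2)) \<le> TT R' (gg x) (gg y)"
  proof (rule LB2z[of "gg x" "gg y" R' B A, OF gne R'xy])
    show "\<forall>i. 1 \<le> i \<and> i \<le> t - 2 \<longrightarrow> gg x i = A \<and> gg y i = B"
    proof (intro allI impI)
      fix i assume i: "1 \<le> i \<and> i \<le> t - 2"
      then obtain i' where i': "i = Suc i'" "i' + 2 < t" by (cases i) auto
      have "gg (sh 1 y) i' = B" using G2[OF by1 i'(2)] .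
      then show "gg x i = A \<and> gg y i = B" using ox(2)[of i] i tr sy i'(1) by simp
    qed
  qed
  have T3: "TT R' (gg x) (gg y) \<le> enat (t + 3)"
  proof (cases "r \<le> t + 4")
    case True
    have "TT R' (gg x) (gg y) \<le> enat (Suc (r - 2))"
    proof (rule UBz[of "gg x" "gg y" R' "r - 2", OF gne wR'])
      have "Suc (r - 2) = r - 1" using fx(4) by simp
      then show "\<forall>u v. R' (gg x 0) (gg y 0) = St u v \<longrightarrow> (gg x (Suc (r - 2)), gg y (Suc (r - 2))) \<noteq> (v, u)"
        using R'xy ox(3) d_kA by simp
    qed
    then show ?thesis by (rule enle) (use True in simp)
  next
    case False
    then have "y (Suc t) \<noteq> B" using t1 by simp
    then have "\<not> (\<forall>j<t + 3. gg (sh 1 y) j = B)" using block_exit[of t "sh 1 y" B] by auto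
    then obtain j where j: "j < t + 3" "gg (sh 1 y) j \<noteq> B" by blast
    have "TT R' (gg x) (gg y) \<le> enat (Suc j)"
      using UBz[of "gg x" "gg y" R' j, OF gne wR'] R'xy j(2) sy by simp
    then show ?thesis by (rule enle) (use j in simp)
  qed
  show ?thesis by (rule PP_intro[OF T1 T2 T3 T4]) auto
qed

lemma first_div: "\<not> agr p q n \<Longrightarrow> \<exists>k<n. agr p q k \<and> p k \<noteq> q k"
proof -
  assume "\<not> agr p q n"
  then obtain i where i: "i < n" "p i \<noteq> q i" unfolding agr_def by blast
  define k where "k = (LEAST i. p i \<noteq> q i)"
  have "p k \<noteq> q k" unfolding k_def by (rule LeastI[of _ i]) (fact i(2))
  moreover have "k \<le> i" unfolding k_def by (rule Least_le) (fact i(2))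
  moreover have "agr p q k" unfolding agr_def k_def using not_less_Least by blast
  ultimately show ?thesis using i(1) by (intro exI[of _ k]) auto
qed

lemma c1Ikap:
  assumes yo: "y \<in> Om" and tx: "tok x = TK1 r" and ty: "tok y = TKI" and y0: "y 0 = kap"
  shows "PP x y"
proof -
  note fx = tok_K1_facts[OF tx] and ox = K1_out[OF tx]
  have np: "\<And>s. \<not> pat2 y s" using tok_KI_facts(2)[OF ty] .
  have ne: "x 0 \<noteq> y 0" using fx(1) y0 d_tk by simp
  have Rxy: "R (x 0) (y 0) = St A G" using Rtk fx(1) y0 by simp
  obtain i0 where "y (Suc i0) \<noteq> A" using om_block[OF yo] d_kA by metis
  define t where "t = (LEAST i. y (Suc i) \<noteq> A)"
  have t1: "y (Suc t) \<noteq> A" unfolding t_def by (rule LeastI[of _ i0]) fact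
  have t2: "\<And>i. i < t \<Longrightarrow> y (Suc i) = A" unfolding t_def using not_less_Least by blast
  have T2: "enat (Suc (min r t)) \<le> TT R x y"
  proof (rule LB2z[of x y R A G, OF ne Rxy])
    show "\<forall>i. 1 \<le> i \<and> i \<le> min r t \<longrightarrow> x i = G \<and> y i = A"
    proof (intro allI impI)
      fix i assume i: "1 \<le> i \<and> i \<le> min r t"
      then obtain i' where "i = Suc i'" "i' < t" by (cases i) auto
      then show "x i = G \<and> y i = A" using fx(2)[of i] t2 i by simp
    qed
  qed
  have T1: "TT R x y \<le> enat (Suc (min r t))"
  proof (rule UBz[of x y R "min r t", OF ne wR])
    show "\<forall>u v. R (x 0) (y 0) = St u v \<longrightarrow> (x (Suc (min r t)), y (Suc (min r t))) \<noteq> (v, u)"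
      using Rxy fx(3) t1 by (simp add: min_def)
  qed
  have gx0: "gg x 0 = kap" and gy0: "gg y 0 = kap" using ox(1) tok_KI_gg(1)[OF ty] y0 by auto
  have sy: "\<And>i. gg y (Suc i) = gg (sh 1 y) i" using gg_KI_Suc[OF ty] .
  have by1: "\<forall>i<t. sh 1 y i = A" using t2 by simp
  have T4: "enat (Suc (min (r - 2) (t - 2))) \<le> TT R' (gg x) (gg y)"
  proof (rule LB1)
    show "agr (gg x) (gg y) (Suc (min (r - 2) (t - 2)))" unfolding agr_def
    proof (intro allI impI)
      fix i assume i: "i < Suc (min (r - 2) (t - 2))"
      show "gg x i = gg y i"
      proof (cases i)
        case 0 then show ?thesis using gx0 gy0 by simp
      next
        case (Suc i')
        have c: "i' + 2 < t" "1 \<le> i" "i + 2 \<le> r" using i Suc by auto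
        have h: "gg (sh 1 y) i' = A" using G2[OF by1 c(1)] .
        have "gg y (Suc i') = A" using sy[of i'] h by (rule trans)
        moreover have "gg x i = A" using ox(2) c(2,3) by blast
        ultimately show ?thesis using Suc by simp
      qed
    qed
  qed
  have nagr: "\<not> agr (gg x) (gg y) (Suc r)"
  proof
    assume a: "agr (gg x) (gg y) (Suc r)"
    have rr: "Suc (r - 2) = r - 1" "Suc (Suc (r - 2)) = r" using fx(4) by arith+
    have "(\<forall>i<r - 2. gg (sh 1 y) i = A)"
    proof (intro allI impI)
      fix i assume "i < r - 2"
      then have "gg x (Suc i) = A" using ox(2)[of "Suc i"] by simp
      then show "gg (sh 1 y) i = A" using a sy[of i] \<open>i < r - 2\<close> unfolding agr_def by simp
    qed
    moreover have "gg (sh 1 y) (r - 2) = kap" using a ox(3) sy[of "r - 2"] rr unfolding agr_def by simp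
    moreover have "gg (sh 1 y) (Suc (r - 2)) = G" using a ox(4) sy[of "Suc (r - 2)"] rr unfolding agr_def by simp
    ultimately have q: "(\<forall>i<r - 2. sh 1 y i = A) \<and> sh 1 y (r - 2) = kap \<and> sh 1 y (Suc (r - 2)) = G"
      using GQ by blast
    have "pat2 y (r - 2)" unfolding pat2_def
    proof (intro conjI allI impI)
      show "y 0 = kap" by (fact y0)
    next
      fix i assume "1 \<le> i \<and> i \<le> r - 2"
      then obtain i' where "i = Suc i'" "i' < r - 2" by (cases i) auto
      then show "y i = A" using q by simp
    next
      show "y (Suc (r - 2)) = kap" using q by simp
      show "y (Suc (Suc (r - 2))) = G" using q by simp
    qed
    then show False using np by blast
  qed
  obtain q where q: "q < Suc r" "agr (gg x) (gg y) q" "gg x q \<noteq> gg y q" using first_div[OF nagr] by blast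
  have q1: "1 \<le> q" using q(3) gx0 gy0 by (cases q) auto
  have ko: "TT R' (gg x) (gg y) \<le> enat (min (Suc (Suc (r - 2))) (q + 2))"
  proof (rule KOUB[OF gR', of "r - 2" "gg x" "gg y" q])
    show "\<And>i. 1 \<le> i \<Longrightarrow> i \<le> r - 2 \<Longrightarrow> gg x i = A" using ox(2) by simp
    have rr: "Suc (r - 2) = r - 1" "Suc (Suc (r - 2)) = r" using fx(4) by arith+
    show "gg x (Suc (r - 2)) = kap" "gg x (Suc (Suc (r - 2))) = G" using ox(3,4) rr by simp_all
    show "agr (gg x) (gg y) q" "gg x q \<noteq> gg y q" "1 \<le> q" by (fact q(2), fact q(3), fact q1)
    show "q \<le> Suc (Suc (r - 2))" using q(1) fx(4) by simp
  qed
  have T3: "TT R' (gg x) (gg y) \<le> enat (min r t + 6)"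
  proof (cases "r \<le> t + 4")
    case True
    have "TT R' (gg x) (gg y) \<le> enat (Suc (Suc (r - 2)))" using ko by (rule enle) simp
    then show ?thesis by (rule enle) (use True fx(4) in \<open>auto simp: min_def\<close>)
  next
    case False
    have "q \<le> t + 3"
    proof (rule ccontr)
      assume "\<not> q \<le> t + 3"
      then have "\<forall>j<t + 3. gg (sh 1 y) j = A"
      proof (intro allI impI)
        fix j assume "j < t + 3"
        then have "Suc j < q" "1 \<le> Suc j" "Suc j + 2 \<le> r" using \<open>\<not> q \<le> t + 3\<close> False by auto
        then have "gg y (Suc j) = A" using q(2) ox(2)[of "Suc j"] unfolding agr_def by auto
        then show "gg (sh 1 y) j = A" using sy by simp
      qed
      then have "sh 1 y t = A" by (rule block_exit)
      then show False using t1 by simp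
    qed
    then have "TT R' (gg x) (gg y) \<le> enat (q + 2)" using ko by (rule_tac enle) auto
    then show ?thesis by (rule enle) (use \<open>q \<le> t + 3\<close> False in \<open>simp add: min_def\<close>)
  qed
  show ?thesis by (rule PP_intro[OF T1 T2 T3 T4]) auto
qed

lemma pat2D: "pat2 x s \<Longrightarrow> x 0 = kap \<and> (\<forall>i. 1 \<le> i \<and> i \<le> s \<longrightarrow> x i = A) \<and> x (Suc s) = kap \<and> x (Suc (Suc s)) = G"
  unfolding pat2_def by blast

lemma c22:
  assumes tx: "tok x = TK2 s" and ty: "tok y = TK2 s'" and ss: "s < s'"
  shows "PP x y"
proof -
  have px: "x 0 = kap" "\<And>i. 1 \<le> i \<Longrightarrow> i \<le> s \<Longrightarrow> x i = A" "x (Suc s) = kap" "x (Suc (Suc s)) = G"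
    using pat2D[OF tok_K2_facts(1)[OF tx]] by auto
  have py: "y 0 = kap" "\<And>i. 1 \<le> i \<Longrightarrow> i \<le> s' \<Longrightarrow> y i = A"
    using pat2D[OF tok_K2_facts(1)[OF ty]] by auto
  have s1: "1 \<le> s" using tok_K2_facts(2)[OF tx] .
  note ox = K2_out[OF tx] and oy = K2_out[OF ty]
  have a1: "agr x y (Suc s)" unfolding agr_def
  proof (intro allI impI)
    fix i assume "i < Suc s" then show "x i = y i" using px(1) px(2)[of i] py(1) py(2)[of i] ss by (cases i) auto
  qed
  have yA: "y (Suc s) = A" using py(2)[of "Suc s"] ss by simp
  have ne1: "x (Suc s) \<noteq> y (Suc s)" using px(3) yA d_kA by simp
  have T1: "TT R x y \<le> enat (Suc (Suc s) + 0)"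
    by (rule UBj[OF a1 ne1 wR]) (use goodD(6)[OF gR] px(3,4) in auto)
  have T2: "enat (Suc s) \<le> TT R x y" using LB1[OF a1] .
  have a2: "agr (gg x) (gg y) s" unfolding agr_def
  proof (intro allI impI)
    fix i assume "i < s" then show "gg x i = gg y i" using ox(1) ox(2)[of i] oy(1) oy(2)[of i] ss by (cases i) auto
  qed
  have gy: "gg y s = A" using oy(2)[of s] s1 ss by simp
  have ne2: "gg x s \<noteq> gg y s" using ox(3) gy d_kA by simp
  have T3: "TT R' (gg x) (gg y) \<le> enat (Suc s + 0)"
    by (rule UBj[OF a2 ne2 wR']) (use goodD(6)[OF gR'] ox(3,4) in auto)
  have T4: "enat s \<le> TT R' (gg x) (gg y)" using LB1[OF a2] .
  show ?thesis by (rule PP_intro[OF T1 T2 T3 T4]) auto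
qed

lemma c23:
  assumes tx: "tok x = TK2 s" and ty: "tok y = TK3"
  shows "PP x y"
proof -
  have px: "x 0 = kap" "\<And>i. 1 \<le> i \<Longrightarrow> i \<le> s \<Longrightarrow> x i = A" "x (Suc s) = kap" "x (Suc (Suc s)) = G"
    using pat2D[OF tok_K2_facts(1)[OF tx]] by auto
  have py: "y 0 = kap" "y (Suc 0) = kap" using pat2D[OF tok_K3_facts[OF ty]] by auto
  have s1: "1 \<le> s" using tok_K2_facts(2)[OF tx] .
  have a1: "agr x y 1" using px(1) py(1) unfolding agr_def by simp
  have ne1: "x 1 \<noteq> y 1" using px(2)[of 1] s1 py(2) d_kA by simp
  have "TT R x y \<le> enat (min (Suc (Suc s)) (1 + 2))"
    by (rule KOUB[OF gR px(2-4) a1 ne1]) (auto)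
  then have T1: "TT R x y \<le> enat 3" by (rule enle) simp
  have "TT R' (gg x) (gg y) \<le> enat 0"
  proof (rule UB0z)
    show "gg x 0 \<noteq> gg y 0" using K2_out(1)[OF tx] K3_out(1)[OF ty] d_tk by simp
    show "R' (gg x 0) (gg y 0) = Exit" using K2_out(1)[OF tx] K3_out(1)[OF ty] by (intro R'_rem) simp
  qed
  then show ?thesis using T1 by (intro PP_small) auto
qed

lemma c2Itau:
  assumes yo: "y \<in> Om" and tx: "tok x = TK2 s" and ty: "tok y = TKI" and y0: "y 0 = tau"
  shows "PP x y"
proof -
  have px: "x 0 = kap" using pat2D[OF tok_K2_facts(1)[OF tx]] by auto
  have ne: "x 0 \<noteq> y 0" using px y0 d_tk by simp
  have "R (x 0) (y 0) = St G A" using symD[OF Rtk] px y0 by simp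
  then have T1: "TT R x y \<le> enat 2" using runG_y[of R y x, OF gR yo ty y0 ne] by simp
  have "TT R' (gg x) (gg y) \<le> enat 0"
  proof (rule UB0z)
    show "gg x 0 \<noteq> gg y 0" using K2_out(1)[OF tx] tok_KI_gg(1)[OF ty] y0 d_tk by simp
    show "R' (gg x 0) (gg y 0) = Exit" using K2_out(1)[OF tx] tok_KI_gg(1)[OF ty] y0 by (intro R'_rem) simp
  qed
  then show ?thesis using T1 by (intro PP_small) auto
qed

lemma c2Io:
  assumes tx: "tok x = TK2 s" and ty: "tok y = TKI" and a: "y 0 \<noteq> kap" "y 0 \<noteq> tau" "y 0 \<notin> L"
  shows "PP x y"
proof -
  have px: "x 0 = kap" "\<And>i. 1 \<le> i \<Longrightarrow> i \<le> s \<Longrightarrow> x i = A"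
    using pat2D[OF tok_K2_facts(1)[OF tx]] by auto
  have s1: "1 \<le> s" using tok_K2_facts(2)[OF tx] .
  note ox = K2_out[OF tx]
  have "TT R x y \<le> enat 2"
    by (rule kapA_UB[of R x y "y 0", OF gR _ px(1) refl a]) (use px(2)[of 1] s1 in auto)
  moreover have "TT R' (gg x) (gg y) \<le> enat 2"
  proof (rule kapA_UB[of R' "gg x" "gg y" "y 0", OF gR' R'R ox(1) tok_KI_gg(1)[OF ty] a])
    show "gg x (Suc 0) = A \<or> gg x (Suc 0) = kap \<and> gg x (Suc (Suc 0)) = G"
    proof (cases "s = 1")
      case True then show ?thesis using ox(3) ox(4) by simp
    next
      case False then show ?thesis using ox(2)[of 1] s1 by simp
    qed
  qed
  ultimately show ?thesis by (rule PP_small) auto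
qed

lemma c2IL:
  assumes tx: "tok x = TK2 s" and ty: "tok y = TKI" and yl: "y 0 \<in> L"
  shows "PP x y"
proof -
  have px: "x 0 = kap" "\<And>i. 1 \<le> i \<Longrightarrow> i \<le> s \<Longrightarrow> x i = A" "x (Suc s) = kap"
    using pat2D[OF tok_K2_facts(1)[OF tx]] by auto
  have s1: "1 \<le> s" using tok_K2_facts(2)[OF tx] .
  note ox = K2_out[OF tx]
  have y0: "y 0 \<noteq> tau" "y 0 \<noteq> kap" using Ldist[OF yl] by auto
  have ne: "x 0 \<noteq> y 0" using px(1) y0 by simp
  have Rxy: "R (x 0) (y 0) = St B A" using symD[OF RL[OF yl]] px(1) by simp
  define t where "t = (LEAST i. y (Suc i) \<noteq> B \<or> s \<le> i)"
  have t1: "y (Suc t) \<noteq> B \<or> s \<le> t" unfolding t_def by (rule LeastI[of _ s]) simp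
  have t2: "\<And>i. i < t \<Longrightarrow> y (Suc i) = B" unfolding t_def using not_less_Least by blast
  have ts: "t \<le> s" unfolding t_def by (rule Least_le) simp
  have T2: "enat (Suc t) \<le> TT R x y"
  proof (rule LB2z[of x y R B A, OF ne Rxy])
    show "\<forall>i. 1 \<le> i \<and> i \<le> t \<longrightarrow> x i = A \<and> y i = B"
    proof (intro allI impI)
      fix i assume i: "1 \<le> i \<and> i \<le> t"
      then obtain i' where "i = Suc i'" "i' < t" by (cases i) auto
      then show "x i = A \<and> y i = B" using px(2)[of i] t2 i ts by simp
    qed
  qed
  have T1: "TT R x y \<le> enat (Suc t)"
  proof (rule UBz[of x y R t, OF ne wR])
    show "\<forall>u v. R (x 0) (y 0) = St u v \<longrightarrow> (x (Suc t), y (Suc t)) \<noteq> (v, u)"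
    proof (cases "y (Suc t) \<noteq> B")
      case True then show ?thesis using Rxy by simp
    next
      case False then have "t = s" using t1 ts by simp
      then show ?thesis using Rxy px(3) d_kA by simp
    qed
  qed
  have gx0: "gg x 0 = kap" and gy0: "gg y 0 = y 0" using ox(1) tok_KI_gg(1)[OF ty] by auto
  have gne: "gg x 0 \<noteq> gg y 0" using gx0 gy0 y0 by simp
  have R'xy: "R' (gg x 0) (gg y 0) = St B A"
  proof -
    have "R' kap (y 0) = R kap (y 0)" using y0 d_tk Ldist by (intro R'_keep) auto
    moreover have "R kap (y 0) = St B A" using symD[OF RL[OF yl]] .
    ultimately show ?thesis using gx0 gy0 by simp
  qed
  have sy: "\<And>i. gg y (Suc i) = gg (sh 1 y) i" using gg_KI_Suc[OF ty] .
  have by1: "\<forall>i<t. sh 1 y i = B" using t2 by simp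
  have T4: "enat (Suc (t - 2)) \<le> TT R' (gg x) (gg y)"
  proof (rule LB2z[of "gg x" "gg y" R' B A, OF gne R'xy])
    show "\<forall>i. 1 \<le> i \<and> i \<le> t - 2 \<longrightarrow> gg x i = A \<and> gg y i = B"
    proof (intro allI impI)
      fix i assume i: "1 \<le> i \<and> i \<le> t - 2"
      then obtain i' where i': "i = Suc i'" "i' + 2 < t" by (cases i) auto
      have h: "gg (sh 1 y) i' = B" using G2[OF by1 i'(2)] .
      have "gg y (Suc i') = B" using sy[of i'] h by (rule trans)
      moreover have "i < s" using i ts s1 by arith
      then have "gg x i = A" using ox(2)[of i] i by simp
      ultimately show "gg x i = A \<and> gg y i = B" using i'(1) by simp
    qed
  qed
  have T3: "TT R' (gg x) (gg y) \<le> enat (t + 3)"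
  proof (cases "s \<le> t + 3")
    case True
    have "TT R' (gg x) (gg y) \<le> enat (Suc (s - 1))"
    proof (rule UBz[of "gg x" "gg y" R' "s - 1", OF gne wR'])
      have "Suc (s - 1) = s" using s1 by simp
      then show "\<forall>u v. R' (gg x 0) (gg y 0) = St u v \<longrightarrow> (gg x (Suc (s - 1)), gg y (Suc (s - 1))) \<noteq> (v, u)"
        using R'xy ox(3) d_kA by simp
    qed
    then show ?thesis by (rule enle) (use True s1 in simp)
  next
    case False
    then have "y (Suc t) \<noteq> B" using t1 by simp
    then have "\<not> (\<forall>j<t + 3. gg (sh 1 y) j = B)" using block_exit[of t "sh 1 y" B] by auto
    then obtain j where j: "j < t + 3" "gg (sh 1 y) j \<noteq> B" by blast
    have "TT R' (gg x) (gg y) \<le> enat (Suc j)"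
      using UBz[of "gg x" "gg y" R' j, OF gne wR'] R'xy j(2) sy by simp
    then show ?thesis by (rule enle) (use j in simp)
  qed
  show ?thesis by (rule PP_intro[OF T1 T2 T3 T4]) auto
qed

lemma c2Ikap:
  assumes yo: "y \<in> Om" and tx: "tok x = TK2 s" and ty: "tok y = TKI" and y0: "y 0 = kap"
  shows "PP x y"
proof -
  have px: "x 0 = kap" "\<And>i. 1 \<le> i \<Longrightarrow> i \<le> s \<Longrightarrow> x i = A" "x (Suc s) = kap" "x (Suc (Suc s)) = G"
    using pat2D[OF tok_K2_facts(1)[OF tx]] by auto
  have s1: "1 \<le> s" using tok_K2_facts(2)[OF tx] .
  note ox = K2_out[OF tx]
  have np: "\<And>s. \<not> pat2 y s" using tok_KI_facts(2)[OF ty] .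
  obtain i0 where "y (Suc i0) \<noteq> A" using om_block[OF yo] d_kA by metis
  define t where "t = (LEAST i. y (Suc i) \<noteq> A)"
  have t1: "y (Suc t) \<noteq> A" unfolding t_def by (rule LeastI[of _ i0]) fact
  have t2: "\<And>i. i < t \<Longrightarrow> y (Suc i) = A" unfolding t_def using not_less_Least by blast
  have T2: "enat (Suc (min s t)) \<le> TT R x y"
  proof (rule LB1)
    show "agr x y (Suc (min s t))" unfolding agr_def
    proof (intro allI impI)
      fix i assume i: "i < Suc (min s t)"
      show "x i = y i"
      proof (cases i)
        case 0 then show ?thesis using px(1) y0 by simp
      next
        case (Suc i') then show ?thesis using px(2)[of i] t2[of i'] i by simp
      qed
    qed
  qed
  have nax: "\<not> agr x y (s + 3)"
  proof
    assume a: "agr x y (s + 3)"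
    have "pat2 y s" unfolding pat2_def
    proof (intro conjI allI impI)
      show "y 0 = kap" by (fact y0)
    next
      fix i assume "1 \<le> i \<and> i \<le> s" then show "y i = A" using a px(2)[of i] unfolding agr_def by auto
    next
      show "y (Suc s) = kap" "y (Suc (Suc s)) = G" using a px(3,4) unfolding agr_def by auto
    qed
    then show False using np by blast
  qed
  obtain q where q: "q < s + 3" "agr x y q" "x q \<noteq> y q" using first_div[OF nax] by blast
  have q1: "1 \<le> q" using q(3) px(1) y0 by (cases q) auto
  have qs: "q \<le> Suc (Suc s)" using q(1) by simp
  have ko1: "TT R x y \<le> enat (min (Suc (Suc s)) (q + 2))"
    by (rule KOUB[OF gR px(2-4) q(2,3) q1 qs])
  have T1: "TT R x y \<le> enat (min s t + 3)"
  proof (cases "s \<le> t")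
    case True
    have "TT R x y \<le> enat (Suc (Suc s))" using ko1 by (rule enle) simp
    then show ?thesis by (rule enle) (use True in simp)
  next
    case False
    have "q \<le> Suc t"
    proof (rule ccontr)
      assume "\<not> q \<le> Suc t"
      then have "x (Suc t) = y (Suc t)" using q(2) unfolding agr_def by simp
      moreover have "x (Suc t) = A" using px(2)[of "Suc t"] False by simp
      ultimately show False using t1 by simp
    qed
    then have "TT R x y \<le> enat (q + 2)" using ko1 by (rule_tac enle) auto
    then show ?thesis by (rule enle) (use \<open>q \<le> Suc t\<close> False in simp)
  qed
  have gx0: "gg x 0 = kap" and gy0: "gg y 0 = kap" using ox(1) tok_KI_gg(1)[OF ty] y0 by auto
  have sy: "\<And>i. gg y (Suc i) = gg (sh 1 y) i" using gg_KI_Suc[OF ty] .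
  have by1: "\<forall>i<t. sh 1 y i = A" using t2 by simp
  have T4: "enat (Suc (min (s - 1) (t - 2))) \<le> TT R' (gg x) (gg y)"
  proof (rule LB1)
    show "agr (gg x) (gg y) (Suc (min (s - 1) (t - 2)))" unfolding agr_def
    proof (intro allI impI)
      fix i assume i: "i < Suc (min (s - 1) (t - 2))"
      show "gg x i = gg y i"
      proof (cases i)
        case 0 then show ?thesis using gx0 gy0 by simp
      next
        case (Suc i')
        have c: "i' + 2 < t" "1 \<le> i" "i < s" using i Suc by auto
        have h: "gg (sh 1 y) i' = A" using G2[OF by1 c(1)] .
        have "gg y (Suc i') = A" using sy[of i'] h by (rule trans)
        moreover have "gg x i = A" using ox(2) c(2,3) by blast
        ultimately show ?thesis using Suc by simp
      qed
    qed
  qed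
  have nagr: "\<not> agr (gg x) (gg y) (Suc (Suc s))"
  proof
    assume a: "agr (gg x) (gg y) (Suc (Suc s))"
    have ss: "Suc (s - 1) = s" using s1 by simp
    have "(\<forall>i<s - 1. gg (sh 1 y) i = A)"
    proof (intro allI impI)
      fix i assume "i < s - 1"
      then have "gg x (Suc i) = A" using ox(2)[of "Suc i"] by simp
      then show "gg (sh 1 y) i = A" using a sy[of i] \<open>i < s - 1\<close> unfolding agr_def by simp
    qed
    moreover have "gg (sh 1 y) (s - 1) = kap" using a ox(3) sy[of "s - 1"] ss unfolding agr_def by simp
    moreover have "gg (sh 1 y) (Suc (s - 1)) = G" using a ox(4) sy[of "Suc (s - 1)"] ss unfolding agr_def by simp
    ultimately have q: "(\<forall>i<s - 1. sh 1 y i = A) \<and> sh 1 y (s - 1) = kap \<and> sh 1 y (Suc (s - 1)) = G"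
      using GQ by blast
    have "pat2 y (s - 1)" unfolding pat2_def
    proof (intro conjI allI impI)
      show "y 0 = kap" by (fact y0)
    next
      fix i assume "1 \<le> i \<and> i \<le> s - 1"
      then obtain i' where "i = Suc i'" "i' < s - 1" by (cases i) auto
      then show "y i = A" using q by simp
    next
      show "y (Suc (s - 1)) = kap" using q by simp
      show "y (Suc (Suc (s - 1))) = G" using q by simp
    qed
    then show False using np by blast
  qed
  obtain q' where q': "q' < Suc (Suc s)" "agr (gg x) (gg y) q'" "gg x q' \<noteq> gg y q'" using first_div[OF nagr] by blast
  have q1': "1 \<le> q'" using q'(3) gx0 gy0 by (cases q') auto
  have ko: "TT R' (gg x) (gg y) \<le> enat (min (Suc (Suc (s - 1))) (q' + 2))"
  proof (rule KOUB[OF gR', of "s - 1" "gg x" "gg y" q'])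
    show "\<And>i. 1 \<le> i \<Longrightarrow> i \<le> s - 1 \<Longrightarrow> gg x i = A" using ox(2) by simp
    have ss: "Suc (s - 1) = s" using s1 by simp
    show "gg x (Suc (s - 1)) = kap" "gg x (Suc (Suc (s - 1))) = G" using ox(3,4) ss by simp_all
    show "agr (gg x) (gg y) q'" "gg x q' \<noteq> gg y q'" "1 \<le> q'" by (fact q'(2), fact q'(3), fact q1')
    show "q' \<le> Suc (Suc (s - 1))" using q'(1) s1 by simp
  qed
  have T3: "TT R' (gg x) (gg y) \<le> enat (min s t + 6)"
  proof (cases "s \<le> t + 3")
    case True
    have "TT R' (gg x) (gg y) \<le> enat (Suc (Suc (s - 1)))" using ko by (rule enle) simp
    then show ?thesis by (rule enle) (use True s1 in \<open>auto simp: min_def\<close>)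
  next
    case False
    have "q' \<le> t + 3"
    proof (rule ccontr)
      assume "\<not> q' \<le> t + 3"
      then have "\<forall>j<t + 3. gg (sh 1 y) j = A"
      proof (intro allI impI)
        fix j assume "j < t + 3"
        then have "Suc j < q'" "1 \<le> Suc j" "Suc j < s" using \<open>\<not> q' \<le> t + 3\<close> False by auto
        then have "gg y (Suc j) = A" using q'(2) ox(2)[of "Suc j"] unfolding agr_def by auto
        then show "gg (sh 1 y) j = A" using sy by simp
      qed
      then have "sh 1 y t = A" by (rule block_exit)
      then show False using t1 by simp
    qed
    then have "TT R' (gg x) (gg y) \<le> enat (q' + 2)" using ko by (rule_tac enle) auto
    then show ?thesis by (rule enle) (use \<open>q' \<le> t + 3\<close> False in \<open>simp add: min_def\<close>)
  qed
  show ?thesis by (rule PP_intro[OF T1 T2 T3 T4]) auto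
qed

lemma c3Ikap:
  assumes tx: "tok x = TK3" and ty: "tok y = TKI" and y0: "y 0 = kap"
  shows "PP x y"
proof -
  have px: "x 0 = kap" "x (Suc 0) = kap" "x (Suc (Suc 0)) = G" using pat2D[OF tok_K3_facts[OF tx]] by auto
  have np: "\<not> pat2 y 0" using tok_KI_facts(2)[OF ty] by blast
  have T1: "TT R x y \<le> enat 2"
  proof (cases "y (Suc 0) = kap")
    case True
    then have "y (Suc (Suc 0)) \<noteq> G" using np y0 unfolding pat2_def by auto
    moreover have a: "agr x y 2" using px y0 True unfolding agr_def by (auto simp: less_2_cases_iff)
    ultimately have "TT R x y \<le> enat 2" using UB0[OF a] px goodD(4)[OF gR] by (simp add: numeral_2_eq_2)
    then show ?thesis .
  next
    case False
    have a: "agr x y 1" using px y0 unfolding agr_def by simp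
    have ne: "x 1 \<noteq> y 1" using px False by simp
    have "TT R x y \<le> enat (Suc 1 + 0)"
      by (rule UBj[OF a ne wR]) (use goodD(6)[OF gR] px in auto)
    then show ?thesis by (simp add: numeral_2_eq_2)
  qed
  have "TT R' (gg x) (gg y) \<le> enat 0"
  proof (rule UB0z)
    show "gg x 0 \<noteq> gg y 0" using K3_out(1)[OF tx] tok_KI_gg(1)[OF ty] y0 d_tk by simp
    show "R' (gg x 0) (gg y 0) = Exit" using K3_out(1)[OF tx] tok_KI_gg(1)[OF ty] y0 by (intro R'_rem) simp
  qed
  then show ?thesis using T1 by (intro PP_small) auto
qed

lemma c3IL:
  assumes tx: "tok x = TK3" and ty: "tok y = TKI" and yl: "y 0 \<in> L"
  shows "PP x y"
proof -
  have px: "x 0 = kap" "x (Suc 0) = kap" using pat2D[OF tok_K3_facts[OF tx]] by auto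
  have y0: "y 0 \<noteq> tau" "y 0 \<noteq> kap" using Ldist[OF yl] by auto
  have ne: "x 0 \<noteq> y 0" using px y0 by simp
  have "R (x 0) (y 0) = St B A" using symD[OF RL[OF yl]] px by simp
  then have T1: "TT R x y \<le> enat (Suc 0)" using UBz[of x y R 0, OF ne wR] px d_kA by simp
  have "TT R' (gg x) (gg y) \<le> enat 0"
  proof (rule UB0z)
    show "gg x 0 \<noteq> gg y 0" using K3_out(1)[OF tx] tok_KI_gg(1)[OF ty] y0 by simp
    show "R' (gg x 0) (gg y 0) = Exit" using K3_out(1)[OF tx] tok_KI_gg(1)[OF ty] yl by (intro R'_rem) simp
  qed
  then show ?thesis using T1 by (intro PP_small) auto
qed

lemma c3Io:
  assumes tx: "tok x = TK3" and ty: "tok y = TKI" and a: "y 0 \<noteq> kap" "y 0 \<noteq> tau" "y 0 \<notin> L"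
  shows "PP x y"
proof -
  have px: "x 0 = kap" "x (Suc 0) = kap" "x (Suc (Suc 0)) = G" using pat2D[OF tok_K3_facts[OF tx]] by auto
  note ox = K3_out[OF tx]
  have ne: "x 0 \<noteq> y 0" using px a by simp
  have T1: "TT R x y \<le> enat 2"
  proof (cases "\<exists>u. R (x 0) (y 0) = St u kap")
    case True
    then have "TT R x y \<le> enat (Suc 1)"
      using UBz[of x y R 1, OF ne wR] px d_kG by auto
    then show ?thesis by (simp add: numeral_2_eq_2)
  next
    case False
    then have "TT R x y \<le> enat (Suc 0)" using UBz[of x y R 0, OF ne wR] px by auto
    then show ?thesis by (rule enle) simp
  qed
  have gne: "gg x 0 \<noteq> gg y 0" using ox(1) tok_KI_gg(1)[OF ty] a by simp
  have vG: "\<And>u v. R' (gg x 0) (gg y 0) = St u v \<Longrightarrow> v \<noteq> G"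
  proof
    fix u v assume "R' (gg x 0) (gg y 0) = St u v" "v = G"
    then have "R tau (y 0) = St u G" using R'R ox(1) tok_KI_gg(1)[OF ty] by simp
    then show False using F5 a by blast
  qed
  have "TT R' (gg x) (gg y) \<le> enat (Suc 0)" using UBz[of "gg x" "gg y" R' 0, OF gne wR'] vG ox(2) by auto
  then show ?thesis using T1 by (intro PP_small) auto
qed

lemma c3Itau:
  assumes yo: "y \<in> Om" and tx: "tok x = TK3" and ty: "tok y = TKI" and y0: "y 0 = tau"
  shows "PP x y"
proof -
  have px: "x 0 = kap" "x (Suc 0) = kap" using pat2D[OF tok_K3_facts[OF tx]] by auto
  note ox = K3_out[OF tx]
  have ne: "x 0 \<noteq> y 0" using px y0 d_tk by simp
  have "R (x 0) (y 0) = St G A" using symD[OF Rtk] px y0 by simp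
  then have T1: "TT R x y \<le> enat (Suc 0)" using UBz[of x y R 0, OF ne wR] px d_kA by simp
  have gy0: "gg y 0 = tau" using tok_KI_gg(1)[OF ty] y0 by simp
  have sy: "\<And>i. gg y (Suc i) = gg (sh 1 y) i" using gg_KI_Suc[OF ty] .
  have a1: "agr (gg x) (gg y) 1" using ox(1) gy0 unfolding agr_def by simp
  have T3: "TT R' (gg x) (gg y) \<le> enat 2"
  proof (cases "y (Suc 0) = G")
    case False
    have "gg (sh 1 y) 0 \<noteq> G" using gg0_G False by simp
    then have ne1: "gg y 1 \<noteq> G" using sy[of 0] by simp
    then have "TT R' (gg x) (gg y) \<le> enat 1" using UB0[OF a1] ox(2) goodD(4)[OF gR'] by simp
    then show ?thesis by (rule enle) simp
  next
    case True
    then have y2: "y (Suc (Suc 0)) \<noteq> G" using KI_tau[OF yo ty y0] by simp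
    have t1: "tok (sh 1 y) = TKI" using KI_other True d_tG d_kG by simp
    have "gg (sh 1 y) 0 = G" using gg0_G True by simp
    then have g1: "gg y 1 = G" using sy[of 0] by simp
    have "gg (sh 1 (sh 1 y)) 0 \<noteq> G" using gg0_G y2 by simp
    then have g2: "gg y 2 \<noteq> G" using sy[of 1] gg_KI_Suc[OF t1, of 0] by (simp add: numeral_2_eq_2)
    have a2: "agr (gg x) (gg y) 2" using ox(1,2) gy0 g1 unfolding agr_def by (auto simp: less_2_cases_iff)
    have "TT R' (gg x) (gg y) \<le> enat 2" using UB0[OF a2] ox(3) g2 goodD(4)[OF gR'] by (simp add: numeral_2_eq_2)
    then show ?thesis .
  qed
  show ?thesis using T1 T3 by (intro PP_small) auto
qed

lemma cKI1: "y \<in> Om \<Longrightarrow> tok x = TK1 r \<Longrightarrow> tok y = TKI \<Longrightarrow> PP x y"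
proof -
  assume yo: "y \<in> Om" and tx: "tok x = TK1 r" and ty: "tok y = TKI"
  consider "y 0 = tau" | "y 0 = kap" | "y 0 \<in> L" | "y 0 \<noteq> kap" "y 0 \<noteq> tau" "y 0 \<notin> L" by blast
  then show ?thesis
  proof cases
    case 1 then show ?thesis using c1Itau[OF yo tx ty] by simp
  next
    case 2 then show ?thesis using c1Ikap[OF yo tx ty] by simp
  next
    case 3 then show ?thesis using c1IL[OF tx ty] by simp
  next
    case 4 then show ?thesis using c1Io[OF tx ty] by simp
  qed
qed

lemma cKI2: "y \<in> Om \<Longrightarrow> tok x = TK2 s \<Longrightarrow> tok y = TKI \<Longrightarrow> PP x y"
proof -
  assume yo: "y \<in> Om" and tx: "tok x = TK2 s" and ty: "tok y = TKI"
  consider "y 0 = tau" | "y 0 = kap" | "y 0 \<in> L" | "y 0 \<noteq> kap" "y 0 \<noteq> tau" "y 0 \<notin> L" by blast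
  then show ?thesis
  proof cases
    case 1 then show ?thesis using c2Itau[OF yo tx ty] by simp
  next
    case 2 then show ?thesis using c2Ikap[OF yo tx ty] by simp
  next
    case 3 then show ?thesis using c2IL[OF tx ty] by simp
  next
    case 4 then show ?thesis using c2Io[OF tx ty] by simp
  qed
qed

lemma cKI3: "y \<in> Om \<Longrightarrow> tok x = TK3 \<Longrightarrow> tok y = TKI \<Longrightarrow> PP x y"
proof -
  assume yo: "y \<in> Om" and tx: "tok x = TK3" and ty: "tok y = TKI"
  consider "y 0 = tau" | "y 0 = kap" | "y 0 \<in> L" | "y 0 \<noteq> kap" "y 0 \<noteq> tau" "y 0 \<notin> L" by blast
  then show ?thesis
  proof cases
    case 1 then show ?thesis using c3Itau[OF yo tx ty] by simp
  next
    case 2 then show ?thesis using c3Ikap[OF tx ty] by simp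
  next
    case 3 then show ?thesis using c3IL[OF tx ty] by simp
  next
    case 4 then show ?thesis using c3Io[OF tx ty] by simp
  qed
qed

lemma core_case: "x \<in> Om \<Longrightarrow> y \<in> Om \<Longrightarrow> \<not> (tok x = tok y \<and> x 0 = y 0) \<Longrightarrow> PP x y"
proof -
  assume xo: "x \<in> Om" and yo: "y \<in> Om" and nt: "\<not> (tok x = tok y \<and> x 0 = y 0)"
  show ?thesis
  proof (cases "tok x")
    case (TK1 r)
    show ?thesis
    proof (cases "tok y")
      case (TK1 r')
      have "r \<noteq> r'" using nt \<open>tok x = TK1 r\<close> TK1 tok_K1_facts(1)[of x r] tok_K1_facts(1)[of y r'] by auto
      then consider "r < r'" | "r' < r" by arith
      then show ?thesis
      proof cases
        case 1 then show ?thesis using c11[OF \<open>tok x = TK1 r\<close> TK1] by simp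
      next
        case 2 then show ?thesis using c11[OF TK1 \<open>tok x = TK1 r\<close>] PP_sym by blast
      qed
    next
      case (TK2 s') show ?thesis by (rule c12[OF \<open>tok x = TK1 r\<close> TK2])
    next
      case TK3 show ?thesis by (rule c13[OF \<open>tok x = TK1 r\<close> TK3])
    next
      case TKI show ?thesis by (rule cKI1[OF yo \<open>tok x = TK1 r\<close> TKI])
    qed
  next
    case (TK2 s)
    show ?thesis
    proof (cases "tok y")
      case (TK1 r') then show ?thesis using c12[OF TK1 \<open>tok x = TK2 s\<close>] PP_sym by blast
    next
      case (TK2 s')
      have "s \<noteq> s'" using nt \<open>tok x = TK2 s\<close> TK2 pat2D[OF tok_K2_facts(1)[of x s]] pat2D[OF tok_K2_facts(1)[of y s']]
        by auto
      then consider "s < s'" | "s' < s" by arith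
      then show ?thesis
      proof cases
        case 1 then show ?thesis using c22[OF \<open>tok x = TK2 s\<close> TK2] by simp
      next
        case 2 then show ?thesis using c22[OF TK2 \<open>tok x = TK2 s\<close>] PP_sym by blast
      qed
    next
      case TK3 show ?thesis by (rule c23[OF \<open>tok x = TK2 s\<close> TK3])
    next
      case TKI show ?thesis by (rule cKI2[OF yo \<open>tok x = TK2 s\<close> TKI])
    qed
  next
    case TK3
    show ?thesis
    proof (cases "tok y")
      case (TK1 r') then show ?thesis using c13[OF TK1 \<open>tok x = TK3\<close>] PP_sym by blast
    next
      case (TK2 s') then show ?thesis using c23[OF TK2 \<open>tok x = TK3\<close>] PP_sym by blast
    next
      case TK3
      have "x 0 = kap" "y 0 = kap" using pat2D[OF tok_K3_facts[OF \<open>tok x = TK3\<close>]] pat2D[OF tok_K3_facts[OF TK3]] by auto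
      then show ?thesis using nt \<open>tok x = TK3\<close> TK3 by simp
    next
      case TKI show ?thesis by (rule cKI3[OF yo \<open>tok x = TK3\<close> TKI])
    qed
  next
    case TKI
    show ?thesis
    proof (cases "tok y")
      case (TK1 r') then show ?thesis using cKI1[OF xo TK1 \<open>tok x = TKI\<close>] PP_sym by blast
    next
      case (TK2 s') then show ?thesis using cKI2[OF xo TK2 \<open>tok x = TKI\<close>] PP_sym by blast
    next
      case TK3 then show ?thesis using cKI3[OF xo TK3 \<open>tok x = TKI\<close>] PP_sym by blast
    next
      case TKI
      have "x 0 \<noteq> y 0" using nt \<open>tok x = TKI\<close> TKI by simp
      then show ?thesis using cII[OF xo yo \<open>tok x = TKI\<close> TKI] by simp
    qed
  qed
qed

lemma PP_ind: "agr x y n \<Longrightarrow> x n \<noteq> y n \<Longrightarrow> x \<in> Om \<Longrightarrow> y \<in> Om \<Longrightarrow> PP x y"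
proof (induction n arbitrary: x y rule: less_induct)
  case (less n)
  show ?case
  proof (cases "tok x = tok y \<and> x 0 = y 0")
    case False
    then show ?thesis using core_case less.prems by blast
  next
    case True
    define l where "l = tlen (tok x)"
    have ly: "l = tlen (tok y)" using True l_def by simp
    have a1: "agr x y l" "agr (gg x) (gg y) l" using same_tok True l_def by auto
    have ln: "l \<le> n"
    proof (rule ccontr)
      assume "\<not> l \<le> n" then have "n < l" by simp
      then show False using a1(1) less.prems(2) unfolding agr_def by blast
    qed
    have l0: "0 < l" using tlen_pos l_def by simp
    have ih: "PP (sh l x) (sh l y)"
    proof (rule less.IH[of "n - l"])
      show "n - l < n" using l0 ln by simp
      show "agr (sh l x) (sh l y) (n - l)" using less.prems(1) ln unfolding agr_def by simp
      show "sh l x (n - l) \<noteq> sh l y (n - l)" using less.prems(2) ln by simp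
      show "sh l x \<in> Om" "sh l y \<in> Om" using om_sh less.prems by auto
    qed
    have e1: "TT R x y = enat l + TT R (sh l x) (sh l y)" by (rule T_shift[OF a1(1)])
    have e2: "TT R' (gg x) (gg y) = enat l + TT R' (gg (sh l x)) (gg (sh l y))"
      using T_shift[OF a1(2), of R'] sh_gg[of x] sh_gg[of y] l_def ly by simp
    define a where "a = TT R (sh l x) (sh l y)"
    define b where "b = TT R' (gg (sh l x)) (gg (sh l y))"
    have h: "a \<le> b + 5" "b \<le> a + 5" using ih unfolding PP_def a_def b_def by auto
    have "enat l + a \<le> enat l + (b + 5)" using h(1) by (rule add_left_mono)
    moreover have "enat l + b \<le> enat l + (a + 5)" using h(2) by (rule add_left_mono)
    ultimately show ?thesis unfolding PP_def e1 e2 a_def[symmetric] b_def[symmetric]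
      by (simp add: add.assoc)
  qed
qed

lemma PP_all: "x \<in> Om \<Longrightarrow> y \<in> Om \<Longrightarrow> PP x y"
proof (cases "x = y")
  case True
  then show ?thesis unfolding PP_def by (simp add: TT_refl)
next
  case False
  assume "x \<in> Om" "y \<in> Om"
  from False obtain i where "x i \<noteq> y i" by auto
  define n where "n = (LEAST i. x i \<noteq> y i)"
  have "x n \<noteq> y n" using LeastI[of "\<lambda>i. x i \<noteq> y i", OF \<open>x i \<noteq> y i\<close>] n_def by simp
  moreover have "agr x y n" unfolding agr_def n_def using not_less_Least by blast
  ultimately show ?thesis using PP_ind \<open>x \<in> Om\<close> \<open>y \<in> Om\<close> by blast
qed

end

context core
begin

lemma tout_in: "tout t c i \<in> {kap, A, G, tau, c}"
  unfolding tout_def by (cases t) auto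

lemma gg_letters: "gg x i \<in> {kap, A, G, tau} \<union> range x"
proof (induction i arbitrary: x rule: less_induct)
  case (less i)
  show ?case
  proof (cases "i < tlen (tok x)")
    case True
    have "gg x i = tout (tok x) (x 0) i" using True by (rule gg_lt)
    moreover have "tout (tok x) (x 0) i \<in> {kap, A, G, tau, x 0}" by (rule tout_in)
    ultimately show ?thesis by auto
  next
    case False
    have e: "gg x i = gg (sh (tlen (tok x)) x) (i - tlen (tok x))"
    proof -
      have "tlen (tok x) + (i - tlen (tok x)) = i" using False by simp
      then show ?thesis using gg_ge[of x "i - tlen (tok x)"] by simp
    qed
    have "i - tlen (tok x) < i" using tlen_dec[OF False] .
    then have "gg (sh (tlen (tok x)) x) (i - tlen (tok x)) \<in> {kap, A, G, tau} \<union> range (sh (tlen (tok x)) x)"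
      by (rule less.IH)
    moreover have "range (sh (tlen (tok x)) x) \<subseteq> range x" unfolding sh_def by auto
    ultimately have "gg (sh (tlen (tok x)) x) (i - tlen (tok x)) \<in> {kap, A, G, tau} \<union> range x" by blast
    then show ?thesis by (subst e)
  qed
qed

lemma tok_last_G: "tok x \<noteq> TKI \<Longrightarrow> x (tlen (tok x) - 1) = G"
proof (cases "tok x")
  case (TK1 r) then show ?thesis using tok_K1_facts(2)[OF TK1, of r] tok_K1_facts(4)[OF TK1] by simp
next
  case (TK2 s) then show ?thesis using tok_K2_facts(1)[OF TK2] unfolding pat2_def by simp
next
  case TK3 then show ?thesis using tok_K3_facts[OF TK3] unfolding pat2_def by (simp add: numeral_3_eq_3)
qed simp

lemma gg_tail: "(\<forall>j\<ge>n. x j = kap) \<Longrightarrow> n \<le> k \<Longrightarrow> gg x k = kap"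
proof (induction k arbitrary: x n rule: less_induct)
  case (less k)
  define l where "l = tlen (tok x)"
  show ?case
  proof (cases "k < l")
    case True
    show ?thesis
    proof (cases "tok x = TKI")
      case True
      then have "k = 0" using \<open>k < l\<close> l_def by simp
      then have "x 0 = kap" using less.prems by simp
      then show ?thesis using tok_KI_gg(1)[OF True] \<open>k = 0\<close> by simp
    next
      case False
      have "x (l - 1) = G" using tok_last_G[OF False] l_def by simp
      moreover have "n \<le> l - 1" using True less.prems(2) by simp
      then have "x (l - 1) = kap" using less.prems(1) by blast
      ultimately show ?thesis using d_kG by simp
    qed
  next
    case False
    have e: "gg x k = gg (sh l x) (k - l)"
    proof -
      have "l + (k - l) = k" using False by simp
      then show ?thesis using gg_ge[of x "k - l"] l_def by simp
    qed
    have "k - l < k" using tlen_dec[of k "tok x"] False l_def by simp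
    moreover have "\<forall>j\<ge>n - l. sh l x j = kap"
    proof (intro allI impI)
      fix j assume "n - l \<le> j" then have "n \<le> l + j" by arith
      then show "sh l x j = kap" using less.prems(1) by simp
    qed
    moreover have "n - l \<le> k - l" using less.prems(2) by simp
    ultimately have "gg (sh l x) (k - l) = kap" by (rule less.IH)
    then show ?thesis by (subst e)
  qed
qed

lemma gg_Om: "x \<in> Om \<Longrightarrow> gg x \<in> Om"
proof -
  assume "x \<in> Om"
  then obtain n where n1: "\<forall>j\<ge>n. x j = kap" and n2: "\<forall>k. x k \<in> Sig N"
    unfolding Omega_def by blast
  have "gg x k \<in> Sig N" for k
  proof -
    have h: "gg x k \<in> {kap, A, G, tau} \<union> range x" by (rule gg_letters)
    show ?thesis
    proof (cases "gg x k \<in> range x")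
      case True
      then obtain j where "gg x k = x j" by blast
      then show ?thesis using n2 by simp
    next
      case False
      then have "gg x k \<in> {kap, A, G, tau}" using h by simp
      then show ?thesis using inS by auto
    qed
  qed
  moreover have "gg x k = kap" if "n \<le> k" for k using gg_tail[OF n1 that] .
  ultimately show ?thesis unfolding Omega_def by blast
qed

lemma ft11: "tok x = TK1 r \<Longrightarrow> tok y = TK1 r' \<Longrightarrow> r < r' \<Longrightarrow> gg x = gg y \<Longrightarrow> False"
proof -
  assume t: "tok x = TK1 r" "tok y = TK1 r'" "r < r'" "gg x = gg y"
  have r2: "2 \<le> r" using tok_K1_facts(4)[OF t(1)] .
  have "gg x (r - 1) = kap" using K1_out(3)[OF t(1)] .
  moreover have "gg y (r - 1) = A" using K1_out(2)[OF t(2), of "r - 1"] r2 t(3) by simp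
  ultimately show False using t(4) d_kA by simp
qed

lemma ft12: "tok x = TK1 r \<Longrightarrow> tok y = TK2 s \<Longrightarrow> gg x = gg y \<Longrightarrow> False"
proof -
  assume t: "tok x = TK1 r" "tok y = TK2 s" "gg x = gg y"
  have r2: "2 \<le> r" using tok_K1_facts(4)[OF t(1)] .
  have s1: "1 \<le> s" using tok_K2_facts(2)[OF t(2)] .
  consider "r - 1 < s" | "s < r - 1" | "r - 1 = s" by arith
  then show False
  proof cases
    case 1
    then have "gg y (r - 1) = A" using K2_out(2)[OF t(2), of "r - 1"] r2 by simp
    then show False using K1_out(3)[OF t(1)] t(3) d_kA by simp
  next
    case 2
    then have "gg x s = A" using K1_out(2)[OF t(1), of s] s1 by simp
    then show False using K2_out(3)[OF t(2)] t(3) d_kA by simp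
  next
    case 3
    then have "Suc r = Suc (Suc s)" using r2 by simp
    then show False using K1_out(5)[OF t(1)] K2_out(5)[OF t(2)] t(3) by simp
  qed
qed

lemma ft13: "tok x = TK1 r \<Longrightarrow> tok y = TK3 \<Longrightarrow> gg x = gg y \<Longrightarrow> False"
proof -
  assume t: "tok x = TK1 r" "tok y = TK3" "gg x = gg y"
  have "gg x 0 = kap" "gg y 0 = tau" using K1_out(1)[OF t(1)] K3_out(1)[OF t(2)] by auto
  then show False using t(3) d_tk by simp
qed

lemma ft1I: "tok x = TK1 r \<Longrightarrow> tok y = TKI \<Longrightarrow> gg x = gg y \<Longrightarrow> False"
proof -
  assume t: "tok x = TK1 r" "tok y = TKI" "gg x = gg y"
  have r2: "2 \<le> r" using tok_K1_facts(4)[OF t(1)] .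
  have y0: "y 0 = kap" using tok_KI_gg(1)[OF t(2)] K1_out(1)[OF t(1)] t(3) by simp
  have s: "gg (sh 1 y) i = gg x (Suc i)" for i using gg_KI_Suc[OF t(2)] t(3) by simp
  have rr: "Suc (r - 2) = r - 1" "Suc (Suc (r - 2)) = r" using r2 by arith+
  have "(\<forall>i<r - 2. gg (sh 1 y) i = A)"
  proof (intro allI impI)
    fix i assume "i < r - 2" then show "gg (sh 1 y) i = A" using s K1_out(2)[OF t(1), of "Suc i"] by simp
  qed
  moreover have "gg (sh 1 y) (r - 2) = kap" using s[of "r - 2"] K1_out(3)[OF t(1)] rr by simp
  moreover have "gg (sh 1 y) (Suc (r - 2)) = G" using s[of "Suc (r - 2)"] K1_out(4)[OF t(1)] rr by simp
  ultimately have q: "(\<forall>i<r - 2. sh 1 y i = A) \<and> sh 1 y (r - 2) = kap \<and> sh 1 y (Suc (r - 2)) = G"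
    using GQ by blast
  have "pat2 y (r - 2)" unfolding pat2_def
  proof (intro conjI allI impI)
    show "y 0 = kap" by (fact y0)
  next
    fix i assume "1 \<le> i \<and> i \<le> r - 2"
    then obtain i' where "i = Suc i'" "i' < r - 2" by (cases i) auto
    then show "y i = A" using q by simp
  next
    show "y (Suc (r - 2)) = kap" using q by simp
    show "y (Suc (Suc (r - 2))) = G" using q by simp
  qed
  then show False using tok_KI_facts(2)[OF t(2)] by blast
qed

lemma ft22: "tok x = TK2 s \<Longrightarrow> tok y = TK2 s' \<Longrightarrow> s < s' \<Longrightarrow> gg x = gg y \<Longrightarrow> False"
proof -
  assume t: "tok x = TK2 s" "tok y = TK2 s'" "s < s'" "gg x = gg y"
  have s1: "1 \<le> s" using tok_K2_facts(2)[OF t(1)] .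
  have "gg y s = A" using K2_out(2)[OF t(2), of s] s1 t(3) by simp
  then show False using K2_out(3)[OF t(1)] t(4) d_kA by simp
qed

lemma ft23: "tok x = TK2 s \<Longrightarrow> tok y = TK3 \<Longrightarrow> gg x = gg y \<Longrightarrow> False"
proof -
  assume t: "tok x = TK2 s" "tok y = TK3" "gg x = gg y"
  have "gg x 0 = kap" "gg y 0 = tau" using K2_out(1)[OF t(1)] K3_out(1)[OF t(2)] by auto
  then show False using t(3) d_tk by simp
qed

lemma ft2I: "tok x = TK2 s \<Longrightarrow> tok y = TKI \<Longrightarrow> gg x = gg y \<Longrightarrow> False"
proof -
  assume t: "tok x = TK2 s" "tok y = TKI" "gg x = gg y"
  have s1: "1 \<le> s" using tok_K2_facts(2)[OF t(1)] .
  have y0: "y 0 = kap" using tok_KI_gg(1)[OF t(2)] K2_out(1)[OF t(1)] t(3) by simp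
  have s: "gg (sh 1 y) i = gg x (Suc i)" for i using gg_KI_Suc[OF t(2)] t(3) by simp
  have "(\<forall>i<s - 1. gg (sh 1 y) i = A)"
  proof (intro allI impI)
    fix i assume "i < s - 1" then show "gg (sh 1 y) i = A" using s K2_out(2)[OF t(1), of "Suc i"] by simp
  qed
  moreover have "gg (sh 1 y) (s - 1) = kap" using s K2_out(3)[OF t(1)] s1 by simp
  moreover have "gg (sh 1 y) (Suc (s - 1)) = G" using s K2_out(4)[OF t(1)] s1 by simp
  ultimately have q: "(\<forall>i<s - 1. sh 1 y i = A) \<and> sh 1 y (s - 1) = kap \<and> sh 1 y (Suc (s - 1)) = G"
    by (rule GQ)
  have "pat2 y (s - 1)" unfolding pat2_def
  proof (intro conjI allI impI)
    show "y 0 = kap" by (fact y0)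
  next
    fix i assume "1 \<le> i \<and> i \<le> s - 1"
    then obtain i' where "i = Suc i'" "i' < s - 1" by (cases i) auto
    then show "y i = A" using q by simp
  next
    show "y (Suc (s - 1)) = kap" using q by simp
    show "y (Suc (Suc (s - 1))) = G" using q by simp
  qed
  then show False using tok_KI_facts(2)[OF t(2)] by blast
qed

lemma ft3I: "y \<in> Om \<Longrightarrow> tok x = TK3 \<Longrightarrow> tok y = TKI \<Longrightarrow> gg x = gg y \<Longrightarrow> False"
proof -
  assume y: "y \<in> Om" and t: "tok x = TK3" "tok y = TKI" "gg x = gg y"
  have y0: "y 0 = tau" using tok_KI_gg(1)[OF t(2)] K3_out(1)[OF t(1)] t(3) by simp
  have s: "gg (sh 1 y) i = gg x (Suc i)" for i using gg_KI_Suc[OF t(2)] t(3) by simp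
  have "gg (sh 1 y) 0 = G" using s K3_out(2)[OF t(1)] by simp
  then have y1: "y (Suc 0) = G" using gg0_G by simp
  have t1: "tok (sh 1 y) = TKI" using KI_other y1 d_tG d_kG by simp
  have "gg (sh 1 (sh 1 y)) 0 = G" using gg_KI_Suc[OF t1, of 0] s K3_out(3)[OF t(1)] by simp
  then have y2: "y (Suc (Suc 0)) = G" using gg0_G by simp
  have "isK1 y" using om_isK1[OF y y0 y1 y2] .
  then show False using tok_KI_facts(1)[OF t(2)] by blast
qed

lemma FT: "x \<in> Om \<Longrightarrow> y \<in> Om \<Longrightarrow> gg x = gg y \<Longrightarrow> tok x = tok y \<and> x 0 = y 0"
proof -
  assume xo: "x \<in> Om" and yo: "y \<in> Om" and e: "gg x = gg y"
  have e': "gg y = gg x" using e by simp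
  have tk: "tok x = tok y"
  proof (cases "tok x")
    case (TK1 r)
    show ?thesis
    proof (cases "tok y")
      case (TK1 r')
      have "\<not> r < r'" using ft11[OF \<open>tok x = TK1 r\<close> TK1 _ e] by blast
      moreover have "\<not> r' < r" using ft11[OF TK1 \<open>tok x = TK1 r\<close> _ e'] by blast
      ultimately show ?thesis using \<open>tok x = TK1 r\<close> TK1 by simp
    next
      case (TK2 s') then show ?thesis using ft12[OF \<open>tok x = TK1 r\<close> _ e] by simp
    next
      case TK3 then show ?thesis using ft13[OF \<open>tok x = TK1 r\<close> _ e] by simp
    next
      case TKI then show ?thesis using ft1I[OF \<open>tok x = TK1 r\<close> _ e] by simp
    qed
  next
    case (TK2 s)
    show ?thesis
    proof (cases "tok y")
      case (TK1 r') then show ?thesis using ft12[OF TK1 \<open>tok x = TK2 s\<close> e'] by simp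
    next
      case (TK2 s')
      have "\<not> s < s'" using ft22[OF \<open>tok x = TK2 s\<close> TK2 _ e] by blast
      moreover have "\<not> s' < s" using ft22[OF TK2 \<open>tok x = TK2 s\<close> _ e'] by blast
      ultimately show ?thesis using \<open>tok x = TK2 s\<close> TK2 by simp
    next
      case TK3 then show ?thesis using ft23[OF \<open>tok x = TK2 s\<close> _ e] by simp
    next
      case TKI then show ?thesis using ft2I[OF \<open>tok x = TK2 s\<close> _ e] by simp
    qed
  next
    case TK3
    show ?thesis
    proof (cases "tok y")
      case (TK1 r') then show ?thesis using ft13[OF TK1 TK3 e'] by simp
    next
      case (TK2 s') then show ?thesis using ft23[OF TK2 TK3 e'] by simp
    next
      case TK3 then show ?thesis using \<open>tok x = TK3\<close> by simp
    next
      case TKI then show ?thesis using ft3I[OF yo TK3 _ e] by simp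
    qed
  next
    case TKI
    show ?thesis
    proof (cases "tok y")
      case (TK1 r') then show ?thesis using ft1I[OF TK1 TKI e'] by simp
    next
      case (TK2 s') then show ?thesis using ft2I[OF TK2 TKI e'] by simp
    next
      case TK3 then show ?thesis using ft3I[OF xo TK3 TKI e'] by simp
    next
      case TKI then show ?thesis using \<open>tok x = TKI\<close> by simp
    qed
  qed
  have "x 0 = y 0"
  proof (cases "tok x")
    case (TK1 r)
    then have "tok y = TK1 r" using tk by simp
    then show ?thesis using tok_K1_facts(1)[OF TK1] tok_K1_facts(1)[of y r] by simp
  next
    case (TK2 s)
    then have "tok y = TK2 s" using tk by simp
    then show ?thesis using tok_K2_facts(1)[OF TK2] tok_K2_facts(1)[of y s] unfolding pat2_def by simp
  next
    case TK3
    then have "tok y = TK3" using tk by simp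
    then show ?thesis using tok_K3_facts[OF TK3] tok_K3_facts[of y] unfolding pat2_def by simp
  next
    case TKI
    then have "tok y = TKI" using tk by simp
    then show ?thesis using tok_KI_gg(1)[OF TKI] tok_KI_gg(1)[of y] e by simp
  qed
  then show ?thesis using tk by simp
qed

lemma gg_inj_aux: "x \<in> Om \<Longrightarrow> y \<in> Om \<Longrightarrow> gg x = gg y \<Longrightarrow> x i = y i"
proof (induction i arbitrary: x y rule: less_induct)
  case (less i)
  have f: "tok x = tok y \<and> x 0 = y 0" using FT less.prems by blast
  define l where "l = tlen (tok x)"
  have a: "agr x y l" using same_tok(1) f l_def by blast
  show ?case
  proof (cases "i < l")
    case True then show ?thesis using a unfolding agr_def by blast
  next
    case False
    have ly: "l = tlen (tok y)" using f l_def by simp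
    have "gg (sh l x) = gg (sh l y)" using sh_gg[of x] sh_gg[of y] l_def ly less.prems(3) by simp
    moreover have "i - l < i" using tlen_dec[of i "tok x"] False l_def by simp
    ultimately have "sh l x (i - l) = sh l y (i - l)" using less.IH om_sh less.prems(1,2) by blast
    then show ?thesis using False by simp
  qed
qed

lemma gg_inj: "inj_on gg Om"
  unfolding inj_on_def using gg_inj_aux by blast

definition Wn :: "nat \<Rightarrow> (nat \<Rightarrow> int) set" where "Wn n = {x. (\<forall>k. x k \<in> Sig N) \<and> (\<forall>k\<ge>n. x k = kap)}"

lemma Wn_Om: "Wn n \<subseteq> Om" unfolding Wn_def Omega_def by blast

lemma Wn_finite: "finite (Wn n)"
proof -
  have inj: "inj_on (\<lambda>x. map x [0..<n]) (Wn n)"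
  proof (rule inj_onI)
    fix x y assume x: "x \<in> Wn n" and y: "y \<in> Wn n" and e: "map x [0..<n] = map y [0..<n]"
    show "x = y"
    proof
      fix k show "x k = y k"
      proof (cases "k < n")
        case True
        have "map x [0..<n] ! k = map y [0..<n] ! k" using e by (simp only:)
        then show ?thesis using True by simp
      next
        case False then show ?thesis using x y unfolding Wn_def by simp
      qed
    qed
  qed
  have sub: "(\<lambda>x. map x [0..<n]) ` Wn n \<subseteq> {xs. set xs \<subseteq> Sig N \<and> length xs = n}"
    unfolding Wn_def by auto
  have "finite {xs. set xs \<subseteq> Sig N \<and> length xs = n}" by (rule finite_lists_length_eq) (simp add: Sig_def)
  then have "finite ((\<lambda>x. map x [0..<n]) ` Wn n)" using sub finite_subset by blast
  then show ?thesis using inj finite_imageD by blast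
qed

lemma gg_Wn: "x \<in> Wn n \<Longrightarrow> gg x \<in> Wn n"
proof -
  assume x: "x \<in> Wn n"
  have "gg x \<in> Om" using gg_Om Wn_Om x by blast
  then have "\<forall>k. gg x k \<in> Sig N" unfolding Omega_def by blast
  moreover have "\<forall>k\<ge>n. gg x k = kap" using gg_tail x unfolding Wn_def by blast
  ultimately show ?thesis unfolding Wn_def by blast
qed

lemma gg_bij: "bij_betw gg Om Om"
proof -
  have "gg ` Om = Om"
  proof
    show "gg ` Om \<subseteq> Om" using gg_Om by blast
    show "Om \<subseteq> gg ` Om"
    proof
      fix y assume "y \<in> Om"
      then obtain n where "\<forall>k\<ge>n. y k = kap" "\<forall>k. y k \<in> Sig N" unfolding Omega_def by blast
      then have yw: "y \<in> Wn n" unfolding Wn_def by blast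
      have "gg ` Wn n = Wn n"
      proof (rule endo_inj_surj)
        show "finite (Wn n)" by (rule Wn_finite)
        show "gg ` Wn n \<subseteq> Wn n" using gg_Wn by blast
        show "inj_on gg (Wn n)" using gg_inj Wn_Om inj_on_subset by blast
      qed
      then have "y \<in> gg ` Wn n" using yw by simp
      then show "y \<in> gg ` Om" using Wn_Om by blast
    qed
  qed
  then show ?thesis using gg_inj unfolding bij_betw_def by blast
qed

lemma core_main: "\<exists>g. bij_betw g Om Om \<and> (\<forall>x\<in>Om. \<forall>y\<in>Om.
    TT R x y \<le> TT R' (g x) (g y) + 5 \<and> TT R' (g x) (g y) \<le> TT R x y + 5)"
  using gg_bij PP_all unfolding PP_def by blast

end

lemma lab_cases:
  "(u, v) \<in> labpairs M \<Longrightarrow>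
   (u, v) = (ta M, tb M) \<or> (u, v) = (tb M, ta M) \<or> (u, v) = (ta M, tc M) \<or>
   (u, v) = (tc M, ta M) \<or> (u, v) = (tb M, tc M) \<or> (u, v) = (tc M, tb M)"
  unfolding labpairs_def by auto

lemma lab_mem:
  assumes "ta M \<noteq> tb M" "ta M \<noteq> tc M" "tb M \<noteq> tc M"
  shows "(ta M, tb M) \<in> labpairs M" "(tb M, ta M) \<in> labpairs M" "(ta M, tc M) \<in> labpairs M"
    "(tc M, ta M) \<in> labpairs M" "(tb M, tc M) \<in> labpairs M" "(tc M, tb M) \<in> labpairs M"
  using assms unfolding labpairs_def by auto

lemma Prel_simps:
  assumes "ta M \<noteq> tb M" "ta M \<noteq> tc M" "tb M \<noteq> tc M"
  shows "Prel M (ta M) (tb M) = Pab M" "Prel M (tb M) (ta M) = (Pab M)\<inverse>"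
    "Prel M (ta M) (tc M) = Pag M" "Prel M (tc M) (ta M) = (Pag M)\<inverse>"
    "Prel M (tb M) (tc M) = Pbg M" "Prel M (tc M) (tb M) = (Pbg M)\<inverse>"
  using assms by (simp_all add: Prel_def)

lemma Prel_other:
  assumes "\<not> ((u, v) = (ta M, tb M) \<or> (u, v) = (tb M, ta M) \<or> (u, v) = (ta M, tc M) \<or>
   (u, v) = (tc M, ta M) \<or> (u, v) = (tb M, tc M) \<or> (u, v) = (tc M, tb M))"
  shows "Prel M u v = {}"
proof -
  have "(u, v) \<noteq> (ta M, tb M)" "(u, v) \<noteq> (tb M, ta M)" "(u, v) \<noteq> (ta M, tc M)"
    "(u, v) \<noteq> (tc M, ta M)" "(u, v) \<noteq> (tb M, tc M)" "(u, v) \<noteq> (tc M, tb M)" using assms by blast+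
  then show ?thesis unfolding Prel_def by presburger
qed

lemma Prel_lab:
  assumes d: "ta M \<noteq> tb M" "ta M \<noteq> tc M" "tb M \<noteq> tc M" and p: "p \<in> Prel M u v"
  shows "(u, v) \<in> labpairs M"
proof -
  have "(u, v) = (ta M, tb M) \<or> (u, v) = (tb M, ta M) \<or> (u, v) = (ta M, tc M) \<or>
   (u, v) = (tc M, ta M) \<or> (u, v) = (tb M, tc M) \<or> (u, v) = (tc M, tb M)"
    using Prel_other[of u v M] p by blast
  then show ?thesis using lab_mem[OF d] by blast
qed

lemma Prel_conv:
  assumes d: "ta M \<noteq> tb M" "ta M \<noteq> tc M" "tb M \<noteq> tc M" and l: "(u, v) \<in> labpairs M"
  shows "Prel M v u = (Prel M u v)\<inverse>"
  using lab_cases[OF l]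
proof (elim disjE)
qed (simp_all add: Prel_simps[OF d])

lemma td_disj:
  assumes "triangle_automaton N M" "(a, b) \<in> Prel M u v" "(a, b) \<in> Prel M u' v'"
  shows "(u, v) = (u', v')"
proof -
  have d: "ta M \<noteq> tb M" "ta M \<noteq> tc M" "tb M \<noteq> tc M" using assms(1) unfolding triangle_automaton_def by auto
  have l: "(u, v) \<in> labpairs M" "(u', v') \<in> labpairs M" using Prel_lab[OF d] assms(2,3) by auto
  show ?thesis
  proof (rule ccontr)
    assume "(u, v) \<noteq> (u', v')"
    then have "Prel M u v \<inter> Prel M u' v' = {}" using assms(1) l unfolding triangle_automaton_def
      by (metis fst_conv snd_conv)
    then show False using assms(2,3) by blast
  qed
qed

lemma td_St_imp: "tri_delta M Id (a, b) = St u v \<Longrightarrow> (a, b) \<in> Prel M u v"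
  by (simp split: if_splits)

lemma td_notId: "a \<noteq> b \<Longrightarrow> tri_delta M Id (a, b) \<noteq> Id"
  by (simp split: if_splits)

lemma td_vals: "a \<noteq> b \<Longrightarrow> tri_delta M Id (a, b) = Exit \<or> (\<exists>u v. tri_delta M Id (a, b) = St u v)"
  using td_notId[of a b M] by (cases "tri_delta M Id (a, b)") auto

lemma td_Exit_D: "a \<noteq> b \<Longrightarrow> tri_delta M Id (a, b) = Exit \<Longrightarrow>
  (a, b) \<notin> Prel M (ta M) (tb M) \<and> (a, b) \<notin> Prel M (tb M) (ta M) \<and> (a, b) \<notin> Prel M (ta M) (tc M) \<and>
  (a, b) \<notin> Prel M (tc M) (ta M) \<and> (a, b) \<notin> Prel M (tb M) (tc M) \<and> (a, b) \<notin> Prel M (tc M) (tb M)"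
  by (simp split: if_splits)

lemma td_St:
  assumes t: "triangle_automaton N M" and ab: "a \<noteq> b" and m: "(a, b) \<in> Prel M u v"
  shows "tri_delta M Id (a, b) = St u v"
proof -
  have d: "ta M \<noteq> tb M" "ta M \<noteq> tc M" "tb M \<noteq> tc M" using t unfolding triangle_automaton_def by auto
  have "tri_delta M Id (a, b) \<noteq> Exit"
  proof
    assume e: "tri_delta M Id (a, b) = Exit"
    have l: "(u, v) \<in> labpairs M" using Prel_lab[OF d m] .
    have n: "(a, b) \<notin> Prel M (ta M) (tb M)" "(a, b) \<notin> Prel M (tb M) (ta M)" "(a, b) \<notin> Prel M (ta M) (tc M)"
      "(a, b) \<notin> Prel M (tc M) (ta M)" "(a, b) \<notin> Prel M (tb M) (tc M)" "(a, b) \<notin> Prel M (tc M) (tb M)"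
      using td_Exit_D[OF ab e] by auto
    from lab_cases[OF l] show False
    proof (elim disjE)
    qed (use n m in auto)
  qed
  then obtain u' v' where e: "tri_delta M Id (a, b) = St u' v'" using td_vals[OF ab] by blast
  then have "(a, b) \<in> Prel M u' v'" by (rule td_St_imp)
  then have "(u, v) = (u', v')" using td_disj[OF t m] by blast
  then show ?thesis using e by simp
qed

lemma td_Exit:
  assumes "a \<noteq> b" "\<And>u v. (a, b) \<notin> Prel M u v"
  shows "tri_delta M Id (a, b) = Exit"
proof -
  have "\<not> (\<exists>u v. tri_delta M Id (a, b) = St u v)" using td_St_imp assms(2) by blast
  then show ?thesis using td_vals[OF assms(1)] by blast
qed

lemma td_sym:
  assumes t: "triangle_automaton N M"
  shows "symR (\<lambda>a b. tri_delta M Id (a, b))"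
  unfolding symR_def
proof (intro allI impI)
  fix a b :: int assume ab: "a \<noteq> b"
  have d: "ta M \<noteq> tb M" "ta M \<noteq> tc M" "tb M \<noteq> tc M" using t unfolding triangle_automaton_def by auto
  show "tri_delta M Id (b, a) = swp (tri_delta M Id (a, b))"
  proof (cases "tri_delta M Id (a, b)")
    case (St u v)
    then have "(a, b) \<in> Prel M u v" by (rule td_St_imp)
    then have "(b, a) \<in> Prel M v u" using Prel_conv[OF d Prel_lab[OF d \<open>(a, b) \<in> Prel M u v\<close>]] by auto
    then show ?thesis using td_St[OF t] ab St by simp
  next
    case Exit
    have "\<And>u v. (b, a) \<notin> Prel M u v"
    proof
      fix u v assume "(b, a) \<in> Prel M u v"
      then have "(a, b) \<in> Prel M v u" using Prel_conv[OF d Prel_lab[OF d \<open>(b, a) \<in> Prel M u v\<close>]] by auto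
      then show False using td_St[OF t] ab Exit by simp
    qed
    then show ?thesis using td_Exit ab Exit by simp
  next
    case Id then show ?thesis using td_notId[OF ab, of M] by simp
  qed
qed

locale ictx =
  fixes N :: nat and M M' :: tri and tau kap A B :: int
  assumes gas: "gasket_automaton N M" and gi: "gamma_isolated N M"
    and AB: "(A, B) = (ta M, tb M) \<or> (A, B) = (tb M, ta M)"
    and tk: "(tau, kap) \<in> Prel M A (tc M)" and dm: "double_maximal M kap"
    and M'l: "ta M' = ta M" "tb M' = tb M" "tc M' = tc M"
    and M'P: "\<And>u v. Prel M' u v = Prel M u v - ({(tau, kap), (kap, tau)} \<union> {(tau, l) |l. (l, kap) \<in> Prel M A B}
        \<union> {(l, tau) |l. (l, kap) \<in> Prel M A B})"
begin

abbreviation "al \<equiv> ta M"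
abbreviation "be \<equiv> tb M"
abbreviation "ga \<equiv> tc M"
definition "LL = {l. (l, kap) \<in> Prel M A B}"

lemma tri: "triangle_automaton N M" using gas unfolding gasket_automaton_def by blast
lemma dis: "al \<noteq> be" "al \<noteq> ga" "be \<noteq> ga" using tri unfolding triangle_automaton_def by auto
lemma inSig: "al \<in> Sig N" "be \<in> Sig N" "ga \<in> Sig N" using gi unfolding gamma_isolated_def by auto

lemma uniq: "(u, v) \<in> labpairs M \<Longrightarrow> (i, j) \<in> Prel M u v \<Longrightarrow> (i, j') \<in> Prel M u v \<Longrightarrow> j = j'"
  using gas unfolding gasket_automaton_def by blast

lemma irr: "(i, i) \<notin> Prel M u v"
proof
  assume h: "(i, i) \<in> Prel M u v"
  then have "(u, v) \<in> labpairs M" using Prel_lab[OF dis] by blast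
  then show False using tri h unfolding triangle_automaton_def by (metis fst_conv snd_conv)
qed

lemma AB_dist: "A \<noteq> B" "A \<noteq> ga" "B \<noteq> ga" using AB dis by auto

lemma labs: "(A, ga) \<in> labpairs M" "(ga, A) \<in> labpairs M" "(B, ga) \<in> labpairs M" "(ga, B) \<in> labpairs M"
  "(A, B) \<in> labpairs M" "(B, A) \<in> labpairs M"
  using AB lab_mem[OF dis] by auto

lemma conv: "(u, v) \<in> labpairs M \<Longrightarrow> (a, b) \<in> Prel M u v \<longleftrightarrow> (b, a) \<in> Prel M v u"
  using Prel_conv[OF dis] by auto

lemma gath_raw: "\<And>a b c. ((a, c) \<in> Pag M \<and> (a, b) \<in> Pbg M \<longrightarrow> (b, c) \<in> Pab M) \<and>
   ((a, c) \<in> Pag M \<and> (b, c) \<in> Pab M \<longrightarrow> (a, b) \<in> Pbg M) \<and> ((a, b) \<in> Pbg M \<and> (b, c) \<in> Pab M \<longrightarrow> (a, c) \<in> Pag M)"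
proof -
  fix a b c
  have "\<forall>a b c. let X = ((a, c) \<in> Pag M); Y = ((a, b) \<in> Pbg M); Z = ((b, c) \<in> Pab M) in
        (X \<and> Y \<longrightarrow> Z) \<and> (X \<and> Z \<longrightarrow> Y) \<and> (Y \<and> Z \<longrightarrow> X)" using gas unfolding gasket_automaton_def by blast
  then have "let X = ((a, c) \<in> Pag M); Y = ((a, b) \<in> Pbg M); Z = ((b, c) \<in> Pab M) in
        (X \<and> Y \<longrightarrow> Z) \<and> (X \<and> Z \<longrightarrow> Y) \<and> (Y \<and> Z \<longrightarrow> X)" by blast
  then show "?thesis a b c" unfolding Let_def .
qed

lemma gath1: "(a, c) \<in> Prel M A ga \<Longrightarrow> (a, b) \<in> Prel M B ga \<Longrightarrow> (b, c) \<in> Prel M A B"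
proof -
  assume h: "(a, c) \<in> Prel M A ga" "(a, b) \<in> Prel M B ga"
  note ps = Prel_simps[OF dis]
  from AB show ?thesis
  proof
    assume "(A, B) = (al, be)"
    then have e: "A = al" "B = be" by auto
    have "(a, c) \<in> Pag M" "(a, b) \<in> Pbg M" using h e ps by auto
    then have "(b, c) \<in> Pab M" using gath_raw[of a c b] by blast
    then show ?thesis using e ps by auto
  next
    assume "(A, B) = (be, al)"
    then have e: "A = be" "B = al" by auto
    have "(a, c) \<in> Pbg M" "(a, b) \<in> Pag M" using h e ps by auto
    then have "(c, b) \<in> Pab M" using gath_raw[of a b c] by blast
    then show ?thesis using e ps by auto
  qed
qed

lemma gath2: "(a, c) \<in> Prel M A ga \<Longrightarrow> (b, c) \<in> Prel M A B \<Longrightarrow> (a, b) \<in> Prel M B ga"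
proof -
  assume h: "(a, c) \<in> Prel M A ga" "(b, c) \<in> Prel M A B"
  note ps = Prel_simps[OF dis]
  from AB show ?thesis
  proof
    assume "(A, B) = (al, be)"
    then have e: "A = al" "B = be" by auto
    have "(a, c) \<in> Pag M" "(b, c) \<in> Pab M" using h e ps by auto
    then have "(a, b) \<in> Pbg M" using gath_raw[of a c b] by blast
    then show ?thesis using e ps by auto
  next
    assume "(A, B) = (be, al)"
    then have e: "A = be" "B = al" by auto
    have "(a, c) \<in> Pbg M" "(c, b) \<in> Pab M" using h e ps by auto
    then have "(a, b) \<in> Pag M" using gath_raw[of a b c] by blast
    then show ?thesis using e ps by auto
  qed
qed

lemma Amin: "(i, A) \<notin> Prel M A ga" "(i, A) \<notin> Prel M A B"
proof -
  have bd: "uv_minimal M al ga al" "uv_minimal M al be al" "uv_minimal M be ga be" "uv_minimal M be al be"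
    using gas inSig unfolding gasket_automaton_def by auto
  from AB show "(i, A) \<notin> Prel M A ga" "(i, A) \<notin> Prel M A B"
    using bd unfolding uv_minimal_def by auto
qed

lemma giso: "(u, v) \<in> labpairs M \<Longrightarrow> (ga, i) \<notin> Prel M u v \<and> (i, ga) \<notin> Prel M u v"
proof -
  assume l: "(u, v) \<in> labpairs M"
  have iso: "uv_isolated M al ga ga" "uv_isolated M be ga ga" "uv_isolated M al be ga"
    using gi unfolding gamma_isolated_def by auto
  then have f: "(ga, i) \<notin> Pag M" "(i, ga) \<notin> Pag M" "(ga, i) \<notin> Pbg M" "(i, ga) \<notin> Pbg M"
     "(ga, i) \<notin> Pab M" "(i, ga) \<notin> Pab M"
    unfolding uv_isolated_def uv_minimal_def uv_maximal_def using Prel_simps[OF dis] by auto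
  from lab_cases[OF l] show ?thesis
  proof (elim disjE)
  qed (use f in \<open>simp_all add: Prel_simps[OF dis]\<close>)
qed

lemma kmax: "(kap, k) \<notin> Prel M al ga" "(kap, k) \<notin> Prel M be ga"
  using dm unfolding double_maximal_def uv_maximal_def by auto

lemma sub_Sig: "(u, v) \<in> labpairs M \<Longrightarrow> Prel M u v \<subseteq> Sig N \<times> Sig N"
proof -
  assume l: "(u, v) \<in> labpairs M"
  have s: "Pab M \<subseteq> Sig N \<times> Sig N" "Pag M \<subseteq> Sig N \<times> Sig N" "Pbg M \<subseteq> Sig N \<times> Sig N"
    using tri unfolding triangle_automaton_def by auto
  from lab_cases[OF l] show ?thesis
  proof (elim disjE)
  qed (use s in \<open>auto simp: Prel_simps[OF dis]\<close>)
qed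

abbreviation "RR \<equiv> (\<lambda>a b. tri_delta M Id (a, b))"
abbreviation "RR' \<equiv> (\<lambda>a b. tri_delta M' Id (a, b))"

lemma St_lab: "tri_delta M Id (a, b) = St u v \<Longrightarrow> (u, v) \<in> labpairs M \<and> (a, b) \<in> Prel M u v"
  using td_St_imp Prel_lab[OF dis] by blast

lemma lab_G: "(u, ga) \<in> labpairs M \<Longrightarrow> u = A \<or> u = B"
  using AB unfolding labpairs_def by auto
lemma lab_A: "(A, w) \<in> labpairs M \<Longrightarrow> w = B \<or> w = ga"
  using AB unfolding labpairs_def by auto
lemma lab_A2: "(u, A) \<in> labpairs M \<Longrightarrow> u = B \<or> u = ga"
  using AB unfolding labpairs_def by auto

lemma tk_ne: "tau \<noteq> kap" using tk irr by blast
lemma kA: "kap \<noteq> A" using tk Amin(1) by blast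
lemma tG: "tau \<noteq> ga" using tk giso[OF labs(1)] by blast
lemma kG: "kap \<noteq> ga" using tk giso[OF labs(1)] by blast

lemma Lfacts: "l \<in> LL \<Longrightarrow> l \<noteq> tau \<and> l \<noteq> kap"
proof -
  assume "l \<in> LL"
  then have h: "(l, kap) \<in> Prel M A B" unfolding LL_def by simp
  have "l \<noteq> tau"
  proof
    assume "l = tau"
    then have "(tau, kap) \<in> Prel M A B" using h by simp
    then have "(A, ga) = (A, B)" by (rule td_disj[OF tri tk])
    then show False using AB_dist by simp
  qed
  moreover have "l \<noteq> kap" using h irr by blast
  ultimately show "l \<noteq> tau \<and> l \<noteq> kap" by simp
qed

lemma c_iso: "b \<noteq> ga \<Longrightarrow> RR ga b = Exit"
proof -
  assume "b \<noteq> ga"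
  have "\<And>u v. (ga, b) \<notin> Prel M u v"
  proof
    fix u v assume h: "(ga, b) \<in> Prel M u v"
    then have "(u, v) \<in> labpairs M" by (rule Prel_lab[OF dis])
    then have "(ga, b) \<notin> Prel M u v" using giso by blast
    then show False using h by simp
  qed
  then show "RR ga b = Exit" using td_Exit[of ga b M] \<open>b \<noteq> ga\<close> by simp
qed

lemma c_F3: "RR kap b = St u v \<Longrightarrow> v \<noteq> ga"
proof
  assume h: "RR kap b = St u v" "v = ga"
  then have l: "(u, ga) \<in> labpairs M" "(kap, b) \<in> Prel M u ga" using St_lab by auto
  have "u = al \<or> u = be" using l(1) unfolding labpairs_def by auto
  then show False using l(2) kmax by auto
qed

lemma c_F4: "RR a kap = St A w \<Longrightarrow> a = tau \<or> a \<in> LL"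
proof -
  assume h: "RR a kap = St A w"
  then have l: "(A, w) \<in> labpairs M" "(a, kap) \<in> Prel M A w" using St_lab by auto
  from lab_A[OF l(1)] show "a = tau \<or> a \<in> LL"
  proof
    assume "w = B" then show ?thesis using l(2) unfolding LL_def by simp
  next
    assume "w = ga"
    then have "(kap, a) \<in> Prel M ga A" "(kap, tau) \<in> Prel M ga A" using l(2) tk conv[OF labs(1)] by auto
    then show ?thesis using uniq[OF labs(2)] by blast
  qed
qed

lemma c_F5: "RR tau b = St u ga \<Longrightarrow> b = kap \<or> b \<in> LL"
proof -
  assume h: "RR tau b = St u ga"
  then have l: "(u, ga) \<in> labpairs M" "(tau, b) \<in> Prel M u ga" using St_lab by auto
  from lab_G[OF l(1)] show "b = kap \<or> b \<in> LL"
  proof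
    assume "u = A" then show ?thesis using l(2) tk uniq[OF labs(1)] by blast
  next
    assume "u = B" then have "(b, kap) \<in> Prel M A B" using gath1 tk l(2) by blast
    then show ?thesis unfolding LL_def by simp
  qed
qed

lemma c_F6: "RR A b = St u v \<Longrightarrow> v \<noteq> A"
proof
  assume h: "RR A b = St u v" "v = A"
  then have l: "(u, A) \<in> labpairs M" "(A, b) \<in> Prel M u A" using St_lab by auto
  have "(b, A) \<in> Prel M A u" using conv[OF l(1)] l(2) by blast
  then show False using lab_A2[OF l(1)] Amin by blast
qed

lemma c_RL2: "l \<in> LL \<Longrightarrow> RR tau l = St B ga"
proof -
  assume "l \<in> LL"
  then have "(tau, l) \<in> Prel M B ga" using gath2 tk unfolding LL_def by blast
  moreover have "tau \<noteq> l" using Lfacts[OF \<open>l \<in> LL\<close>] by simp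
  ultimately show "RR tau l = St B ga" using td_St[OF tri] by simp
qed

lemma c_RL: "l \<in> LL \<Longrightarrow> RR l kap = St A B"
proof -
  assume "l \<in> LL"
  then have "(l, kap) \<in> Prel M A B" unfolding LL_def by simp
  moreover have "l \<noteq> kap" using Lfacts[OF \<open>l \<in> LL\<close>] by simp
  ultimately show ?thesis using td_St[OF tri] by simp
qed

lemma c_R'eq: "RR' a b = (if a = tau \<and> b = kap \<or> a = kap \<and> b = tau \<or> a = tau \<and> b \<in> LL \<or> a \<in> LL \<and> b = tau
        then Exit else RR a b)"
proof -
  let ?rem = "a = tau \<and> b = kap \<or> a = kap \<and> b = tau \<or> a = tau \<and> b \<in> LL \<or> a \<in> LL \<and> b = tau"
  define Rs where "Rs = {(tau, kap), (kap, tau)} \<union> {(tau, l) |l. (l, kap) \<in> Prel M A B}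
        \<union> {(l, tau) |l. (l, kap) \<in> Prel M A B}"
  have P': "\<And>u v. Prel M' u v = Prel M u v - Rs" using M'P Rs_def by simp
  have remRs: "?rem \<longleftrightarrow> (a, b) \<in> Rs" unfolding Rs_def LL_def by auto
  show ?thesis
  proof (cases "a = b")
    case True
    have "\<not> ?rem" using True tk_ne Lfacts by auto
    then show ?thesis using True by simp
  next
    case ab: False
    show ?thesis
    proof (cases ?rem)
      case True
      then have "(a, b) \<in> Rs" using remRs by simp
      then have "\<And>u v. (a, b) \<notin> Prel M' u v" using P' by simp
      then have "RR' a b = Exit" using td_Exit[of a b M'] ab by simp
      then show ?thesis using True by simp
    next
      case False
      then have nr: "(a, b) \<notin> Rs" using remRs by simp
      have eq: "\<And>u v. (a, b) \<in> Prel M' u v \<longleftrightarrow> (a, b) \<in> Prel M u v" using P' nr by simp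
      have "RR' a b = RR a b"
      proof (cases "RR' a b")
        case (St u v)
        then have "(a, b) \<in> Prel M u v" using td_St_imp[of M' a b u v] eq by simp
        then have "RR a b = St u v" using td_St[OF tri ab] by simp
        then show ?thesis using St by simp
      next
        case Exit
        have n: "(a, b) \<notin> Prel M' (ta M') (tb M') \<and> (a, b) \<notin> Prel M' (tb M') (ta M') \<and> (a, b) \<notin> Prel M' (ta M') (tc M') \<and>
          (a, b) \<notin> Prel M' (tc M') (ta M') \<and> (a, b) \<notin> Prel M' (tb M') (tc M') \<and> (a, b) \<notin> Prel M' (tc M') (tb M')"
          using td_Exit_D[OF ab Exit] .
        have "\<not> (\<exists>u v. RR a b = St u v)"
        proof
          assume "\<exists>u v. RR a b = St u v"
          then obtain u v where "RR a b = St u v" by blast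
          then have l: "(u, v) \<in> labpairs M" "(a, b) \<in> Prel M u v" using St_lab by auto
          then have m': "(a, b) \<in> Prel M' u v" using eq by simp
          from lab_cases[OF l(1)] show False
          proof (elim disjE)
          qed (use n m' M'l in auto)
        qed
        then have "RR a b = Exit" using td_vals[OF ab, of M] by blast
        then show ?thesis using Exit by simp
      next
        case Id then show ?thesis using td_notId[OF ab, of M'] by simp
      qed
      moreover have "(if ?rem then Exit else RR a b) = RR a b" using False by (rule if_not_P)
      ultimately show ?thesis by simp
    qed
  qed
qed

lemma c_wf: "wfR RR"
  unfolding wfR_def
proof (intro allI impI)
  fix a b :: int assume "a \<noteq> b" then show "RR a b \<noteq> Id" by (rule td_notId)
qed

lemma c_uv: "RR a b = St u v \<Longrightarrow> u \<noteq> v"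
proof -
  assume "RR a b = St u v"
  then have "(u, v) \<in> labpairs M" using St_lab by blast
  then show "u \<noteq> v" unfolding labpairs_def by simp
qed

lemma is_core: "core tau kap A ga RR RR' B LL N"
proof (unfold_locales)
  show "tau \<noteq> kap" "kap \<noteq> A" "tau \<noteq> ga" "kap \<noteq> ga" "A \<noteq> ga" "A \<noteq> B" "B \<noteq> ga"
    by (fact tk_ne, fact kA, fact tG, fact kG, fact AB_dist(2), fact AB_dist(1), fact AB_dist(3))
  show "wfR RR" by (rule c_wf)
  show "symR RR" using td_sym[OF tri] .
  show "\<And>a. RR a a = Id" by simp
  show "\<And>a b u v. RR a b = St u v \<Longrightarrow> u \<noteq> v" by (rule c_uv)
  show "\<And>b. b \<noteq> ga \<Longrightarrow> RR ga b = Exit" by (rule c_iso)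
  show "\<And>b u v. RR kap b = St u v \<Longrightarrow> v \<noteq> ga" by (rule c_F3)
  show "\<And>a w. RR a kap = St A w \<Longrightarrow> a = tau \<or> a \<in> LL" by (rule c_F4)
  show "\<And>b u. RR tau b = St u ga \<Longrightarrow> b = kap \<or> b \<in> LL" by (rule c_F5)
  show "\<And>b u v. RR A b = St u v \<Longrightarrow> v \<noteq> A" by (rule c_F6)
  show "RR tau kap = St A ga" using td_St[OF tri tk_ne tk] .
  show "\<And>l. l \<in> LL \<Longrightarrow> RR l kap = St A B" by (rule c_RL)
  show "\<And>l. l \<in> LL \<Longrightarrow> RR tau l = St B ga" by (rule c_RL2)
  show "\<And>l. l \<in> LL \<Longrightarrow> l \<noteq> tau \<and> l \<noteq> kap" by (rule Lfacts)
  have "(tau, kap) \<in> Sig N \<times> Sig N" using sub_Sig[OF labs(1)] tk by blast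
  then show "tau \<in> Sig N" "kap \<in> Sig N" by auto
  show "A \<in> Sig N" using AB inSig by auto
  show "ga \<in> Sig N" by (fact inSig(3))
  show "\<And>a b. RR' a b = (if a = tau \<and> b = kap \<or> a = kap \<and> b = tau \<or> a = tau \<and> b \<in> LL \<or> a \<in> LL \<and> b = tau
        then Exit else RR a b)" by (rule c_R'eq)
qed

end


lemma T_M_eq: "T_M M = TT (\<lambda>a b. tri_delta M Id (a, b))"
  unfolding T_M_def by (subst tri_delta_sd) (rule refl)

lemma home:
  assumes "triangle_automaton N M" "p \<in> Prel M u0 v0" "(u, v) \<noteq> (u0, v0)"
  shows "p \<notin> Prel M u v"
  using td_disj[OF assms(1)] assms(2,3) by (metis prod.collapse)

lemma M'P_base:
  assumes d: "ta M \<noteq> tb M" "ta M \<noteq> tc M" "tb M \<noteq> tc M"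
    and l: "ta M' = ta M" "tb M' = tb M" "tc M' = tc M"
    and s: "Rs\<inverse> = Rs"
    and b: "Pab M' = Pab M - Rs" "Pag M' = Pag M - Rs" "Pbg M' = Pbg M - Rs"
  shows "Prel M' u v = Prel M u v - Rs"
proof -
  have d': "ta M' \<noteq> tb M'" "ta M' \<noteq> tc M'" "tb M' \<noteq> tc M'" using d l by auto
  have c: "\<And>X. (X - Rs)\<inverse> = X\<inverse> - Rs" using s by auto
  show ?thesis
  proof (cases "(u, v) = (ta M, tb M) \<or> (u, v) = (tb M, ta M) \<or> (u, v) = (ta M, tc M) \<or>
   (u, v) = (tc M, ta M) \<or> (u, v) = (tb M, tc M) \<or> (u, v) = (tc M, tb M)")
    case True
    then show ?thesis
    proof (elim disjE)
    qed (use Prel_simps[OF d] Prel_simps[OF d'] l b c in simp_all)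
  next
    case False
    then have "Prel M u v = {}" by (rule Prel_other)
    moreover have "Prel M' u v = {}" using False l by (intro Prel_other) simp
    ultimately show ?thesis by simp
  qed
qed

lemma gath_gas:
  assumes "gasket_automaton N M"
  shows "((a, c) \<in> Pag M \<and> (a, b) \<in> Pbg M \<longrightarrow> (b, c) \<in> Pab M) \<and>
   ((a, c) \<in> Pag M \<and> (b, c) \<in> Pab M \<longrightarrow> (a, b) \<in> Pbg M) \<and> ((a, b) \<in> Pbg M \<and> (b, c) \<in> Pab M \<longrightarrow> (a, c) \<in> Pag M)"
proof -
  have "\<forall>a b c. let X = ((a, c) \<in> Pag M); Y = ((a, b) \<in> Pbg M); Z = ((b, c) \<in> Pab M) in
        (X \<and> Y \<longrightarrow> Z) \<and> (X \<and> Z \<longrightarrow> Y) \<and> (Y \<and> Z \<longrightarrow> X)" using assms unfolding gasket_automaton_def by blast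
  then have "let X = ((a, c) \<in> Pag M); Y = ((a, b) \<in> Pbg M); Z = ((b, c) \<in> Pab M) in
        (X \<and> Y \<longrightarrow> Z) \<and> (X \<and> Z \<longrightarrow> Y) \<and> (Y \<and> Z \<longrightarrow> X)" by blast
  then show ?thesis unfolding Let_def .
qed

lemma case_ag:
  assumes gas: "gasket_automaton N M" and os: "one_step_simplification M \<tau> \<kappa> M'" and True: "(\<tau>, \<kappa>) \<in> Pag M"
  shows "ta M' = ta M \<and> tb M' = tb M \<and> tc M' = tc M \<and>
    (\<forall>u v. Prel M' u v = Prel M u v - ({(\<tau>, \<kappa>), (\<kappa>, \<tau>)} \<union> {(\<tau>, l) |l. (l, \<kappa>) \<in> Prel M (ta M) (tb M)}
        \<union> {(l, \<tau>) |l. (l, \<kappa>) \<in> Prel M (ta M) (tb M)}))"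
proof -
  have tri: "triangle_automaton N M" using gas unfolding gasket_automaton_def by blast
  have d: "ta M \<noteq> tb M" "ta M \<noteq> tc M" "tb M \<noteq> tc M" using tri unfolding triangle_automaton_def by auto
  note ps = Prel_simps[OF d]
  note lm = lab_mem[OF d]
  have uq0: "\<forall>(u, v)\<in>labpairs M. \<forall>i j j'. (i, j) \<in> Prel M u v \<longrightarrow> (i, j') \<in> Prel M u v \<longrightarrow> j = j'"
    using conjunct1[OF conjunct2[OF gas[unfolded gasket_automaton_def]]] .
  have uq: "\<And>u v i j j'. (u, v) \<in> labpairs M \<Longrightarrow> (i, j) \<in> Prel M u v \<Longrightarrow> (i, j') \<in> Prel M u v \<Longrightarrow> j = j'"
    using uq0 by fast
  have hm: "\<And>p u0 v0 u v. p \<in> Prel M u0 v0 \<Longrightarrow> (u, v) \<noteq> (u0, v0) \<Longrightarrow> p \<notin> Prel M u v"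
    using home[OF tri] by blast
  have cv: "\<And>a b u v. (u, v) \<in> labpairs M \<Longrightarrow> (a, b) \<in> Prel M u v \<Longrightarrow> (b, a) \<in> Prel M v u"
    using Prel_conv[OF d] by blast
  have ne: "(ta M, tb M) \<noteq> (ta M, tc M)" "(tb M, tc M) \<noteq> (ta M, tc M)" "(ta M, tb M) \<noteq> (tc M, ta M)"
     "(ta M, tc M) \<noteq> (tc M, ta M)" "(tb M, tc M) \<noteq> (tc M, ta M)"
     "(ta M, tb M) \<noteq> (tb M, tc M)" "(ta M, tc M) \<noteq> (tb M, tc M)" "(ta M, tb M) \<noteq> (tc M, tb M)"
     "(ta M, tc M) \<noteq> (tc M, tb M)" "(tb M, tc M) \<noteq> (tc M, tb M)" using d by auto
  have tk1: "(\<tau>, \<kappa>) \<in> Prel M (ta M) (tc M)" using True ps by simp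
  have tk2: "(\<kappa>, \<tau>) \<in> Prel M (tc M) (ta M)" using cv[OF lm(3) tk1] .
  have o1: "(\<tau>, \<kappa>) \<notin> Prel M (ta M) (tb M)" by (rule hm[OF tk1 ne(1)])
  have o2: "(\<tau>, \<kappa>) \<notin> Prel M (tb M) (tc M)" by (rule hm[OF tk1 ne(2)])
  have o3: "(\<kappa>, \<tau>) \<notin> Prel M (ta M) (tb M)" by (rule hm[OF tk2 ne(3)])
  have o4: "(\<kappa>, \<tau>) \<notin> Prel M (ta M) (tc M)" by (rule hm[OF tk2 ne(4)])
  have o5: "(\<kappa>, \<tau>) \<notin> Prel M (tb M) (tc M)" by (rule hm[OF tk2 ne(5)])
  have o: "(\<tau>, \<kappa>) \<notin> Pab M" "(\<tau>, \<kappa>) \<notin> Pbg M" "(\<kappa>, \<tau>) \<notin> Pab M" "(\<kappa>, \<tau>) \<notin> Pag M" "(\<kappa>, \<tau>) \<notin> Pbg M"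
    using o1 o2 o3 o4 o5 ps by simp_all
  have M'def: "(\<not> (\<exists>l. (l, \<kappa>) \<in> Prel M (ta M) (tb M)) \<and>
         M' = Tri (ta M) (tb M) (tc M) (Pab M) (Pag M - {(\<tau>, \<kappa>)}) (Pbg M)) \<or>
       (\<exists>l. (l, \<kappa>) \<in> Prel M (ta M) (tb M) \<and>
         M' = Tri (ta M) (tb M) (tc M) (Pab M) (Pag M - {(\<tau>, \<kappa>)}) (Pbg M - {(\<tau>, l)}))"
    using mp[OF conjunct1[OF conjunct2[OF conjunct2[OF os[unfolded one_step_simplification_def]]]] True] .
  then show ?thesis
  proof
    assume h: "\<not> (\<exists>l. (l, \<kappa>) \<in> Prel M (ta M) (tb M)) \<and>
         M' = Tri (ta M) (tb M) (tc M) (Pab M) (Pag M - {(\<tau>, \<kappa>)}) (Pbg M)"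
    then have e: "{(\<tau>, l) |l. (l, \<kappa>) \<in> Prel M (ta M) (tb M)} = {}" "{(l, \<tau>) |l. (l, \<kappa>) \<in> Prel M (ta M) (tb M)} = {}"
      by blast+
    have hl: "ta M' = ta M" "tb M' = tb M" "tc M' = tc M" using h by simp_all
    have "Prel M' u v = Prel M u v - {(\<tau>, \<kappa>), (\<kappa>, \<tau>)}" for u v
    proof (rule M'P_base[OF d hl])
      show "{(\<tau>, \<kappa>), (\<kappa>, \<tau>)}\<inverse> = {(\<tau>, \<kappa>), (\<kappa>, \<tau>)}" by blast
      show "Pab M' = Pab M - {(\<tau>, \<kappa>), (\<kappa>, \<tau>)}" using h o by auto
      show "Pag M' = Pag M - {(\<tau>, \<kappa>), (\<kappa>, \<tau>)}" using h o by auto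
      show "Pbg M' = Pbg M - {(\<tau>, \<kappa>), (\<kappa>, \<tau>)}" using h o by auto
    qed
    then show ?thesis using e hl by simp
  next
    assume "\<exists>l. (l, \<kappa>) \<in> Prel M (ta M) (tb M) \<and>
         M' = Tri (ta M) (tb M) (tc M) (Pab M) (Pag M - {(\<tau>, \<kappa>)}) (Pbg M - {(\<tau>, l)})"
    then obtain l where l: "(l, \<kappa>) \<in> Prel M (ta M) (tb M)"
      and h: "M' = Tri (ta M) (tb M) (tc M) (Pab M) (Pag M - {(\<tau>, \<kappa>)}) (Pbg M - {(\<tau>, l)})" by blast
    have "(l, \<kappa>) \<in> Pab M" using l ps by simp
    then have "(\<tau>, l) \<in> Pbg M" using gath_gas[OF gas, of \<tau> \<kappa> l] True by blast
    then have l3: "(\<tau>, l) \<in> Prel M (tb M) (tc M)" using ps by simp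
    have l4: "(l, \<tau>) \<in> Prel M (tc M) (tb M)" using cv[OF lm(5) l3] .
    have p1: "(\<tau>, l) \<notin> Prel M (ta M) (tb M)" by (rule hm[OF l3 ne(6)])
    have p2: "(\<tau>, l) \<notin> Prel M (ta M) (tc M)" by (rule hm[OF l3 ne(7)])
    have p3: "(l, \<tau>) \<notin> Prel M (ta M) (tb M)" by (rule hm[OF l4 ne(8)])
    have p4: "(l, \<tau>) \<notin> Prel M (ta M) (tc M)" by (rule hm[OF l4 ne(9)])
    have p5: "(l, \<tau>) \<notin> Prel M (tb M) (tc M)" by (rule hm[OF l4 ne(10)])
    have o2: "(\<tau>, l) \<notin> Pab M" "(\<tau>, l) \<notin> Pag M" "(l, \<tau>) \<notin> Pab M" "(l, \<tau>) \<notin> Pag M" "(l, \<tau>) \<notin> Pbg M"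
      using p1 p2 p3 p4 p5 ps by simp_all
    have un: "\<And>l'. (l', \<kappa>) \<in> Prel M (ta M) (tb M) \<Longrightarrow> l' = l"
    proof -
      fix l' assume "(l', \<kappa>) \<in> Prel M (ta M) (tb M)"
      then have "(\<kappa>, l') \<in> Prel M (tb M) (ta M)" using cv[OF lm(1)] by blast
      moreover have "(\<kappa>, l) \<in> Prel M (tb M) (ta M)" using cv[OF lm(1) l] .
      ultimately show "l' = l" using uq[OF lm(2)] by blast
    qed
    have e1: "{(\<tau>, l') |l'. (l', \<kappa>) \<in> Prel M (ta M) (tb M)} = {(\<tau>, l)}" using un l by blast
    have e2: "{(l', \<tau>) |l'. (l', \<kappa>) \<in> Prel M (ta M) (tb M)} = {(l, \<tau>)}" using un l by blast
    have hl: "ta M' = ta M" "tb M' = tb M" "tc M' = tc M" using h by simp_all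
    have "Prel M' u v = Prel M u v - {(\<tau>, \<kappa>), (\<kappa>, \<tau>), (\<tau>, l), (l, \<tau>)}" for u v
    proof (rule M'P_base[OF d hl])
      show "{(\<tau>, \<kappa>), (\<kappa>, \<tau>), (\<tau>, l), (l, \<tau>)}\<inverse> = {(\<tau>, \<kappa>), (\<kappa>, \<tau>), (\<tau>, l), (l, \<tau>)}" by blast
      show "Pab M' = Pab M - {(\<tau>, \<kappa>), (\<kappa>, \<tau>), (\<tau>, l), (l, \<tau>)}" using h o o2 by auto
      show "Pag M' = Pag M - {(\<tau>, \<kappa>), (\<kappa>, \<tau>), (\<tau>, l), (l, \<tau>)}" using h o o2 by auto
      show "Pbg M' = Pbg M - {(\<tau>, \<kappa>), (\<kappa>, \<tau>), (\<tau>, l), (l, \<tau>)}" using h o o2 by auto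
    qed
    moreover have "{(\<tau>, \<kappa>), (\<kappa>, \<tau>)} \<union> {(\<tau>, l') |l'. (l', \<kappa>) \<in> Prel M (ta M) (tb M)}
        \<union> {(l', \<tau>) |l'. (l', \<kappa>) \<in> Prel M (ta M) (tb M)} = {(\<tau>, \<kappa>), (\<kappa>, \<tau>), (\<tau>, l), (l, \<tau>)}"
      using e1 e2 by auto
    ultimately show ?thesis using hl by simp
  qed
qed

lemma case_bg:
  assumes gas: "gasket_automaton N M" and os: "one_step_simplification M \<tau> \<kappa> M'" and True: "(\<tau>, \<kappa>) \<in> Pbg M"
  shows "ta M' = ta M \<and> tb M' = tb M \<and> tc M' = tc M \<and>
    (\<forall>u v. Prel M' u v = Prel M u v - ({(\<tau>, \<kappa>), (\<kappa>, \<tau>)} \<union> {(\<tau>, l) |l. (l, \<kappa>) \<in> Prel M (tb M) (ta M)}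
        \<union> {(l, \<tau>) |l. (l, \<kappa>) \<in> Prel M (tb M) (ta M)}))"
proof -
  have tri: "triangle_automaton N M" using gas unfolding gasket_automaton_def by blast
  have d: "ta M \<noteq> tb M" "ta M \<noteq> tc M" "tb M \<noteq> tc M" using tri unfolding triangle_automaton_def by auto
  note ps = Prel_simps[OF d]
  note lm = lab_mem[OF d]
  have uq0: "\<forall>(u, v)\<in>labpairs M. \<forall>i j j'. (i, j) \<in> Prel M u v \<longrightarrow> (i, j') \<in> Prel M u v \<longrightarrow> j = j'"
    using conjunct1[OF conjunct2[OF gas[unfolded gasket_automaton_def]]] .
  have uq: "\<And>u v i j j'. (u, v) \<in> labpairs M \<Longrightarrow> (i, j) \<in> Prel M u v \<Longrightarrow> (i, j') \<in> Prel M u v \<Longrightarrow> j = j'"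
    using uq0 by fast
  have hm: "\<And>p u0 v0 u v. p \<in> Prel M u0 v0 \<Longrightarrow> (u, v) \<noteq> (u0, v0) \<Longrightarrow> p \<notin> Prel M u v"
    using home[OF tri] by blast
  have cv: "\<And>a b u v. (u, v) \<in> labpairs M \<Longrightarrow> (a, b) \<in> Prel M u v \<Longrightarrow> (b, a) \<in> Prel M v u"
    using Prel_conv[OF d] by blast
  have ne: "(ta M, tb M) \<noteq> (ta M, tc M)" "(tb M, tc M) \<noteq> (ta M, tc M)" "(ta M, tb M) \<noteq> (tc M, ta M)"
     "(ta M, tc M) \<noteq> (tc M, ta M)" "(tb M, tc M) \<noteq> (tc M, ta M)"
     "(ta M, tb M) \<noteq> (tb M, tc M)" "(ta M, tc M) \<noteq> (tb M, tc M)" "(ta M, tb M) \<noteq> (tc M, tb M)"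
     "(ta M, tc M) \<noteq> (tc M, tb M)" "(tb M, tc M) \<noteq> (tc M, tb M)" using d by auto
  have tk1: "(\<tau>, \<kappa>) \<in> Prel M (tb M) (tc M)" using True ps by simp
  have tk2: "(\<kappa>, \<tau>) \<in> Prel M (tc M) (tb M)" using cv[OF lm(5) tk1] .
  have o1: "(\<tau>, \<kappa>) \<notin> Prel M (ta M) (tb M)" by (rule hm[OF tk1 ne(6)])
  have o2: "(\<tau>, \<kappa>) \<notin> Prel M (ta M) (tc M)" by (rule hm[OF tk1 ne(7)])
  have o3: "(\<kappa>, \<tau>) \<notin> Prel M (ta M) (tb M)" by (rule hm[OF tk2 ne(8)])
  have o4: "(\<kappa>, \<tau>) \<notin> Prel M (ta M) (tc M)" by (rule hm[OF tk2 ne(9)])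
  have o5: "(\<kappa>, \<tau>) \<notin> Prel M (tb M) (tc M)" by (rule hm[OF tk2 ne(10)])
  have o: "(\<tau>, \<kappa>) \<notin> Pab M" "(\<tau>, \<kappa>) \<notin> Pag M" "(\<kappa>, \<tau>) \<notin> Pab M" "(\<kappa>, \<tau>) \<notin> Pag M" "(\<kappa>, \<tau>) \<notin> Pbg M"
    using o1 o2 o3 o4 o5 ps by simp_all
  have M'def: "(\<not> (\<exists>l. (l, \<kappa>) \<in> Prel M (tb M) (ta M)) \<and>
         M' = Tri (ta M) (tb M) (tc M) (Pab M) (Pag M) (Pbg M - {(\<tau>, \<kappa>)})) \<or>
       (\<exists>l. (l, \<kappa>) \<in> Prel M (tb M) (ta M) \<and>
         M' = Tri (ta M) (tb M) (tc M) (Pab M) (Pag M - {(\<tau>, l)}) (Pbg M - {(\<tau>, \<kappa>)}))"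
    using mp[OF conjunct2[OF conjunct2[OF conjunct2[OF os[unfolded one_step_simplification_def]]]] True] .
  then show ?thesis
  proof
    assume h: "\<not> (\<exists>l. (l, \<kappa>) \<in> Prel M (tb M) (ta M)) \<and>
         M' = Tri (ta M) (tb M) (tc M) (Pab M) (Pag M) (Pbg M - {(\<tau>, \<kappa>)})"
    then have e: "{(\<tau>, l) |l. (l, \<kappa>) \<in> Prel M (tb M) (ta M)} = {}" "{(l, \<tau>) |l. (l, \<kappa>) \<in> Prel M (tb M) (ta M)} = {}"
      by blast+
    have hl: "ta M' = ta M" "tb M' = tb M" "tc M' = tc M" using h by simp_all
    have "Prel M' u v = Prel M u v - {(\<tau>, \<kappa>), (\<kappa>, \<tau>)}" for u v
    proof (rule M'P_base[OF d hl])
      show "{(\<tau>, \<kappa>), (\<kappa>, \<tau>)}\<inverse> = {(\<tau>, \<kappa>), (\<kappa>, \<tau>)}" by blast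
      show "Pab M' = Pab M - {(\<tau>, \<kappa>), (\<kappa>, \<tau>)}" using h o by auto
      show "Pag M' = Pag M - {(\<tau>, \<kappa>), (\<kappa>, \<tau>)}" using h o by auto
      show "Pbg M' = Pbg M - {(\<tau>, \<kappa>), (\<kappa>, \<tau>)}" using h o by auto
    qed
    then show ?thesis using e hl by simp
  next
    assume "\<exists>l. (l, \<kappa>) \<in> Prel M (tb M) (ta M) \<and>
         M' = Tri (ta M) (tb M) (tc M) (Pab M) (Pag M - {(\<tau>, l)}) (Pbg M - {(\<tau>, \<kappa>)})"
    then obtain l where l: "(l, \<kappa>) \<in> Prel M (tb M) (ta M)"
      and h: "M' = Tri (ta M) (tb M) (tc M) (Pab M) (Pag M - {(\<tau>, l)}) (Pbg M - {(\<tau>, \<kappa>)})" by blast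
    have "(\<kappa>, l) \<in> Pab M" using l ps by simp
    then have "(\<tau>, l) \<in> Pag M" using gath_gas[OF gas, of \<tau> l \<kappa>] True by blast
    then have l3: "(\<tau>, l) \<in> Prel M (ta M) (tc M)" using ps by simp
    have l4: "(l, \<tau>) \<in> Prel M (tc M) (ta M)" using cv[OF lm(3) l3] .
    have p1: "(\<tau>, l) \<notin> Prel M (ta M) (tb M)" by (rule hm[OF l3 ne(1)])
    have p2: "(\<tau>, l) \<notin> Prel M (tb M) (tc M)" by (rule hm[OF l3 ne(2)])
    have p3: "(l, \<tau>) \<notin> Prel M (ta M) (tb M)" by (rule hm[OF l4 ne(3)])
    have p4: "(l, \<tau>) \<notin> Prel M (ta M) (tc M)" by (rule hm[OF l4 ne(4)])
    have p5: "(l, \<tau>) \<notin> Prel M (tb M) (tc M)" by (rule hm[OF l4 ne(5)])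
    have o2: "(\<tau>, l) \<notin> Pab M" "(\<tau>, l) \<notin> Pbg M" "(l, \<tau>) \<notin> Pab M" "(l, \<tau>) \<notin> Pag M" "(l, \<tau>) \<notin> Pbg M"
      using p1 p2 p3 p4 p5 ps by simp_all
    have un: "\<And>l'. (l', \<kappa>) \<in> Prel M (tb M) (ta M) \<Longrightarrow> l' = l"
    proof -
      fix l' assume "(l', \<kappa>) \<in> Prel M (tb M) (ta M)"
      then have "(\<kappa>, l') \<in> Prel M (ta M) (tb M)" using cv[OF lm(2)] by blast
      moreover have "(\<kappa>, l) \<in> Prel M (ta M) (tb M)" using cv[OF lm(2) l] .
      ultimately show "l' = l" using uq[OF lm(1)] by blast
    qed
    have e1: "{(\<tau>, l') |l'. (l', \<kappa>) \<in> Prel M (tb M) (ta M)} = {(\<tau>, l)}" using un l by blast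
    have e2: "{(l', \<tau>) |l'. (l', \<kappa>) \<in> Prel M (tb M) (ta M)} = {(l, \<tau>)}" using un l by blast
    have hl: "ta M' = ta M" "tb M' = tb M" "tc M' = tc M" using h by simp_all
    have "Prel M' u v = Prel M u v - {(\<tau>, \<kappa>), (\<kappa>, \<tau>), (\<tau>, l), (l, \<tau>)}" for u v
    proof (rule M'P_base[OF d hl])
      show "{(\<tau>, \<kappa>), (\<kappa>, \<tau>), (\<tau>, l), (l, \<tau>)}\<inverse> = {(\<tau>, \<kappa>), (\<kappa>, \<tau>), (\<tau>, l), (l, \<tau>)}" by blast
      show "Pab M' = Pab M - {(\<tau>, \<kappa>), (\<kappa>, \<tau>), (\<tau>, l), (l, \<tau>)}" using h o o2 by auto
      show "Pag M' = Pag M - {(\<tau>, \<kappa>), (\<kappa>, \<tau>), (\<tau>, l), (l, \<tau>)}" using h o o2 by auto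
      show "Pbg M' = Pbg M - {(\<tau>, \<kappa>), (\<kappa>, \<tau>), (\<tau>, l), (l, \<tau>)}" using h o o2 by auto
    qed
    moreover have "{(\<tau>, \<kappa>), (\<kappa>, \<tau>)} \<union> {(\<tau>, l') |l'. (l', \<kappa>) \<in> Prel M (tb M) (ta M)}
        \<union> {(l', \<tau>) |l'. (l', \<kappa>) \<in> Prel M (tb M) (ta M)} = {(\<tau>, \<kappa>), (\<kappa>, \<tau>), (\<tau>, l), (l, \<tau>)}"
      using e1 e2 by auto
    ultimately show ?thesis using hl by simp
  qed
qed

theorem theorem5p1:
  fixes N :: nat and M M' :: tri and \<tau> \<kappa> :: int
  assumes "gasket_automaton N M"
    and "gamma_isolated N M"
    and "Pag M \<union> Pbg M \<noteq> {}"
    and "one_step_simplification M \<tau> \<kappa> M'"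
  shows "\<exists>g. bij_betw g (Omega N \<kappa>) (Omega N \<kappa>) \<and>
    (\<forall>x\<in>Omega N \<kappa>. \<forall>y\<in>Omega N \<kappa>.
        T_M M x y \<le> T_M M' (g x) (g y) + 5 \<and> T_M M' (g x) (g y) \<le> T_M M x y + 5)"
proof -
  have tri: "triangle_automaton N M" using assms(1) unfolding gasket_automaton_def by blast
  have d: "ta M \<noteq> tb M" "ta M \<noteq> tc M" "tb M \<noteq> tc M" using tri unfolding triangle_automaton_def by auto
  note ps = Prel_simps[OF d]
  have os: "(\<tau>, \<kappa>) \<in> Pag M \<union> Pbg M" "double_maximal M \<kappa>" using assms(4) unfolding one_step_simplification_def by auto
  obtain A B where AB: "(A, B) = (ta M, tb M) \<or> (A, B) = (tb M, ta M)"
    and tk: "(\<tau>, \<kappa>) \<in> Prel M A (tc M)"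
    and M'l: "ta M' = ta M" "tb M' = tb M" "tc M' = tc M"
    and M'P: "\<And>u v. Prel M' u v = Prel M u v - ({(\<tau>, \<kappa>), (\<kappa>, \<tau>)} \<union> {(\<tau>, l) |l. (l, \<kappa>) \<in> Prel M A B}
        \<union> {(l, \<tau>) |l. (l, \<kappa>) \<in> Prel M A B})"
  proof (cases "(\<tau>, \<kappa>) \<in> Pag M")
    case True
    have "(\<tau>, \<kappa>) \<in> Prel M (ta M) (tc M)" using True ps by simp
    then show ?thesis using that[of "ta M" "tb M"] case_ag[OF assms(1,4) True] by blast
  next
    case False
    then have T': "(\<tau>, \<kappa>) \<in> Pbg M" using os(1) by simp
    have "(\<tau>, \<kappa>) \<in> Prel M (tb M) (tc M)" using T' ps by simp
    then show ?thesis using that[of "tb M" "ta M"] case_bg[OF assms(1,4) T'] by blast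
  qed
  interpret ic: ictx N M M' \<tau> \<kappa> A B
    by (unfold_locales) (use assms(1,2) AB tk os(2) M'l M'P in auto)
  interpret co: core \<tau> \<kappa> A "tc M" "\<lambda>a b. tri_delta M Id (a, b)" "\<lambda>a b. tri_delta M' Id (a, b)" B ic.LL N
    by (rule ic.is_core)
  show ?thesis using co.core_main unfolding T_M_eq by blast
qed


end
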